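(* Let $\mathcal H$ be a Hopf algebra over a commutative ring $k$ with bijective antipode $S$, and let $C$ be a left $\mathcal H$-module coalgebra. Then the map on the $k$-module $C\otimes \mathcal H$ $$\Delta(a\otimes g)=\big(a^{(0)}\otimes g^{(1)}\big)\otimes\big(S^{-1}(g^{(0)}S(g^{(2)}))\cdot a^{(1)}\otimes g^{(3)}\big)$$ is a coassociative comultiplication with counit $\epsilon_C\otimes\epsilon_{\mathcal H}$. The resulting coalgebra is denoted $C>\!\!\blacktriangleleft\mathcal H$.
   Context: Sweedler notation: for a coalgebra element $c$, $\Delta c=c^{(0)}\otimes c^{(1)}$, $\Delta^n c=c^{(0)}\otimes\cdots\otimes c^{(n)}$ (summation understood); same notation in $\mathcal H$. A left $\mathcal H$-module coalgebra is a coalgebra $(C,\Delta,\epsilon_C)$ which is a left $\mathcal H$-module, $h\otimes c\mapsto h\cdot c$, such that $\Delta(h\cdot c)=h^{(0)}\cdot c^{(0)}\otimes h^{(1)}\cdot c^{(1)}$ and $\epsilon_C(h\cdot c)=\epsilon(h)\epsilon_C(c)$. *)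

theory Defs
  imports Main "HOL-Library.Poly_Mapping"
begin

record ('k, 'a) kmod =
  mcarrier :: "'a set"
  madd :: "'a \<Rightarrow> 'a \<Rightarrow> 'a"
  mzero :: 'a
  msmult :: "'k \<Rightarrow> 'a \<Rightarrow> 'a"

definition kmodule :: "('k::comm_ring_1, 'a) kmod \<Rightarrow> bool" where
  "kmodule M \<longleftrightarrow>
     mzero M \<in> mcarrier M \<and>
     (\<forall>x\<in>mcarrier M. \<forall>y\<in>mcarrier M. madd M x y \<in> mcarrier M) \<and>
     (\<forall>r. \<forall>x\<in>mcarrier M. msmult M r x \<in> mcarrier M) \<and>
     (\<forall>x\<in>mcarrier M. \<forall>y\<in>mcarrier M. \<forall>z\<in>mcarrier M.
        madd M (madd M x y) z = madd M x (madd M y z)) \<and>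
     (\<forall>x\<in>mcarrier M. \<forall>y\<in>mcarrier M. madd M x y = madd M y x) \<and>
     (\<forall>x\<in>mcarrier M. madd M (mzero M) x = x) \<and>
     (\<forall>x\<in>mcarrier M. \<exists>y\<in>mcarrier M. madd M x y = mzero M) \<and>
     (\<forall>r. \<forall>x\<in>mcarrier M. \<forall>y\<in>mcarrier M.
        msmult M r (madd M x y) = madd M (msmult M r x) (msmult M r y)) \<and>
     (\<forall>r s. \<forall>x\<in>mcarrier M. msmult M (r + s) x = madd M (msmult M r x) (msmult M s x)) \<and>
     (\<forall>r s. \<forall>x\<in>mcarrier M. msmult M (r * s) x = msmult M r (msmult M s x)) \<and>
     (\<forall>x\<in>mcarrier M. msmult M 1 x = x)"

definition kself :: "('k::comm_ring_1, 'k) kmod" where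
  "kself = \<lparr>mcarrier = UNIV, madd = (+), mzero = 0, msmult = (*)\<rparr>"

definition msum :: "('k, 'a) kmod \<Rightarrow> ('i \<Rightarrow> 'a) \<Rightarrow> 'i set \<Rightarrow> 'a" where
  "msum M f A = Finite_Set.fold (\<lambda>i acc. madd M (f i) acc) (mzero M) A"

definition linear_map :: "('k, 'a) kmod \<Rightarrow> ('k, 'b) kmod \<Rightarrow> ('a \<Rightarrow> 'b) \<Rightarrow> bool" where
  "linear_map M N f \<longleftrightarrow>
     (\<forall>x\<in>mcarrier M. f x \<in> mcarrier N) \<and>
     (\<forall>x\<in>mcarrier M. \<forall>y\<in>mcarrier M. f (madd M x y) = madd N (f x) (f y)) \<and>
     (\<forall>r. \<forall>x\<in>mcarrier M. f (msmult M r x) = msmult N r (f x))"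

definition bilinear_map ::
  "('k, 'a) kmod \<Rightarrow> ('k, 'b) kmod \<Rightarrow> ('k, 'c) kmod \<Rightarrow> ('a \<Rightarrow> 'b \<Rightarrow> 'c) \<Rightarrow> bool" where
  "bilinear_map M N P f \<longleftrightarrow>
     (\<forall>x\<in>mcarrier M. linear_map N P (f x)) \<and>
     (\<forall>y\<in>mcarrier N. linear_map M P (\<lambda>x. f x y))"

section \<open>Tensor product M \<otimes>_k N as the free module on M \<times> N modulo bilinearity\<close>

type_synonym ('k, 'a, 'b) tens = "(('a \<times> 'b) \<Rightarrow>\<^sub>0 'k) set"

definition fscale :: "'k::comm_ring_1 \<Rightarrow> ('i \<Rightarrow>\<^sub>0 'k) \<Rightarrow> ('i \<Rightarrow>\<^sub>0 'k)" where
  "fscale r F = Poly_Mapping.map ((*) r) F"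

definition fdelta :: "'a \<Rightarrow> 'b \<Rightarrow> (('a \<times> 'b) \<Rightarrow>\<^sub>0 'k::comm_ring_1)" where
  "fdelta a b = Poly_Mapping.single (a, b) 1"

definition fspan :: "('i \<Rightarrow>\<^sub>0 'k::comm_ring_1) set \<Rightarrow> ('i \<Rightarrow>\<^sub>0 'k) set" where
  "fspan X = {(\<Sum>x\<in>I. fscale (c x) x) | I c. finite I \<and> I \<subseteq> X}"

definition tensor_rels ::
  "('k::comm_ring_1, 'a) kmod \<Rightarrow> ('k, 'b) kmod \<Rightarrow> (('a \<times> 'b) \<Rightarrow>\<^sub>0 'k) set" where
  "tensor_rels M N =
     {fdelta (madd M a a') b - fdelta a b - fdelta a' b | a a' b.
        a \<in> mcarrier M \<and> a' \<in> mcarrier M \<and> b \<in> mcarrier N} \<union>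
     {fdelta a (madd N b b') - fdelta a b - fdelta a b' | a b b'.
        a \<in> mcarrier M \<and> b \<in> mcarrier N \<and> b' \<in> mcarrier N} \<union>
     {fdelta (msmult M r a) b - fscale r (fdelta a b) | r a b.
        a \<in> mcarrier M \<and> b \<in> mcarrier N} \<union>
     {fdelta a (msmult N r b) - fscale r (fdelta a b) | r a b.
        a \<in> mcarrier M \<and> b \<in> mcarrier N}"

definition tensor_sub ::
  "('k::comm_ring_1, 'a) kmod \<Rightarrow> ('k, 'b) kmod \<Rightarrow> (('a \<times> 'b) \<Rightarrow>\<^sub>0 'k) set" where
  "tensor_sub M N = fspan (tensor_rels M N)"

definition tclass ::
  "('k::comm_ring_1, 'a) kmod \<Rightarrow> ('k, 'b) kmod \<Rightarrow> (('a \<times> 'b) \<Rightarrow>\<^sub>0 'k) \<Rightarrow> ('k, 'a, 'b) tens" where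
  "tclass M N F = (\<lambda>G. F + G) ` tensor_sub M N"

definition tensor ::
  "('k::comm_ring_1, 'a) kmod \<Rightarrow> ('k, 'b) kmod \<Rightarrow> ('k, ('k, 'a, 'b) tens) kmod" where
  "tensor M N =
     \<lparr>mcarrier = tclass M N ` {F. Poly_Mapping.keys F \<subseteq> mcarrier M \<times> mcarrier N},
      madd = (\<lambda>X Y. {x + y | x y. x \<in> X \<and> y \<in> Y}),
      mzero = tensor_sub M N,
      msmult = (\<lambda>r X. {fscale r x + g | x g. x \<in> X \<and> g \<in> tensor_sub M N})\<rparr>"

definition tp :: "('k::comm_ring_1, 'a) kmod \<Rightarrow> ('k, 'b) kmod \<Rightarrow> 'a \<Rightarrow> 'b \<Rightarrow> ('k, 'a, 'b) tens" where
  "tp M N a b = tclass M N (fdelta a b)"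

text \<open>The linear map M \<otimes> N \<rightarrow> P induced by a bilinear map f (universal property);
  this is how Sweedler-notation formulas are made precise.\<close>
definition tlift ::
  "('k::comm_ring_1, 'a) kmod \<Rightarrow> ('k, 'b) kmod \<Rightarrow> ('k, 'c) kmod \<Rightarrow> ('a \<Rightarrow> 'b \<Rightarrow> 'c)
     \<Rightarrow> ('k, 'a, 'b) tens \<Rightarrow> 'c" where
  "tlift M N P f X =
     (let F = (SOME F. F \<in> X)
      in msum P (\<lambda>p. msmult P (Poly_Mapping.lookup F p) (f (fst p) (snd p))) (Poly_Mapping.keys F))"

definition tmap ::
  "('k::comm_ring_1, 'a) kmod \<Rightarrow> ('k, 'b) kmod \<Rightarrow> ('k, 'c) kmod \<Rightarrow> ('k, 'd) kmod
     \<Rightarrow> ('a \<Rightarrow> 'c) \<Rightarrow> ('b \<Rightarrow> 'd) \<Rightarrow> ('k, 'a, 'b) tens \<Rightarrow> ('k, 'c, 'd) tens" where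
  "tmap M N M' N' f g = tlift M N (tensor M' N') (\<lambda>a b. tp M' N' (f a) (g b))"

definition tassoc ::
  "('k::comm_ring_1, 'a) kmod \<Rightarrow> ('k, 'b) kmod \<Rightarrow> ('k, 'c) kmod
     \<Rightarrow> ('k, ('k, 'a, 'b) tens, 'c) tens \<Rightarrow> ('k, 'a, ('k, 'b, 'c) tens) tens" where
  "tassoc M N P = tlift (tensor M N) P (tensor M (tensor N P))
     (\<lambda>u z. tlift M N (tensor M (tensor N P)) (\<lambda>x y. tp M (tensor N P) x (tp N P y z)) u)"

definition coalgebra ::
  "('k::comm_ring_1, 'a) kmod \<Rightarrow> ('a \<Rightarrow> ('k, 'a, 'a) tens) \<Rightarrow> ('a \<Rightarrow> 'k) \<Rightarrow> bool" where
  "coalgebra M D e \<longleftrightarrow>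
     kmodule M \<and>
     linear_map M (tensor M M) D \<and>
     linear_map M kself e \<and>
     (\<forall>m\<in>mcarrier M.
        tassoc M M M (tlift M M (tensor (tensor M M) M) (\<lambda>x y. tp (tensor M M) M (D x) y) (D m))
        = tlift M M (tensor M (tensor M M)) (\<lambda>x y. tp M (tensor M M) x (D y)) (D m)) \<and>
     (\<forall>m\<in>mcarrier M. tlift M M M (\<lambda>x y. msmult M (e x) y) (D m) = m) \<and>
     (\<forall>m\<in>mcarrier M. tlift M M M (\<lambda>x y. msmult M (e y) x) (D m) = m)"

definition kalgebra ::
  "('k::comm_ring_1, 'a) kmod \<Rightarrow> ('a \<Rightarrow> 'a \<Rightarrow> 'a) \<Rightarrow> 'a \<Rightarrow> bool" where
  "kalgebra A mult one \<longleftrightarrow>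
     kmodule A \<and> bilinear_map A A A mult \<and> one \<in> mcarrier A \<and>
     (\<forall>x\<in>mcarrier A. \<forall>y\<in>mcarrier A. \<forall>z\<in>mcarrier A.
        mult (mult x y) z = mult x (mult y z)) \<and>
     (\<forall>x\<in>mcarrier A. mult one x = x \<and> mult x one = x)"

definition tensor_mult ::
  "('k::comm_ring_1, 'a) kmod \<Rightarrow> ('a \<Rightarrow> 'a \<Rightarrow> 'a)
     \<Rightarrow> ('k, 'a, 'a) tens \<Rightarrow> ('k, 'a, 'a) tens \<Rightarrow> ('k, 'a, 'a) tens" where
  "tensor_mult A mult X Y =
     tlift A A (tensor A A)
       (\<lambda>a b. tlift A A (tensor A A) (\<lambda>c d. tp A A (mult a c) (mult b d)) Y) X"

definition bialgebra ::
  "('k::comm_ring_1, 'a) kmod \<Rightarrow> ('a \<Rightarrow> 'a \<Rightarrow> 'a) \<Rightarrow> 'a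
     \<Rightarrow> ('a \<Rightarrow> ('k, 'a, 'a) tens) \<Rightarrow> ('a \<Rightarrow> 'k) \<Rightarrow> bool" where
  "bialgebra A mult one D e \<longleftrightarrow>
     kalgebra A mult one \<and> coalgebra A D e \<and>
     (\<forall>x\<in>mcarrier A. \<forall>y\<in>mcarrier A. D (mult x y) = tensor_mult A mult (D x) (D y)) \<and>
     D one = tp A A one one \<and>
     (\<forall>x\<in>mcarrier A. \<forall>y\<in>mcarrier A. e (mult x y) = e x * e y) \<and>
     e one = 1"

definition hopf_algebra ::
  "('k::comm_ring_1, 'a) kmod \<Rightarrow> ('a \<Rightarrow> 'a \<Rightarrow> 'a) \<Rightarrow> 'a
     \<Rightarrow> ('a \<Rightarrow> ('k, 'a, 'a) tens) \<Rightarrow> ('a \<Rightarrow> 'k) \<Rightarrow> ('a \<Rightarrow> 'a) \<Rightarrow> bool" where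
  "hopf_algebra A mult one D e S \<longleftrightarrow>
     bialgebra A mult one D e \<and> linear_map A A S \<and>
     (\<forall>h\<in>mcarrier A. tlift A A A (\<lambda>x y. mult (S x) y) (D h) = msmult A (e h) one) \<and>
     (\<forall>h\<in>mcarrier A. tlift A A A (\<lambda>x y. mult x (S y)) (D h) = msmult A (e h) one)"

definition module_coalgebra ::
  "('k::comm_ring_1, 'h) kmod \<Rightarrow> ('h \<Rightarrow> 'h \<Rightarrow> 'h) \<Rightarrow> 'h
     \<Rightarrow> ('h \<Rightarrow> ('k, 'h, 'h) tens) \<Rightarrow> ('h \<Rightarrow> 'k)
     \<Rightarrow> ('k, 'c) kmod \<Rightarrow> ('c \<Rightarrow> ('k, 'c, 'c) tens) \<Rightarrow> ('c \<Rightarrow> 'k)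
     \<Rightarrow> ('h \<Rightarrow> 'c \<Rightarrow> 'c) \<Rightarrow> bool" where
  "module_coalgebra H mult one D e C DC eC act \<longleftrightarrow>
     coalgebra C DC eC \<and>
     bilinear_map H C C act \<and>
     (\<forall>g\<in>mcarrier H. \<forall>h\<in>mcarrier H. \<forall>c\<in>mcarrier C. act (mult g h) c = act g (act h c)) \<and>
     (\<forall>c\<in>mcarrier C. act one c = c) \<and>
     (\<forall>h\<in>mcarrier H. \<forall>c\<in>mcarrier C.
        DC (act h c) = tlift H H (tensor C C) (\<lambda>h0 h1. tmap C C C C (act h0) (act h1) (DC c)) (D h)) \<and>
     (\<forall>h\<in>mcarrier H. \<forall>c\<in>mcarrier C. eC (act h c) = e h * eC c)"

text \<open>Value on a simple tensor a \<otimes> g, with Sweedler notation made explicit: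
  \<Delta>C a = a0 \<otimes> a1, \<Delta> g = x \<otimes> y, \<Delta> x = x1 \<otimes> x2, \<Delta> y = y1 \<otimes> y2, so that
  \<Delta>^3 g = g0 \<otimes> g1 \<otimes> g2 \<otimes> g3 with g0 = x1, g1 = x2, g2 = y1, g3 = y2.\<close>
definition smash_comult_simple ::
  "('k::comm_ring_1, 'h) kmod \<Rightarrow> ('h \<Rightarrow> 'h \<Rightarrow> 'h) \<Rightarrow> ('h \<Rightarrow> ('k, 'h, 'h) tens) \<Rightarrow> ('h \<Rightarrow> 'h)
     \<Rightarrow> ('k, 'c) kmod \<Rightarrow> ('c \<Rightarrow> ('k, 'c, 'c) tens) \<Rightarrow> ('h \<Rightarrow> 'c \<Rightarrow> 'c)
     \<Rightarrow> 'c \<Rightarrow> 'h \<Rightarrow> ('k, ('k, 'c, 'h) tens, ('k, 'c, 'h) tens) tens" where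
  "smash_comult_simple H mult D S C DC act a g =
     (let P = tensor (tensor C H) (tensor C H);
          Sinv = inv_into (mcarrier H) S
      in tlift C C P (\<lambda>a0 a1.
           tlift H H P (\<lambda>x y.
             tlift H H P (\<lambda>x1 x2.
               tlift H H P (\<lambda>y1 y2.
                 tp (tensor C H) (tensor C H)
                    (tp C H a0 x2)
                    (tp C H (act (Sinv (mult x1 (S y1))) a1) y2))
               (D y))
             (D x))
           (D g))
         (DC a))"

definition smash_comult ::
  "('k::comm_ring_1, 'h) kmod \<Rightarrow> ('h \<Rightarrow> 'h \<Rightarrow> 'h) \<Rightarrow> ('h \<Rightarrow> ('k, 'h, 'h) tens) \<Rightarrow> ('h \<Rightarrow> 'h)
     \<Rightarrow> ('k, 'c) kmod \<Rightarrow> ('c \<Rightarrow> ('k, 'c, 'c) tens) \<Rightarrow> ('h \<Rightarrow> 'c \<Rightarrow> 'c)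
     \<Rightarrow> ('k, 'c, 'h) tens \<Rightarrow> ('k, ('k, 'c, 'h) tens, ('k, 'c, 'h) tens) tens" where
  "smash_comult H mult D S C DC act =
     tlift C H (tensor (tensor C H) (tensor C H)) (smash_comult_simple H mult D S C DC act)"

definition smash_counit ::
  "('k::comm_ring_1, 'h) kmod \<Rightarrow> ('h \<Rightarrow> 'k) \<Rightarrow> ('k, 'c) kmod \<Rightarrow> ('c \<Rightarrow> 'k)
     \<Rightarrow> ('k, 'c, 'h) tens \<Rightarrow> 'k" where
  "smash_counit H e C eC = tlift C H kself (\<lambda>a g. eC a * e g)"

end

theory Submission
  imports Defs
begin

context
  fixes M :: "('k::comm_ring_1, 'a) kmod"
  assumes km: "kmodule M"
begin

lemma km_zero[simp]: "mzero M \<in> mcarrier M"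
  using km unfolding kmodule_def by meson
lemma km_add[simp]: "x \<in> mcarrier M \<Longrightarrow> y \<in> mcarrier M \<Longrightarrow> madd M x y \<in> mcarrier M"
  using km unfolding kmodule_def by meson
lemma km_smult[simp]: "x \<in> mcarrier M \<Longrightarrow> msmult M r x \<in> mcarrier M"
  using km unfolding kmodule_def by meson
lemma km_assoc: "x \<in> mcarrier M \<Longrightarrow> y \<in> mcarrier M \<Longrightarrow> z \<in> mcarrier M \<Longrightarrow>
   madd M (madd M x y) z = madd M x (madd M y z)"
  using km unfolding kmodule_def by meson
lemma km_comm: "x \<in> mcarrier M \<Longrightarrow> y \<in> mcarrier M \<Longrightarrow> madd M x y = madd M y x"
  using km unfolding kmodule_def by meson
lemma km_lzero[simp]: "x \<in> mcarrier M \<Longrightarrow> madd M (mzero M) x = x"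
  using km unfolding kmodule_def by meson
lemma km_rzero[simp]: "x \<in> mcarrier M \<Longrightarrow> madd M x (mzero M) = x"
  using km_lzero km_comm km_zero by metis
lemma km_inv: "x \<in> mcarrier M \<Longrightarrow> \<exists>y\<in>mcarrier M. madd M x y = mzero M"
  using km unfolding kmodule_def by meson
lemma km_smult_add: "x \<in> mcarrier M \<Longrightarrow> y \<in> mcarrier M \<Longrightarrow>
   msmult M r (madd M x y) = madd M (msmult M r x) (msmult M r y)"
  using km unfolding kmodule_def by meson
lemma km_add_smult: "x \<in> mcarrier M \<Longrightarrow> msmult M (r + s) x = madd M (msmult M r x) (msmult M s x)"
  using km unfolding kmodule_def by meson
lemma km_smult_smult: "x \<in> mcarrier M \<Longrightarrow> msmult M (r * s) x = msmult M r (msmult M s x)"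
  using km unfolding kmodule_def by meson
lemma km_one_smult[simp]: "x \<in> mcarrier M \<Longrightarrow> msmult M 1 x = x"
  using km unfolding kmodule_def by meson

lemma km_lcomm: "x \<in> mcarrier M \<Longrightarrow> y \<in> mcarrier M \<Longrightarrow> z \<in> mcarrier M \<Longrightarrow>
   madd M x (madd M y z) = madd M y (madd M x z)"
  by (metis km_assoc km_comm)

lemma km_cancel:
  assumes "x \<in> mcarrier M" "y \<in> mcarrier M" "z \<in> mcarrier M" "madd M x y = madd M x z"
  shows "y = z"
proof -
  obtain w where w: "w \<in> mcarrier M" "madd M x w = mzero M" using km_inv assms by blast
  have wx: "madd M w x = mzero M" using w assms km_comm by metis
  have "madd M w (madd M x y) = madd M w (madd M x z)" using assms by simp
  then have "madd M (madd M w x) y = madd M (madd M w x) z" using w assms by (simp add: km_assoc)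
  then show ?thesis using wx assms by simp
qed

lemma km_zero_unique:
  assumes "x \<in> mcarrier M" "y \<in> mcarrier M" "madd M x y = x" shows "y = mzero M"
  using km_cancel[of x y "mzero M"] assms by simp

lemma km_zero_smult[simp]: "x \<in> mcarrier M \<Longrightarrow> msmult M 0 x = mzero M"
proof -
  assume x: "x \<in> mcarrier M"
  have "msmult M (0 + 0) x = madd M (msmult M 0 x) (msmult M 0 x)" by (rule km_add_smult[OF x])
  then have "madd M (msmult M 0 x) (msmult M 0 x) = msmult M 0 x" by simp
  then show ?thesis using km_zero_unique x km_smult by blast
qed

lemma km_smult_zero[simp]: "msmult M r (mzero M) = mzero M"
proof -
  have "msmult M r (madd M (mzero M) (mzero M)) = madd M (msmult M r (mzero M)) (msmult M r (mzero M))"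
    by (rule km_smult_add) simp_all
  then have "madd M (msmult M r (mzero M)) (msmult M r (mzero M)) = msmult M r (mzero M)" by simp
  then show ?thesis using km_zero_unique km_smult km_zero by blast
qed

lemma km_neg: "x \<in> mcarrier M \<Longrightarrow> madd M x (msmult M (-1) x) = mzero M"
  using km_add_smult[of x 1 "-1"] by simp

end

section \<open>Finite sums\<close>

context
  fixes M :: "('k::comm_ring_1, 'a) kmod"
  assumes km: "kmodule M"
begin

private definition gstep where
  "gstep f i acc = (if acc \<in> mcarrier M then madd M (f i) acc else acc)"

private lemma fold_graph_carrier:
  assumes "fold_graph (\<lambda>i acc. madd M (f i) acc) z A y" "z \<in> mcarrier M" "f ` A \<subseteq> mcarrier M"
  shows "y \<in> mcarrier M \<and> fold_graph (gstep f) z A y"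
  using assms
proof (induction rule: fold_graph.induct)
  case emptyI
  then show ?case by (auto intro: fold_graph.intros)
next
  case (insertI x A y)
  then have y: "y \<in> mcarrier M" "fold_graph (gstep f) z A y" by auto
  have "fold_graph (gstep f) z (insert x A) (gstep f x y)"
    by (rule fold_graph.insertI) (use insertI y in auto)
  moreover have "gstep f x y = madd M (f x) y" using y by (simp add: gstep_def)
  ultimately show ?case using insertI km y by auto
qed

private lemma fold_graph_carrier2:
  assumes "fold_graph (gstep f) z A y" "z \<in> mcarrier M" "f ` A \<subseteq> mcarrier M"
  shows "y \<in> mcarrier M \<and> fold_graph (\<lambda>i acc. madd M (f i) acc) z A y"
  using assms
proof (induction rule: fold_graph.induct)
  case emptyI
  then show ?case by (auto intro: fold_graph.intros)
next
  case (insertI x A y)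
  then have y: "y \<in> mcarrier M" "fold_graph (\<lambda>i acc. madd M (f i) acc) z A y" by auto
  have "fold_graph (\<lambda>i acc. madd M (f i) acc) z (insert x A) (madd M (f x) y)"
    by (rule fold_graph.insertI[where f="\<lambda>i acc. madd M (f i) acc", simplified]) (use insertI y in auto)
  moreover have "gstep f x y = madd M (f x) y" using y by (simp add: gstep_def)
  ultimately show ?case using insertI km y by auto
qed

private lemma msum_gstep:
  assumes "f ` A \<subseteq> mcarrier M"
  shows "msum M f A = Finite_Set.fold (gstep f) (mzero M) A"
proof -
  have "\<And>y. fold_graph (\<lambda>i acc. madd M (f i) acc) (mzero M) A y = fold_graph (gstep f) (mzero M) A y"
  proof -
    fix y
    show "fold_graph (\<lambda>i acc. madd M (f i) acc) (mzero M) A y = fold_graph (gstep f) (mzero M) A y"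
      using fold_graph_carrier[of f "mzero M" A y] fold_graph_carrier2[of f "mzero M" A y] assms km
      by (auto simp del: km_zero simp add: km_zero[OF km])
  qed
  then have "fold_graph (\<lambda>i acc. madd M (f i) acc) (mzero M) A = fold_graph (gstep f) (mzero M) A"
    by (intro ext)
  then show ?thesis unfolding msum_def Finite_Set.fold_def by simp
qed

private lemma gstep_in: "acc \<in> mcarrier M \<Longrightarrow> gstep f i acc = madd M (f i) acc"
  by (simp add: gstep_def)

private lemma gstep_commute: "comp_fun_commute_on {i. f i \<in> mcarrier M} (gstep f)"
proof
  fix x y assume xy: "x \<in> {i. f i \<in> mcarrier M}" "y \<in> {i. f i \<in> mcarrier M}"
  show "gstep f y \<circ> gstep f x = gstep f x \<circ> gstep f y"
  proof (rule ext)
    fix acc show "(gstep f y \<circ> gstep f x) acc = (gstep f x \<circ> gstep f y) acc"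
      using km xy by (cases "acc \<in> mcarrier M") (simp_all add: gstep_def km_lcomm[OF km])
  qed
qed

lemma msum_empty[simp]: "msum M f {} = mzero M"
  by (simp add: msum_def)

lemmas kms[simp] = km_zero[OF km] km_add[OF km] km_smult[OF km] km_lzero[OF km] km_rzero[OF km]
  km_one_smult[OF km] km_zero_smult[OF km] km_smult_zero[OF km]

lemma fold_gstep_insert:
  assumes "finite A" "i \<notin> A" "f i \<in> mcarrier M" "f ` A \<subseteq> mcarrier M"
  shows "Finite_Set.fold (gstep f) z (insert i A) = gstep f i (Finite_Set.fold (gstep f) z A)"
  by (rule comp_fun_commute_on.fold_insert[OF gstep_commute]) (use assms in auto)

lemma msum_closed_aux:
  "finite A \<Longrightarrow> f ` A \<subseteq> mcarrier M \<Longrightarrow> Finite_Set.fold (gstep f) (mzero M) A \<in> mcarrier M"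
proof (induction A rule: finite_induct)
  case empty then show ?case using km by simp
next
  case (insert x F)
  then show ?case
    using fold_gstep_insert[of F x f "mzero M"] km
    by (auto simp: gstep_in)
qed

lemma msum_closed[simp]: "(\<And>i. i \<in> A \<Longrightarrow> f i \<in> mcarrier M) \<Longrightarrow> msum M f A \<in> mcarrier M"
  apply (cases "finite A")
  using msum_closed_aux[of A f] msum_gstep[of f A] km apply (simp add: image_subset_iff)
  by (simp add: msum_def km)

lemma msum_insert:
  assumes "finite A" "i \<notin> A" "f i \<in> mcarrier M" "\<And>j. j \<in> A \<Longrightarrow> f j \<in> mcarrier M"
  shows "msum M f (insert i A) = madd M (f i) (msum M f A)"
proof -
  have "msum M f (insert i A) = gstep f i (Finite_Set.fold (gstep f) (mzero M) A)"
    using msum_gstep[of f "insert i A"] assms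
      fold_gstep_insert[of A i f "mzero M"] by (auto simp: image_subset_iff)
  also have "\<dots> = madd M (f i) (msum M f A)"
    using msum_closed_aux[of A f] assms msum_gstep[of f A] by (simp add: gstep_in image_subset_iff)
  finally show ?thesis .
qed

lemma msum_infinite: "infinite A \<Longrightarrow> msum M f A = mzero M"
  by (simp add: msum_def)

lemma msum_cong:
  assumes "\<And>i. i \<in> A \<Longrightarrow> f i = g i" "\<And>i. i \<in> A \<Longrightarrow> f i \<in> mcarrier M"
  shows "msum M f A = msum M g A"
proof (cases "finite A")
  case True
  then show ?thesis using assms
  proof (induction A rule: finite_induct)
    case (insert x F)
    have "msum M f (insert x F) = madd M (f x) (msum M f F)"
      using insert by (intro msum_insert) auto
    also have "\<dots> = madd M (g x) (msum M g F)" using insert by auto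
    also have "\<dots> = msum M g (insert x F)"
      using insert by (intro msum_insert[symmetric]) auto
    finally show ?case .
  qed simp
qed (simp add: msum_infinite)

lemma msum_single[simp]: "f i \<in> mcarrier M \<Longrightarrow> msum M f {i} = f i"
  using msum_insert[of "{}" i f] km by simp

lemma msum_add:
  assumes "\<And>i. i \<in> A \<Longrightarrow> f i \<in> mcarrier M" "\<And>i. i \<in> A \<Longrightarrow> g i \<in> mcarrier M"
  shows "msum M (\<lambda>i. madd M (f i) (g i)) A = madd M (msum M f A) (msum M g A)"
proof (cases "finite A")
  case True
  then show ?thesis using assms
  proof (induction A rule: finite_induct)
    case (insert x F)
    have c: "msum M f F \<in> mcarrier M" "msum M g F \<in> mcarrier M" "f x \<in> mcarrier M" "g x \<in> mcarrier M"
      using insert by auto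
    have "msum M (\<lambda>i. madd M (f i) (g i)) (insert x F) = madd M (madd M (f x) (g x)) (msum M (\<lambda>i. madd M (f i) (g i)) F)"
      using insert by (intro msum_insert) auto
    also have "\<dots> = madd M (madd M (f x) (g x)) (madd M (msum M f F) (msum M g F))"
      using insert by auto
    also have "\<dots> = madd M (madd M (f x) (msum M f F)) (madd M (g x) (msum M g F))"
      using c by (simp add: km_assoc[OF km] km_lcomm[OF km])
    also have "\<dots> = madd M (msum M f (insert x F)) (msum M g (insert x F))"
      using insert by (simp add: msum_insert)
    finally show ?case .
  qed simp
qed (simp add: msum_infinite)

lemma msum_smult:
  assumes "\<And>i. i \<in> A \<Longrightarrow> f i \<in> mcarrier M"
  shows "msmult M r (msum M f A) = msum M (\<lambda>i. msmult M r (f i)) A"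
proof (cases "finite A")
  case True
  then show ?thesis using assms
  proof (induction A rule: finite_induct)
    case (insert x F)
    then show ?case by (simp add: msum_insert km_smult_add[OF km])
  qed simp
qed (simp add: msum_infinite)

lemma msum_zero[simp]: "msum M (\<lambda>i. mzero M) A = mzero M"
proof (cases "finite A")
  case True
  then show ?thesis
  proof (induction A rule: finite_induct)
    case (insert x F)
    then show ?case by (simp add: msum_insert)
  qed simp
qed (simp add: msum_infinite)

lemma msum_neutral:
  assumes "finite B" "A \<subseteq> B" "\<And>i. i \<in> B - A \<Longrightarrow> f i = mzero M" "\<And>i. i \<in> A \<Longrightarrow> f i \<in> mcarrier M"
  shows "msum M f B = msum M f A"
proof -
  have fin: "finite (B - A)" using assms by auto
  have fA: "finite A" using assms finite_subset by blast
  have "\<And>C. C \<subseteq> B - A \<Longrightarrow> msum M f (A \<union> C) = msum M f A"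
  proof -
    fix C assume C: "C \<subseteq> B - A"
    have "finite C" using C fin finite_subset by blast
    then show "msum M f (A \<union> C) = msum M f A" using C
    proof (induction C rule: finite_induct)
      case (insert x F)
      have "msum M f (A \<union> insert x F) = msum M f (insert x (A \<union> F))" by simp
      also have "\<dots> = madd M (f x) (msum M f (A \<union> F))"
        using insert assms fA by (intro msum_insert) auto
      also have "\<dots> = msum M f A" using insert assms by auto
      finally show ?case .
    qed simp
  qed
  from this[of "B - A"] show ?thesis using assms by (simp add: Un_absorb1[OF assms(2)])
qed

lemma msum_union:
  assumes "finite A" "finite B" "A \<inter> B = {}" "\<And>i. i \<in> A \<Longrightarrow> f i \<in> mcarrier M"
    "\<And>i. i \<in> B \<Longrightarrow> f i \<in> mcarrier M"
  shows "msum M f (A \<union> B) = madd M (msum M f A) (msum M f B)"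
  using assms(1,3,4)
proof (induction A rule: finite_induct)
  case (insert x F)
  have "msum M f (insert x F \<union> B) = msum M f (insert x (F \<union> B))" by simp
  also have "\<dots> = madd M (f x) (msum M f (F \<union> B))"
    using insert assms by (intro msum_insert) auto
  also have "\<dots> = madd M (f x) (madd M (msum M f F) (msum M f B))" using insert by auto
  also have "\<dots> = madd M (msum M f (insert x F)) (msum M f B)"
    using insert assms by (simp add: msum_insert km_assoc[OF km])
  finally show ?case .
qed (use assms in simp)

lemma msum_reindex:
  assumes "inj_on h A" "\<And>i. i \<in> A \<Longrightarrow> f (h i) \<in> mcarrier M"
  shows "msum M f (h ` A) = msum M (\<lambda>i. f (h i)) A"
proof (cases "finite A")
  case True
  then show ?thesis using assms
  proof (induction A rule: finite_induct)
    case (insert x F)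
    have "h x \<notin> h ` F" using insert by auto
    then have "msum M f (h ` insert x F) = madd M (f (h x)) (msum M f (h ` F))"
      using insert by (subst image_insert, subst msum_insert) auto
    then show ?case using insert by (simp add: msum_insert)
  qed simp
next
  case False
  then have "infinite (h ` A)" using assms finite_image_iff by blast
  then show ?thesis using False by (simp add: msum_infinite)
qed

end

lemma msum_swap:
  assumes km: "kmodule M" and "finite A" "finite B" "\<And>i j. i \<in> A \<Longrightarrow> j \<in> B \<Longrightarrow> f i j \<in> mcarrier M"
  shows "msum M (\<lambda>i. msum M (\<lambda>j. f i j) B) A = msum M (\<lambda>j. msum M (\<lambda>i. f i j) A) B"
  using assms(2,4)
proof (induction A rule: finite_induct)
  case empty then show ?case using km by simp
next
  case (insert x F)
  have "msum M (\<lambda>i. msum M (f i) B) (insert x F) = madd M (msum M (f x) B) (msum M (\<lambda>i. msum M (f i) B) F)"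
    using insert km by (intro msum_insert) auto
  also have "\<dots> = madd M (msum M (f x) B) (msum M (\<lambda>j. msum M (\<lambda>i. f i j) F) B)"
    using insert by simp
  also have "\<dots> = msum M (\<lambda>j. madd M (f x j) (msum M (\<lambda>i. f i j) F)) B"
    using insert km by (subst msum_add) auto
  also have "\<dots> = msum M (\<lambda>j. msum M (\<lambda>i. f i j) (insert x F)) B"
    using insert km by (intro msum_cong) (auto simp: msum_insert)
  finally show ?case .
qed

lemma linear_mapD:
  "linear_map M N f \<Longrightarrow> x \<in> mcarrier M \<Longrightarrow> f x \<in> mcarrier N"
  "linear_map M N f \<Longrightarrow> x \<in> mcarrier M \<Longrightarrow> y \<in> mcarrier M \<Longrightarrow> f (madd M x y) = madd N (f x) (f y)"
  "linear_map M N f \<Longrightarrow> x \<in> mcarrier M \<Longrightarrow> f (msmult M r x) = msmult N r (f x)"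
  unfolding linear_map_def by blast+

lemma linear_map_zero:
  assumes "kmodule M" "kmodule N" "linear_map M N f"
  shows "f (mzero M) = mzero N"
proof -
  have "f (msmult M 0 (mzero M)) = msmult N 0 (f (mzero M))"
    using assms linear_mapD by (metis km_zero)
  then show ?thesis using assms by (simp add: linear_mapD)
qed

lemma msum_linear:
  assumes "kmodule M" "kmodule N" "linear_map M N L" "\<And>i. i \<in> A \<Longrightarrow> f i \<in> mcarrier M"
  shows "L (msum M f A) = msum N (\<lambda>i. L (f i)) A"
proof (cases "finite A")
  case True
  then show ?thesis using assms(4)
  proof (induction A rule: finite_induct)
    case empty then show ?case using assms linear_map_zero by simp
  next
    case (insert x F)
    then show ?case using assms
      by (simp add: msum_insert linear_mapD)
  qed
qed (simp add: msum_infinite assms linear_map_zero)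


lemma lookup_fscale[simp]: "Poly_Mapping.lookup (fscale r F) p = r * Poly_Mapping.lookup F p"
  by (simp add: fscale_def map.rep_eq when_def)

lemma fscale_add: "fscale r (F + G) = fscale r F + fscale r G"
  by (rule poly_mapping_eqI) (simp add: lookup_add distrib_left)
lemma fscale_add_left: "fscale (r + s) F = fscale r F + fscale s F"
  by (rule poly_mapping_eqI) (simp add: lookup_add distrib_right)
lemma fscale_mult: "fscale (r * s) F = fscale r (fscale s F)"
  by (rule poly_mapping_eqI) (simp add: mult.assoc)
lemma fscale_one[simp]: "fscale 1 F = F"
  by (rule poly_mapping_eqI) simp
lemma fscale_zero_left[simp]: "fscale 0 F = 0"
  by (rule poly_mapping_eqI) simp
lemma fscale_zero_right[simp]: "fscale r 0 = 0"
  by (rule poly_mapping_eqI) simp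
lemma fscale_minus_one: "fscale (-1) F = - F"
  by (rule poly_mapping_eqI) simp
lemma fscale_diff: "fscale r (F - G) = fscale r F - fscale r G"
  by (rule poly_mapping_eqI) (simp add: lookup_minus right_diff_distrib)
lemma fscale_uminus: "fscale r (- F) = - fscale r F"
  by (rule poly_mapping_eqI) simp
lemma keys_fscale: "Poly_Mapping.keys (fscale r F) \<subseteq> Poly_Mapping.keys F"
  by (auto simp: in_keys_iff)
lemma fscale_sum: "fscale r (sum G I) = sum (\<lambda>x. fscale r (G x)) I"
  by (rule poly_mapping_eqI) (simp add: lookup_sum sum_distrib_left)

lemma fspan_zero[simp]: "0 \<in> fspan X"
  unfolding fspan_def by (rule CollectI, rule exI[of _ "{}"]) auto

lemma fspan_base: "x \<in> X \<Longrightarrow> x \<in> fspan X"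
  unfolding fspan_def
  by (rule CollectI, rule exI[of _ "{x}"], rule exI[of _ "\<lambda>_. 1"]) auto

lemma fspan_add:
  assumes "F \<in> fspan X" "G \<in> fspan X" shows "F + G \<in> fspan X"
proof -
  obtain I c where I: "F = (\<Sum>x\<in>I. fscale (c x) x)" "finite I" "I \<subseteq> X"
    using assms(1) unfolding fspan_def by blast
  obtain J d where J: "G = (\<Sum>x\<in>J. fscale (d x) x)" "finite J" "J \<subseteq> X"
    using assms(2) unfolding fspan_def by blast
  define c' where "c' x = (if x \<in> I then c x else 0)" for x
  define d' where "d' x = (if x \<in> J then d x else 0)" for x
  have "F = (\<Sum>x\<in>I \<union> J. fscale (c' x) x)"
    unfolding I(1) using I J by (intro sum.mono_neutral_cong_left) (auto simp: c'_def)
  moreover have "G = (\<Sum>x\<in>I \<union> J. fscale (d' x) x)"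
    unfolding J(1) using I J by (intro sum.mono_neutral_cong_left) (auto simp: d'_def)
  ultimately have "F + G = (\<Sum>x\<in>I \<union> J. fscale (c' x + d' x) x)"
    by (simp add: fscale_add_left sum.distrib)
  then show ?thesis unfolding fspan_def using I J
    by (intro CollectI exI[of _ "I \<union> J"] exI[of _ "\<lambda>x. c' x + d' x"]) simp
qed

lemma fspan_scale:
  assumes "F \<in> fspan X" shows "fscale r F \<in> fspan X"
proof -
  obtain I c where I: "F = (\<Sum>x\<in>I. fscale (c x) x)" "finite I" "I \<subseteq> X"
    using assms(1) unfolding fspan_def by blast
  have "fscale r F = (\<Sum>x\<in>I. fscale (r * c x) x)"
    unfolding I(1) by (simp add: fscale_sum fscale_mult)
  then show ?thesis unfolding fspan_def using I
    by (intro CollectI exI[of _ "I"] exI[of _ "\<lambda>x. r * c x"]) simp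
qed

lemma fspan_uminus: "F \<in> fspan X \<Longrightarrow> - F \<in> fspan X"
  using fspan_scale[of F X "-1"] by (simp add: fscale_minus_one)

lemma fspan_diff: "F \<in> fspan X \<Longrightarrow> G \<in> fspan X \<Longrightarrow> F - G \<in> fspan X"
  using fspan_add[of F X "- G"] fspan_uminus[of G X] by simp

lemma fspan_induct[consumes 1, case_names zero step]:
  assumes "F \<in> fspan X" "P 0"
    "\<And>x r G. x \<in> X \<Longrightarrow> G \<in> fspan X \<Longrightarrow> P G \<Longrightarrow> P (fscale r x + G)"
  shows "P F"
proof -
  obtain I c where I: "F = (\<Sum>x\<in>I. fscale (c x) x)" "finite I" "I \<subseteq> X"
    using assms(1) unfolding fspan_def by blast
  have "(\<Sum>x\<in>I. fscale (c x) x) \<in> fspan X \<and> P (\<Sum>x\<in>I. fscale (c x) x)"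
    using I(2,3)
  proof (induction I rule: finite_induct)
    case empty then show ?case using assms by simp
  next
    case (insert x F)
    then show ?case using assms(3)[of x "\<Sum>x\<in>F. fscale (c x) x" "c x"]
      by (auto intro: fspan_add fspan_scale fspan_base)
  qed
  then show ?thesis using I by simp
qed

lemma keys_fspan: "F \<in> fspan X \<Longrightarrow> (\<And>x. x \<in> X \<Longrightarrow> Poly_Mapping.keys x \<subseteq> K) \<Longrightarrow> Poly_Mapping.keys F \<subseteq> K"
proof (induction rule: fspan_induct)
  case zero then show ?case by simp
next
  case (step x r G)
  then show ?case using keys_add[of "fscale r x" G] keys_fscale[of r x] by blast
qed

section \<open>Tensor classes\<close>

lemma keys_fdelta: "Poly_Mapping.keys (fdelta a b :: ('a \<times> 'b) \<Rightarrow>\<^sub>0 'k::comm_ring_1) \<subseteq> {(a, b)}"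
  by (simp add: fdelta_def)

lemma keys_tensor_rels:
  fixes M :: "('k::comm_ring_1, 'a) kmod"
  assumes "kmodule M" "kmodule N" "x \<in> tensor_rels M N"
  shows "Poly_Mapping.keys x \<subseteq> mcarrier M \<times> mcarrier N"
proof -
  have d: "Poly_Mapping.keys (fdelta a b :: _ \<Rightarrow>\<^sub>0 'k) \<subseteq> mcarrier M \<times> mcarrier N"
    if "a \<in> mcarrier M" "b \<in> mcarrier N" for a b
    using keys_fdelta[of a b] that by blast
  have dd: "Poly_Mapping.keys (F - G) \<subseteq> K" if "Poly_Mapping.keys F \<subseteq> K" "Poly_Mapping.keys G \<subseteq> K" for F G :: "_ \<Rightarrow>\<^sub>0 'k" and K
    using keys_diff[of F G] that by blast
  have sc: "Poly_Mapping.keys (fscale r F) \<subseteq> K" if "Poly_Mapping.keys F \<subseteq> K" for F :: "_ \<Rightarrow>\<^sub>0 'k" and K r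
    using keys_fscale[of r F] that by blast
  show ?thesis using assms(3) unfolding tensor_rels_def
    by (elim UnE CollectE exE conjE; hypsubst; intro dd d sc; simp add: km_add[OF assms(1)]
        km_add[OF assms(2)] km_smult[OF assms(1)] km_smult[OF assms(2)])
qed

lemma keys_tensor_sub:
  fixes M :: "('k::comm_ring_1, 'a) kmod"
  assumes "kmodule M" "kmodule N" "x \<in> tensor_sub M N"
  shows "Poly_Mapping.keys x \<subseteq> mcarrier M \<times> mcarrier N"
  using assms(3) unfolding tensor_sub_def
  by (rule keys_fspan) (rule keys_tensor_rels[OF assms(1,2)])

lemma sub_zero[simp]: "0 \<in> tensor_sub M N"
  by (simp add: tensor_sub_def)
lemma sub_add: "F \<in> tensor_sub M N \<Longrightarrow> G \<in> tensor_sub M N \<Longrightarrow> F + G \<in> tensor_sub M N"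
  by (simp add: tensor_sub_def fspan_add)
lemma sub_diff: "F \<in> tensor_sub M N \<Longrightarrow> G \<in> tensor_sub M N \<Longrightarrow> F - G \<in> tensor_sub M N"
  by (simp add: tensor_sub_def fspan_diff)
lemma sub_uminus: "F \<in> tensor_sub M N \<Longrightarrow> - F \<in> tensor_sub M N"
  by (simp add: tensor_sub_def fspan_uminus)
lemma sub_scale: "F \<in> tensor_sub M N \<Longrightarrow> fscale r F \<in> tensor_sub M N"
  by (simp add: tensor_sub_def fspan_scale)
lemma sub_rel: "F \<in> tensor_rels M N \<Longrightarrow> F \<in> tensor_sub M N"
  by (simp add: tensor_sub_def fspan_base)

lemma mem_tclass: "H \<in> tclass M N F \<longleftrightarrow> H - F \<in> tensor_sub M N"
  unfolding tclass_def
proof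
  assume "H \<in> (+) F ` tensor_sub M N" then show "H - F \<in> tensor_sub M N" by auto
next
  assume "H - F \<in> tensor_sub M N"
  then show "H \<in> (+) F ` tensor_sub M N" by (intro image_eqI[of _ _ "H - F"]) auto
qed

lemma tclass_self[simp]: "F \<in> tclass M N F"
  by (simp add: mem_tclass)

lemma tclass_eq_iff: "tclass M N F = tclass M N G \<longleftrightarrow> F - G \<in> tensor_sub M N"
proof
  assume "tclass M N F = tclass M N G"
  then have "F \<in> tclass M N G" using tclass_self by metis
  then show "F - G \<in> tensor_sub M N" by (simp add: mem_tclass)
next
  assume a: "F - G \<in> tensor_sub M N"
  have "H \<in> tclass M N F \<longleftrightarrow> H \<in> tclass M N G" for H
  proof -
    have "H - G = (H - F) + (F - G)" "H - F = (H - G) - (F - G)" by simp_all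
    then show ?thesis using a sub_add sub_diff unfolding mem_tclass by metis
  qed
  then show "tclass M N F = tclass M N G" by blast
qed

lemma tclassI: "F - G \<in> tensor_sub M N \<Longrightarrow> tclass M N F = tclass M N G"
  by (simp add: tclass_eq_iff)

lemma tensor_simps:
  "mcarrier (tensor M N) = tclass M N ` {F. Poly_Mapping.keys F \<subseteq> mcarrier M \<times> mcarrier N}"
  "madd (tensor M N) X Y = {x + y | x y. x \<in> X \<and> y \<in> Y}"
  "mzero (tensor M N) = tensor_sub M N"
  "msmult (tensor M N) r X = {fscale r x + g | x g. x \<in> X \<and> g \<in> tensor_sub M N}"
  by (simp_all add: tensor_def)

lemma tensor_zero_tclass: "mzero (tensor M N) = tclass M N 0"
  unfolding tensor_simps tclass_def by simp

lemma tclass_add: "madd (tensor M N) (tclass M N F) (tclass M N G) = tclass M N (F + G)"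
proof -
  have "H \<in> madd (tensor M N) (tclass M N F) (tclass M N G) \<longleftrightarrow> H \<in> tclass M N (F + G)" for H
  proof
    assume "H \<in> madd (tensor M N) (tclass M N F) (tclass M N G)"
    then obtain x y where "H = x + y" "x - F \<in> tensor_sub M N" "y - G \<in> tensor_sub M N"
      by (auto simp: tensor_simps mem_tclass)
    moreover have "x + y - (F + G) = (x - F) + (y - G)" by simp
    ultimately show "H \<in> tclass M N (F + G)" unfolding mem_tclass by (metis sub_add)
  next
    assume "H \<in> tclass M N (F + G)"
    then have "H - F - G \<in> tensor_sub M N" by (simp add: mem_tclass diff_diff_eq)
    then have "H - G \<in> tclass M N F" unfolding mem_tclass by (metis diff_right_commute)
    moreover have "H = (H - G) + G" by simp
    ultimately show "H \<in> madd (tensor M N) (tclass M N F) (tclass M N G)"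
      unfolding tensor_simps using tclass_self by blast
  qed
  then show ?thesis by blast
qed

lemma tclass_smult: "msmult (tensor M N) r (tclass M N F) = tclass M N (fscale r F)"
proof -
  have "H \<in> msmult (tensor M N) r (tclass M N F) \<longleftrightarrow> H \<in> tclass M N (fscale r F)" for H
  proof
    assume "H \<in> msmult (tensor M N) r (tclass M N F)"
    then obtain x g where "H = fscale r x + g" "x - F \<in> tensor_sub M N" "g \<in> tensor_sub M N"
      by (auto simp: tensor_simps mem_tclass)
    moreover have "fscale r x + g - fscale r F = fscale r (x - F) + g" by (simp add: fscale_diff)
    ultimately show "H \<in> tclass M N (fscale r F)" unfolding mem_tclass by (metis sub_add sub_scale)
  next
    assume "H \<in> tclass M N (fscale r F)"
    then have "H - fscale r F \<in> tensor_sub M N" by (simp add: mem_tclass)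
    moreover have "H = fscale r F + (H - fscale r F)" by simp
    ultimately show "H \<in> msmult (tensor M N) r (tclass M N F)"
      unfolding tensor_simps mem_tclass by (intro CollectI exI[of _ F] exI[of _ "H - fscale r F"]) simp
  qed
  then show ?thesis by blast
qed

lemma tensor_carrier_iff:
  "X \<in> mcarrier (tensor M N) \<longleftrightarrow> (\<exists>F. Poly_Mapping.keys F \<subseteq> mcarrier M \<times> mcarrier N \<and> X = tclass M N F)"
  by (auto simp: tensor_simps)

lemma tclass_in_carrier[intro]:
  "Poly_Mapping.keys F \<subseteq> mcarrier M \<times> mcarrier N \<Longrightarrow> tclass M N F \<in> mcarrier (tensor M N)"
  by (auto simp: tensor_simps)

lemma kmodule_tensor[simp]:
  fixes M :: "('k::comm_ring_1, 'a) kmod" and N :: "('k, 'b) kmod"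
  assumes km: "kmodule M" and kn: "kmodule N"
  shows "kmodule (tensor M N)"
proof -
  let ?K = "mcarrier M \<times> mcarrier N"
  have kadd: "Poly_Mapping.keys (F + G) \<subseteq> ?K" if "Poly_Mapping.keys F \<subseteq> ?K" "Poly_Mapping.keys G \<subseteq> ?K" for F G :: "_ \<Rightarrow>\<^sub>0 'k"
    using keys_add[of F G] that by blast
  have ksc: "Poly_Mapping.keys (fscale r F) \<subseteq> ?K" if "Poly_Mapping.keys F \<subseteq> ?K" for F :: "_ \<Rightarrow>\<^sub>0 'k" and r
    using keys_fscale[of r F] that by blast
  have kneg: "Poly_Mapping.keys (- F) \<subseteq> ?K" if "Poly_Mapping.keys F \<subseteq> ?K" for F :: "_ \<Rightarrow>\<^sub>0 'k"
    using that by simp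
  note cI = tensor_carrier_iff
  show ?thesis unfolding kmodule_def
  proof (intro conjI ballI allI)
    show "mzero (tensor M N) \<in> mcarrier (tensor M N)"
      unfolding tensor_zero_tclass by (rule tclass_in_carrier) simp
  next
    fix x y assume "x \<in> mcarrier (tensor M N)" "y \<in> mcarrier (tensor M N)"
    then obtain F G where "Poly_Mapping.keys F \<subseteq> ?K" "x = tclass M N F" "Poly_Mapping.keys G \<subseteq> ?K" "y = tclass M N G"
      by (auto simp: cI)
    then show "madd (tensor M N) x y \<in> mcarrier (tensor M N)"
      by (simp add: tclass_add tclass_in_carrier kadd)
  next
    fix r x assume "x \<in> mcarrier (tensor M N)"
    then obtain F where "Poly_Mapping.keys F \<subseteq> ?K" "x = tclass M N F"
      by (auto simp: cI)
    then show "msmult (tensor M N) r x \<in> mcarrier (tensor M N)"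
      by (simp add: tclass_smult tclass_in_carrier ksc)
  next
    fix x y z assume "x \<in> mcarrier (tensor M N)" "y \<in> mcarrier (tensor M N)" "z \<in> mcarrier (tensor M N)"
    then show "madd (tensor M N) (madd (tensor M N) x y) z = madd (tensor M N) x (madd (tensor M N) y z)"
      by (auto simp: cI tclass_add add.assoc)
  next
    fix x y assume "x \<in> mcarrier (tensor M N)" "y \<in> mcarrier (tensor M N)"
    then show "madd (tensor M N) x y = madd (tensor M N) y x"
      by (auto simp: cI tclass_add add.commute)
  next
    fix x assume "x \<in> mcarrier (tensor M N)"
    then show "madd (tensor M N) (mzero (tensor M N)) x = x"
      by (auto simp: cI tclass_add tensor_zero_tclass)
  next
    fix x assume "x \<in> mcarrier (tensor M N)"
    then obtain F where F: "Poly_Mapping.keys F \<subseteq> ?K" "x = tclass M N F" by (auto simp: cI)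
    show "\<exists>y\<in>mcarrier (tensor M N). madd (tensor M N) x y = mzero (tensor M N)"
      using F kneg[OF F(1)] by (intro bexI[of _ "tclass M N (- F)"]) (auto simp: tclass_add tensor_zero_tclass tclass_in_carrier)
  next
    fix r x y assume "x \<in> mcarrier (tensor M N)" "y \<in> mcarrier (tensor M N)"
    then show "msmult (tensor M N) r (madd (tensor M N) x y) =
      madd (tensor M N) (msmult (tensor M N) r x) (msmult (tensor M N) r y)"
      by (auto simp: cI tclass_add tclass_smult fscale_add)
  next
    fix r s x assume "x \<in> mcarrier (tensor M N)"
    then show "msmult (tensor M N) (r + s) x = madd (tensor M N) (msmult (tensor M N) r x) (msmult (tensor M N) s x)"
      by (auto simp: cI tclass_add tclass_smult fscale_add_left)
  next
    fix r s x assume "x \<in> mcarrier (tensor M N)"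
    then show "msmult (tensor M N) (r * s) x = msmult (tensor M N) r (msmult (tensor M N) s x)"
      by (auto simp: cI tclass_smult fscale_mult)
  next
    fix x assume "x \<in> mcarrier (tensor M N)"
    then show "msmult (tensor M N) 1 x = x"
      by (auto simp: cI tclass_smult)
  qed
qed


definition flin :: "('k::comm_ring_1, 'p) kmod \<Rightarrow> ('a \<Rightarrow> 'b \<Rightarrow> 'p) \<Rightarrow> ('a \<times> 'b \<Rightarrow>\<^sub>0 'k) \<Rightarrow> 'p" where
  "flin P f F = msum P (\<lambda>p. msmult P (Poly_Mapping.lookup F p) (f (fst p) (snd p))) (Poly_Mapping.keys F)"

lemma tlift_flin: "tlift M N P f X = flin P f (SOME F. F \<in> X)"
  by (simp add: tlift_def flin_def Let_def)

context
  fixes P :: "('k::comm_ring_1, 'p) kmod" and f :: "'a \<Rightarrow> 'b \<Rightarrow> 'p" and A :: "'a set" and B :: "'b set"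
  assumes kp: "kmodule P"
    and fdom: "\<And>a b. a \<in> A \<Longrightarrow> b \<in> B \<Longrightarrow> f a b \<in> mcarrier P"
begin

lemma fdom': "p \<in> A \<times> B \<Longrightarrow> f (fst p) (snd p) \<in> mcarrier P"
  using fdom by (cases p) auto

lemma flin_superset:
  assumes "finite K" "Poly_Mapping.keys F \<subseteq> K" "K \<subseteq> A \<times> B"
  shows "flin P f F = msum P (\<lambda>p. msmult P (Poly_Mapping.lookup F p) (f (fst p) (snd p))) K"
proof -
  have "\<And>p. p \<in> Poly_Mapping.keys F \<Longrightarrow> msmult P (Poly_Mapping.lookup F p) (f (fst p) (snd p)) \<in> mcarrier P"
    using assms fdom' kp by (meson km_smult subsetD)
  then show ?thesis
    unfolding flin_def using assms fdom'
    by (intro msum_neutral[OF kp, symmetric]) (auto simp: kp in_keys_iff)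
qed

lemma flin_closed[simp]:
  "Poly_Mapping.keys F \<subseteq> A \<times> B \<Longrightarrow> flin P f F \<in> mcarrier P"
  unfolding flin_def using fdom' kp by (intro msum_closed) auto

lemma flin_add:
  assumes "Poly_Mapping.keys F \<subseteq> A \<times> B" "Poly_Mapping.keys G \<subseteq> A \<times> B"
  shows "flin P f (F + G) = madd P (flin P f F) (flin P f G)"
proof -
  let ?K = "Poly_Mapping.keys F \<union> Poly_Mapping.keys G"
  have K: "finite ?K" "?K \<subseteq> A \<times> B" using assms by auto
  have "flin P f (F + G) = msum P (\<lambda>p. msmult P (Poly_Mapping.lookup (F + G) p) (f (fst p) (snd p))) ?K"
    using K keys_add[of F G] by (intro flin_superset) auto
  also have "\<dots> = msum P (\<lambda>p. madd P (msmult P (Poly_Mapping.lookup F p) (f (fst p) (snd p)))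
                     (msmult P (Poly_Mapping.lookup G p) (f (fst p) (snd p)))) ?K"
    using K fdom' kp by (intro msum_cong) (auto simp: lookup_add km_add_smult)
  also have "\<dots> = madd P (flin P f F) (flin P f G)"
    using K fdom' kp by (subst msum_add[OF kp]) (auto simp: flin_superset[of ?K])
  finally show ?thesis .
qed

lemma flin_scale:
  assumes "Poly_Mapping.keys F \<subseteq> A \<times> B"
  shows "flin P f (fscale r F) = msmult P r (flin P f F)"
proof -
  have "flin P f (fscale r F) = msum P (\<lambda>p. msmult P (Poly_Mapping.lookup (fscale r F) p) (f (fst p) (snd p))) (Poly_Mapping.keys F)"
    using assms keys_fscale[of r F] by (intro flin_superset) auto
  also have "\<dots> = msum P (\<lambda>p. msmult P r (msmult P (Poly_Mapping.lookup F p) (f (fst p) (snd p)))) (Poly_Mapping.keys F)"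
    using assms fdom' kp by (intro msum_cong) (auto simp: km_smult_smult)
  also have "\<dots> = msmult P r (flin P f F)"
    unfolding flin_def using assms fdom' kp by (subst msum_smult[OF kp]) auto
  finally show ?thesis .
qed

lemma flin_zero[simp]: "flin P f 0 = mzero P"
  by (simp add: flin_def kp)

lemma flin_fdelta:
  assumes "a \<in> A" "b \<in> B"
  shows "flin P f (fdelta a b) = f a b"
proof -
  have "flin P f (fdelta a b) = msum P (\<lambda>p. msmult P (Poly_Mapping.lookup (fdelta a b) p) (f (fst p) (snd p))) {(a, b)}"
    using assms by (intro flin_superset) (auto simp: fdelta_def)
  then show ?thesis using assms fdom kp by (simp add: fdelta_def)
qed

lemma flin_uminus:
  assumes "Poly_Mapping.keys F \<subseteq> A \<times> B"
  shows "flin P f (- F) = msmult P (-1) (flin P f F)"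
  using flin_scale[OF assms, of "-1"] by (simp add: fscale_minus_one)

lemma flin_zero_if:
  assumes "Poly_Mapping.keys F \<subseteq> A \<times> B" "Poly_Mapping.keys G \<subseteq> A \<times> B"
    "flin P f (F + G) = flin P f G"
  shows "flin P f F = mzero P"
  using assms flin_add[OF assms(1,2)] km_zero_unique[OF kp, of "flin P f G" "flin P f F"]
    km_comm[OF kp, of "flin P f G" "flin P f F"] by simp

end

lemma keys_diff_sub: "Poly_Mapping.keys F \<subseteq> K \<Longrightarrow> Poly_Mapping.keys G \<subseteq> K \<Longrightarrow> Poly_Mapping.keys (F - G) \<subseteq> K"
  using keys_diff[of F G] by blast
lemma keys_add_sub: "Poly_Mapping.keys F \<subseteq> K \<Longrightarrow> Poly_Mapping.keys G \<subseteq> K \<Longrightarrow> Poly_Mapping.keys (F + G) \<subseteq> K"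
  using keys_add[of F G] by blast
lemma keys_fscale_sub: "Poly_Mapping.keys F \<subseteq> K \<Longrightarrow> Poly_Mapping.keys (fscale r F) \<subseteq> K"
  using keys_fscale[of r F] by blast
lemma keys_fdelta_sub: "a \<in> A \<Longrightarrow> b \<in> B \<Longrightarrow> Poly_Mapping.keys (fdelta a b :: _ \<Rightarrow>\<^sub>0 'k::comm_ring_1) \<subseteq> A \<times> B"
  using keys_fdelta[of a b] by blast

lemma bilinear_mapD:
  assumes "bilinear_map M N P f"
  shows "a \<in> mcarrier M \<Longrightarrow> b \<in> mcarrier N \<Longrightarrow> f a b \<in> mcarrier P"
    and "a \<in> mcarrier M \<Longrightarrow> a' \<in> mcarrier M \<Longrightarrow> b \<in> mcarrier N \<Longrightarrow> f (madd M a a') b = madd P (f a b) (f a' b)"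
    and "a \<in> mcarrier M \<Longrightarrow> b \<in> mcarrier N \<Longrightarrow> b' \<in> mcarrier N \<Longrightarrow> f a (madd N b b') = madd P (f a b) (f a b')"
    and "a \<in> mcarrier M \<Longrightarrow> b \<in> mcarrier N \<Longrightarrow> f (msmult M r a) b = msmult P r (f a b)"
    and "a \<in> mcarrier M \<Longrightarrow> b \<in> mcarrier N \<Longrightarrow> f a (msmult N r b) = msmult P r (f a b)"
  using assms unfolding bilinear_map_def linear_map_def by auto

lemma flin_rel:
  fixes M :: "('k::comm_ring_1, 'a) kmod" and N :: "('k, 'b) kmod"
  assumes km: "kmodule M" and kn: "kmodule N" and kp: "kmodule P" and bl: "bilinear_map M N P f"
    and x: "x \<in> tensor_rels M N"
  shows "flin P f x = mzero P"
proof -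
  note fd = bilinear_mapD(1)[OF bl]
  note kd = keys_fdelta_sub[of _ "mcarrier M" _ "mcarrier N"]
  note fl = flin_add[where A="mcarrier M" and B="mcarrier N", OF kp fd] flin_fdelta[where A="mcarrier M" and B="mcarrier N", OF kp fd] flin_scale[where A="mcarrier M" and B="mcarrier N", OF kp fd]
  note kk = keys_diff_sub keys_add_sub keys_fscale_sub kd
  have Z: "flin P f X = mzero P" if "Poly_Mapping.keys X \<subseteq> mcarrier M \<times> mcarrier N"
     "Poly_Mapping.keys G \<subseteq> mcarrier M \<times> mcarrier N" "X + G = H" "flin P f H = flin P f G" for X G H
    using flin_zero_if[where A="mcarrier M" and B="mcarrier N", OF kp fd that(1,2)] that(3,4) by simp
  show ?thesis using x unfolding tensor_rels_def
  proof (elim UnE CollectE exE conjE)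
    fix a a' b assume h: "x = fdelta (madd M a a') b - fdelta a b - fdelta a' b"
      "a \<in> mcarrier M" "a' \<in> mcarrier M" "b \<in> mcarrier N"
    show ?thesis unfolding h(1)
    proof (rule Z[where G="fdelta a b + fdelta a' b" and H="fdelta (madd M a a') b"])
      show "flin P f (fdelta (madd M a a') b) = flin P f (fdelta a b + fdelta a' b)"
        using h km by (simp add: fl kd bilinear_mapD(2)[OF bl])
    qed (use h km in \<open>((intro kk; simp) | simp add: algebra_simps)+\<close>)
  next
    fix a b b' assume h: "x = fdelta a (madd N b b') - fdelta a b - fdelta a b'"
      "a \<in> mcarrier M" "b \<in> mcarrier N" "b' \<in> mcarrier N"
    show ?thesis unfolding h(1)
    proof (rule Z[where G="fdelta a b + fdelta a b'" and H="fdelta a (madd N b b')"])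
      show "flin P f (fdelta a (madd N b b')) = flin P f (fdelta a b + fdelta a b')"
        using h kn by (simp add: fl kd bilinear_mapD(3)[OF bl])
    qed (use h kn in \<open>((intro kk; simp) | simp add: algebra_simps)+\<close>)
  next
    fix r a b assume h: "x = fdelta (msmult M r a) b - fscale r (fdelta a b)"
      "a \<in> mcarrier M" "b \<in> mcarrier N"
    show ?thesis unfolding h(1)
    proof (rule Z[where G="fscale r (fdelta a b)" and H="fdelta (msmult M r a) b"])
      show "flin P f (fdelta (msmult M r a) b) = flin P f (fscale r (fdelta a b))"
        using h km by (simp add: fl kd bilinear_mapD(4)[OF bl])
    qed (use h km in \<open>((intro kk; simp) | simp add: algebra_simps)+\<close>)
  next
    fix r a b assume h: "x = fdelta a (msmult N r b) - fscale r (fdelta a b)"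
      "a \<in> mcarrier M" "b \<in> mcarrier N"
    show ?thesis unfolding h(1)
    proof (rule Z[where G="fscale r (fdelta a b)" and H="fdelta a (msmult N r b)"])
      show "flin P f (fdelta a (msmult N r b)) = flin P f (fscale r (fdelta a b))"
        using h kn by (simp add: fl kd bilinear_mapD(5)[OF bl])
    qed (use h kn in \<open>((intro kk; simp) | simp add: algebra_simps)+\<close>)
  qed
qed


lemma flin_sub:
  fixes M :: "('k::comm_ring_1, 'a) kmod" and N :: "('k, 'b) kmod"
  assumes km: "kmodule M" and kn: "kmodule N" and kp: "kmodule P" and bl: "bilinear_map M N P f"
    and x: "x \<in> tensor_sub M N"
  shows "flin P f x = mzero P"
  using x unfolding tensor_sub_def
proof (induction rule: fspan_induct)
  case zero then show ?case using kp by (simp add: flin_def)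
next
  case (step x r G)
  note fd = bilinear_mapD(1)[OF bl]
  have kx: "Poly_Mapping.keys x \<subseteq> mcarrier M \<times> mcarrier N" using keys_tensor_rels[OF km kn step(1)] .
  have kG: "Poly_Mapping.keys G \<subseteq> mcarrier M \<times> mcarrier N"
    using keys_tensor_sub[OF km kn, of G] step(2) by (simp add: tensor_sub_def)
  have "flin P f (fscale r x + G) = madd P (msmult P r (flin P f x)) (flin P f G)"
    using kx kG by (simp add: flin_add[where A="mcarrier M" and B="mcarrier N", OF kp fd] flin_scale[where A="mcarrier M" and B="mcarrier N", OF kp fd] keys_fscale_sub)
  then show ?case using step flin_rel[OF km kn kp bl step(1)] kp by simp
qed

lemma flin_class:
  fixes M :: "('k::comm_ring_1, 'a) kmod" and N :: "('k, 'b) kmod"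
  assumes km: "kmodule M" and kn: "kmodule N" and kp: "kmodule P" and bl: "bilinear_map M N P f"
    and "F - G \<in> tensor_sub M N" "Poly_Mapping.keys F \<subseteq> mcarrier M \<times> mcarrier N"
    "Poly_Mapping.keys G \<subseteq> mcarrier M \<times> mcarrier N"
  shows "flin P f F = flin P f G"
proof -
  note fd = bilinear_mapD(1)[OF bl]
  have kd: "Poly_Mapping.keys (F - G) \<subseteq> mcarrier M \<times> mcarrier N"
    by (rule keys_diff_sub) (fact assms(6), fact assms(7))
  have "flin P f F = flin P f (G + (F - G))" by simp
  also have "\<dots> = madd P (flin P f G) (flin P f (F - G))"
    by (rule flin_add[where A="mcarrier M" and B="mcarrier N", OF kp fd]) (use assms(7) kd in auto)
  also have "\<dots> = flin P f G"
    using flin_sub[OF km kn kp bl assms(5)] flin_closed[where A="mcarrier M" and B="mcarrier N", OF kp fd assms(7)] kp by simp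
  finally show ?thesis .
qed

lemma km_smult_comm: "kmodule P \<Longrightarrow> x \<in> mcarrier P \<Longrightarrow> msmult P r (msmult P s x) = msmult P s (msmult P r x)"
  by (metis km_smult_smult mult.commute)

definition trep :: "('k, 'a, 'b) tens \<Rightarrow> ('a \<times> 'b \<Rightarrow>\<^sub>0 'k)" where
  "trep X = (SOME F. F \<in> X)"

lemma tlift_trep: "tlift M N P f X = flin P f (trep X)"
  by (simp add: tlift_flin trep_def)

lemma trep:
  fixes M :: "('k::comm_ring_1, 'a) kmod" and N :: "('k, 'b) kmod"
  assumes km: "kmodule M" and kn: "kmodule N" and X: "X \<in> mcarrier (tensor M N)"
  shows "trep X \<in> X" "Poly_Mapping.keys (trep X) \<subseteq> mcarrier M \<times> mcarrier N"
    "tclass M N (trep X) = X"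
proof -
  obtain F where F: "Poly_Mapping.keys F \<subseteq> mcarrier M \<times> mcarrier N" "X = tclass M N F"
    using X by (auto simp: tensor_carrier_iff)
  have "F \<in> X" using F by simp
  then show r: "trep X \<in> X" unfolding trep_def by (rule someI)
  then have d: "trep X - F \<in> tensor_sub M N" using F by (simp add: mem_tclass)
  have "Poly_Mapping.keys (F + (trep X - F)) \<subseteq> mcarrier M \<times> mcarrier N"
    by (rule keys_add_sub) (fact F(1), rule keys_tensor_sub[OF km kn d])
  then show "Poly_Mapping.keys (trep X) \<subseteq> mcarrier M \<times> mcarrier N" by simp
  show "tclass M N (trep X) = X" using d F by (simp add: tclass_eq_iff)
qed

lemma tlift_tclass:
  fixes M :: "('k::comm_ring_1, 'a) kmod" and N :: "('k, 'b) kmod"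
  assumes km: "kmodule M" and kn: "kmodule N" and kp: "kmodule P" and bl: "bilinear_map M N P f"
    and F: "Poly_Mapping.keys F \<subseteq> mcarrier M \<times> mcarrier N"
  shows "tlift M N P f (tclass M N F) = flin P f F"
proof -
  have X: "tclass M N F \<in> mcarrier (tensor M N)" using F by auto
  have "trep (tclass M N F) - F \<in> tensor_sub M N"
    using trep(1)[OF km kn X] by (simp add: mem_tclass)
  then show ?thesis unfolding tlift_trep
    using flin_class[OF km kn kp bl _ trep(2)[OF km kn X] F] by simp
qed

lemma tp_carrier[simp]:
  "a \<in> mcarrier M \<Longrightarrow> b \<in> mcarrier N \<Longrightarrow> tp M N a b \<in> mcarrier (tensor M N)"
  unfolding tp_def by (intro tclass_in_carrier keys_fdelta_sub)

lemma tlift_tp: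
  fixes M :: "('k::comm_ring_1, 'a) kmod" and N :: "('k, 'b) kmod"
  assumes km: "kmodule M" and kn: "kmodule N" and kp: "kmodule P" and bl: "bilinear_map M N P f"
    and a: "a \<in> mcarrier M" and b: "b \<in> mcarrier N"
  shows "tlift M N P f (tp M N a b) = f a b"
proof -
  have "tlift M N P f (tp M N a b) = flin P f (fdelta a b)"
    unfolding tp_def by (rule tlift_tclass[OF km kn kp bl]) (rule keys_fdelta_sub[OF a b])
  also have "\<dots> = f a b" by (rule flin_fdelta[where A="mcarrier M" and B="mcarrier N", OF kp bilinear_mapD(1)[OF bl] a b])
  finally show ?thesis .
qed

lemma tlift_closed[simp]:
  fixes M :: "('k::comm_ring_1, 'a) kmod" and N :: "('k, 'b) kmod"
  assumes km: "kmodule M" and kn: "kmodule N" and kp: "kmodule P"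
    and fd: "\<And>a b. a \<in> mcarrier M \<Longrightarrow> b \<in> mcarrier N \<Longrightarrow> f a b \<in> mcarrier P"
    and X: "X \<in> mcarrier (tensor M N)"
  shows "tlift M N P f X \<in> mcarrier P"
  unfolding tlift_trep using flin_closed[where A="mcarrier M" and B="mcarrier N", OF kp fd trep(2)[OF km kn X]] .

lemma tlift_add:
  fixes M :: "('k::comm_ring_1, 'a) kmod" and N :: "('k, 'b) kmod"
  assumes km: "kmodule M" and kn: "kmodule N" and kp: "kmodule P" and bl: "bilinear_map M N P f"
    and X: "X \<in> mcarrier (tensor M N)" and Y: "Y \<in> mcarrier (tensor M N)"
  shows "tlift M N P f (madd (tensor M N) X Y) = madd P (tlift M N P f X) (tlift M N P f Y)"
proof -
  note r = trep[OF km kn]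
  have "madd (tensor M N) X Y = tclass M N (trep X + trep Y)"
    using r(3)[OF X] r(3)[OF Y] tclass_add by metis
  then have "tlift M N P f (madd (tensor M N) X Y) = flin P f (trep X + trep Y)"
    using r(2)[OF X] r(2)[OF Y] by (simp add: tlift_tclass[OF km kn kp bl] keys_add_sub)
  then show ?thesis
    using r(2)[OF X] r(2)[OF Y] tlift_trep[of M N P f X] tlift_trep[of M N P f Y]
    by (simp add: flin_add[where A="mcarrier M" and B="mcarrier N", OF kp bilinear_mapD(1)[OF bl]])
qed

lemma tlift_smult:
  fixes M :: "('k::comm_ring_1, 'a) kmod" and N :: "('k, 'b) kmod"
  assumes km: "kmodule M" and kn: "kmodule N" and kp: "kmodule P" and bl: "bilinear_map M N P f"
    and X: "X \<in> mcarrier (tensor M N)"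
  shows "tlift M N P f (msmult (tensor M N) r X) = msmult P r (tlift M N P f X)"
proof -
  note rr = trep[OF km kn]
  have "msmult (tensor M N) r X = tclass M N (fscale r (trep X))"
    using rr(3)[OF X] tclass_smult by metis
  then have "tlift M N P f (msmult (tensor M N) r X) = flin P f (fscale r (trep X))"
    using rr(2)[OF X] by (simp add: tlift_tclass[OF km kn kp bl] keys_fscale_sub)
  then show ?thesis
    using rr(2)[OF X] tlift_trep[of M N P f X]
    by (simp add: flin_scale[where A="mcarrier M" and B="mcarrier N", OF kp bilinear_mapD(1)[OF bl]])
qed

lemma tlift_linear:
  fixes M :: "('k::comm_ring_1, 'a) kmod" and N :: "('k, 'b) kmod"
  assumes km: "kmodule M" and kn: "kmodule N" and kp: "kmodule P" and bl: "bilinear_map M N P f"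
  shows "linear_map (tensor M N) P (tlift M N P f)"
proof -
  have "tlift M N P f X \<in> mcarrier P" if "X \<in> mcarrier (tensor M N)" for X
    by (rule tlift_closed[OF km kn kp _ that]) (rule bilinear_mapD(1)[OF bl])
  then show ?thesis unfolding linear_map_def
    using tlift_add[OF km kn kp bl] tlift_smult[OF km kn kp bl] by blast
qed

lemma tlift_cong:
  fixes M :: "('k::comm_ring_1, 'a) kmod" and N :: "('k, 'b) kmod"
  assumes km: "kmodule M" and kn: "kmodule N" and kp: "kmodule P"
    and fd: "\<And>a b. a \<in> mcarrier M \<Longrightarrow> b \<in> mcarrier N \<Longrightarrow> f a b \<in> mcarrier P"
    and eq: "\<And>a b. a \<in> mcarrier M \<Longrightarrow> b \<in> mcarrier N \<Longrightarrow> f a b = g a b"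
    and X: "X \<in> mcarrier (tensor M N)"
  shows "tlift M N P f X = tlift M N P g X"
proof -
  have K: "\<And>p. p \<in> Poly_Mapping.keys (trep X) \<Longrightarrow> fst p \<in> mcarrier M \<and> snd p \<in> mcarrier N"
    using trep(2)[OF km kn X] by (metis mem_Times_iff subsetD)
  show ?thesis unfolding tlift_trep flin_def
  proof (rule msum_cong[OF kp])
    fix i assume i: "i \<in> Poly_Mapping.keys (trep X)"
    note Ki = K[OF i]
    show "msmult P (Poly_Mapping.lookup (trep X) i) (f (fst i) (snd i)) =
          msmult P (Poly_Mapping.lookup (trep X) i) (g (fst i) (snd i))"
      using eq Ki by simp
    show "msmult P (Poly_Mapping.lookup (trep X) i) (f (fst i) (snd i)) \<in> mcarrier P"
      using fd Ki kp by simp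
  qed
qed

lemma tlift_add_fun:
  fixes M :: "('k::comm_ring_1, 'a) kmod" and N :: "('k, 'b) kmod"
  assumes km: "kmodule M" and kn: "kmodule N" and kp: "kmodule P"
    and fd: "\<And>a b. a \<in> mcarrier M \<Longrightarrow> b \<in> mcarrier N \<Longrightarrow> f a b \<in> mcarrier P"
    and gd: "\<And>a b. a \<in> mcarrier M \<Longrightarrow> b \<in> mcarrier N \<Longrightarrow> g a b \<in> mcarrier P"
    and X: "X \<in> mcarrier (tensor M N)"
  shows "tlift M N P (\<lambda>a b. madd P (f a b) (g a b)) X = madd P (tlift M N P f X) (tlift M N P g X)"
proof -
  have K: "\<And>p. p \<in> Poly_Mapping.keys (trep X) \<Longrightarrow> p \<in> mcarrier M \<times> mcarrier N"
    using trep(2)[OF km kn X] by blast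
  have fd': "\<And>p. p \<in> Poly_Mapping.keys (trep X) \<Longrightarrow> f (fst p) (snd p) \<in> mcarrier P"
    and gd': "\<And>p. p \<in> Poly_Mapping.keys (trep X) \<Longrightarrow> g (fst p) (snd p) \<in> mcarrier P"
    using K fd gd by (metis mem_Times_iff)+
  have "tlift M N P (\<lambda>a b. madd P (f a b) (g a b)) X =
    msum P (\<lambda>p. madd P (msmult P (Poly_Mapping.lookup (trep X) p) (f (fst p) (snd p)))
                        (msmult P (Poly_Mapping.lookup (trep X) p) (g (fst p) (snd p)))) (Poly_Mapping.keys (trep X))"
    unfolding tlift_trep flin_def using fd' gd' kp by (intro msum_cong[OF kp]) (simp_all add: km_smult_add[OF kp])
  also have "\<dots> = madd P (tlift M N P f X) (tlift M N P g X)"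
    unfolding tlift_trep flin_def using fd' gd' kp by (intro msum_add[OF kp]) simp_all
  finally show ?thesis .
qed

lemma tlift_smult_fun:
  fixes M :: "('k::comm_ring_1, 'a) kmod" and N :: "('k, 'b) kmod"
  assumes km: "kmodule M" and kn: "kmodule N" and kp: "kmodule P"
    and fd: "\<And>a b. a \<in> mcarrier M \<Longrightarrow> b \<in> mcarrier N \<Longrightarrow> f a b \<in> mcarrier P"
    and X: "X \<in> mcarrier (tensor M N)"
  shows "tlift M N P (\<lambda>a b. msmult P r (f a b)) X = msmult P r (tlift M N P f X)"
proof -
  have K: "\<And>p. p \<in> Poly_Mapping.keys (trep X) \<Longrightarrow> p \<in> mcarrier M \<times> mcarrier N"
    using trep(2)[OF km kn X] by blast
  have fd': "\<And>p. p \<in> Poly_Mapping.keys (trep X) \<Longrightarrow> f (fst p) (snd p) \<in> mcarrier P"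
    using K fd by (metis mem_Times_iff)
  have "tlift M N P (\<lambda>a b. msmult P r (f a b)) X =
    msum P (\<lambda>p. msmult P r (msmult P (Poly_Mapping.lookup (trep X) p) (f (fst p) (snd p)))) (Poly_Mapping.keys (trep X))"
    unfolding tlift_trep flin_def using fd' kp
    by (intro msum_cong[OF kp]) (simp_all add: km_smult_smult[OF kp, symmetric] mult.commute)
  also have "\<dots> = msmult P r (tlift M N P f X)"
    unfolding tlift_trep flin_def using fd' kp by (intro msum_smult[OF kp, symmetric]) simp_all
  finally show ?thesis .
qed

lemma tlift_zero_fun:
  assumes kp: "kmodule P"
  shows "tlift M N P (\<lambda>a b. mzero P) X = mzero P"
  unfolding tlift_trep flin_def using kp by simp

lemma tlift_commute:
  fixes M :: "('k::comm_ring_1, 'a) kmod" and N :: "('k, 'b) kmod"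
  assumes km: "kmodule M" and kn: "kmodule N" and kp: "kmodule P" and kq: "kmodule Q"
    and L: "linear_map P Q L"
    and fd: "\<And>a b. a \<in> mcarrier M \<Longrightarrow> b \<in> mcarrier N \<Longrightarrow> f a b \<in> mcarrier P"
    and X: "X \<in> mcarrier (tensor M N)"
  shows "L (tlift M N P f X) = tlift M N Q (\<lambda>a b. L (f a b)) X"
proof -
  have K: "\<And>p. p \<in> Poly_Mapping.keys (trep X) \<Longrightarrow> p \<in> mcarrier M \<times> mcarrier N"
    using trep(2)[OF km kn X] by blast
  have fd': "\<And>p. p \<in> Poly_Mapping.keys (trep X) \<Longrightarrow> f (fst p) (snd p) \<in> mcarrier P"
    using K fd by (metis mem_Times_iff)
  have "L (tlift M N P f X) = msum Q (\<lambda>p. L (msmult P (Poly_Mapping.lookup (trep X) p) (f (fst p) (snd p)))) (Poly_Mapping.keys (trep X))"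
    unfolding tlift_trep flin_def using fd' kp by (intro msum_linear[OF kp kq L]) simp
  also have "\<dots> = tlift M N Q (\<lambda>a b. L (f a b)) X"
    unfolding tlift_trep flin_def using fd' kp kq L
    by (intro msum_cong[OF kq]) (simp_all add: linear_mapD)
  finally show ?thesis .
qed

lemma tlift_swap:
  fixes M :: "('k::comm_ring_1, 'a) kmod" and N :: "('k, 'b) kmod"
    and M' :: "('k, 'c) kmod" and N' :: "('k, 'd) kmod"
  assumes km: "kmodule M" and kn: "kmodule N" and km': "kmodule M'" and kn': "kmodule N'" and kp: "kmodule P"
    and fd: "\<And>a b c d. a \<in> mcarrier M \<Longrightarrow> b \<in> mcarrier N \<Longrightarrow> c \<in> mcarrier M' \<Longrightarrow> d \<in> mcarrier N'
       \<Longrightarrow> f a b c d \<in> mcarrier P"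
    and X: "X \<in> mcarrier (tensor M N)" and Y: "Y \<in> mcarrier (tensor M' N')"
  shows "tlift M N P (\<lambda>a b. tlift M' N' P (\<lambda>c d. f a b c d) Y) X
       = tlift M' N' P (\<lambda>c d. tlift M N P (\<lambda>a b. f a b c d) X) Y"
proof -
  have K: "\<And>p. p \<in> Poly_Mapping.keys (trep X) \<Longrightarrow> p \<in> mcarrier M \<times> mcarrier N"
    using trep(2)[OF km kn X] by blast
  have K': "\<And>p. p \<in> Poly_Mapping.keys (trep Y) \<Longrightarrow> p \<in> mcarrier M' \<times> mcarrier N'"
    using trep(2)[OF km' kn' Y] by blast
  let ?X = "trep X" and ?Y = "trep Y"
  have fd': "\<And>p q. p \<in> Poly_Mapping.keys ?X \<Longrightarrow> q \<in> Poly_Mapping.keys ?Y \<Longrightarrow>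
      f (fst p) (snd p) (fst q) (snd q) \<in> mcarrier P"
    using K K' fd by (metis mem_Times_iff)
  have "tlift M N P (\<lambda>a b. tlift M' N' P (\<lambda>c d. f a b c d) Y) X =
    msum P (\<lambda>p. msum P (\<lambda>q. msmult P (Poly_Mapping.lookup ?X p) (msmult P (Poly_Mapping.lookup ?Y q)
        (f (fst p) (snd p) (fst q) (snd q)))) (Poly_Mapping.keys ?Y)) (Poly_Mapping.keys ?X)"
    unfolding tlift_trep flin_def using fd' kp
    by (intro msum_cong[OF kp]) (simp_all add: msum_smult[OF kp])
  also have "\<dots> = msum P (\<lambda>q. msum P (\<lambda>p. msmult P (Poly_Mapping.lookup ?X p) (msmult P (Poly_Mapping.lookup ?Y q)
        (f (fst p) (snd p) (fst q) (snd q)))) (Poly_Mapping.keys ?X)) (Poly_Mapping.keys ?Y)"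
    using fd' kp by (intro msum_swap[OF kp]) auto
  also have "\<dots> = tlift M' N' P (\<lambda>c d. tlift M N P (\<lambda>a b. f a b c d) X) Y"
    unfolding tlift_trep flin_def
  proof (rule msum_cong[OF kp])
    fix q assume q: "q \<in> Poly_Mapping.keys ?Y"
    show "msum P (\<lambda>p. msmult P (Poly_Mapping.lookup ?X p) (msmult P (Poly_Mapping.lookup ?Y q)
        (f (fst p) (snd p) (fst q) (snd q)))) (Poly_Mapping.keys ?X) =
      msmult P (Poly_Mapping.lookup ?Y q) (msum P (\<lambda>p. msmult P (Poly_Mapping.lookup ?X p)
        (f (fst p) (snd p) (fst q) (snd q))) (Poly_Mapping.keys ?X))"
      apply (subst msum_smult[OF kp])
       apply (use fd' q kp in simp)
      apply (rule msum_cong[OF kp])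
       apply (rule km_smult_comm[OF kp])
      using fd' q kp by simp_all
    show "msum P (\<lambda>p. msmult P (Poly_Mapping.lookup ?X p) (msmult P (Poly_Mapping.lookup ?Y q)
        (f (fst p) (snd p) (fst q) (snd q)))) (Poly_Mapping.keys ?X) \<in> mcarrier P"
      using fd' q kp by simp
  qed
  finally show ?thesis .
qed


lemma tp_add1:
  fixes M :: "('k::comm_ring_1, 'a) kmod" and N :: "('k, 'b) kmod"
  assumes "a \<in> mcarrier M" "a' \<in> mcarrier M" "b \<in> mcarrier N"
  shows "tp M N (madd M a a') b = madd (tensor M N) (tp M N a b) (tp M N a' b)"
  unfolding tp_def tclass_add
  by (rule tclassI, rule sub_rel) (auto simp: tensor_rels_def diff_diff_eq intro!: exI assms)

lemma tp_add2:
  fixes M :: "('k::comm_ring_1, 'a) kmod" and N :: "('k, 'b) kmod"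
  assumes "a \<in> mcarrier M" "b \<in> mcarrier N" "b' \<in> mcarrier N"
  shows "tp M N a (madd N b b') = madd (tensor M N) (tp M N a b) (tp M N a b')"
  unfolding tp_def tclass_add
  by (rule tclassI, rule sub_rel) (auto simp: tensor_rels_def diff_diff_eq intro!: exI assms)

lemma tp_smult1:
  fixes M :: "('k::comm_ring_1, 'a) kmod" and N :: "('k, 'b) kmod"
  assumes "a \<in> mcarrier M" "b \<in> mcarrier N"
  shows "tp M N (msmult M r a) b = msmult (tensor M N) r (tp M N a b)"
  unfolding tp_def tclass_smult
  by (rule tclassI, rule sub_rel) (auto simp: tensor_rels_def intro!: exI assms)

lemma tp_smult2:
  fixes M :: "('k::comm_ring_1, 'a) kmod" and N :: "('k, 'b) kmod"
  assumes "a \<in> mcarrier M" "b \<in> mcarrier N"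
  shows "tp M N a (msmult N r b) = msmult (tensor M N) r (tp M N a b)"
  unfolding tp_def tclass_smult
  by (rule tclassI, rule sub_rel) (auto simp: tensor_rels_def intro!: exI assms)

lemma linear_mapI:
  assumes "\<And>x. x \<in> mcarrier M \<Longrightarrow> f x \<in> mcarrier N"
    "\<And>x y. x \<in> mcarrier M \<Longrightarrow> y \<in> mcarrier M \<Longrightarrow> f (madd M x y) = madd N (f x) (f y)"
    "\<And>r x. x \<in> mcarrier M \<Longrightarrow> f (msmult M r x) = msmult N r (f x)"
  shows "linear_map M N f"
  using assms unfolding linear_map_def by blast

lemma bilinear_mapI:
  assumes "\<And>a. a \<in> mcarrier M \<Longrightarrow> linear_map N P (\<lambda>b. f a b)"
    "\<And>b. b \<in> mcarrier N \<Longrightarrow> linear_map M P (\<lambda>a. f a b)"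
  shows "bilinear_map M N P f"
  using assms unfolding bilinear_map_def by blast

lemma bilinear_map_lin1: "bilinear_map M N P f \<Longrightarrow> b \<in> mcarrier N \<Longrightarrow> linear_map M P (\<lambda>a. f a b)"
  unfolding bilinear_map_def by blast
lemma bilinear_map_lin2: "bilinear_map M N P f \<Longrightarrow> a \<in> mcarrier M \<Longrightarrow> linear_map N P (\<lambda>b. f a b)"
  unfolding bilinear_map_def by blast

lemma lin_id: "linear_map M M (\<lambda>x. x)"
  unfolding linear_map_def by blast

lemma lin_comp:
  assumes "linear_map N P L" "linear_map Q N g"
  shows "linear_map Q P (\<lambda>x. L (g x))"
  using assms unfolding linear_map_def by auto

lemma lin_bil1:
  assumes "bilinear_map M N P f" "linear_map Q M g" "b \<in> mcarrier N"
  shows "linear_map Q P (\<lambda>x. f (g x) b)"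
  using lin_comp[OF bilinear_map_lin1[OF assms(1,3)] assms(2)] .

lemma lin_bil2:
  assumes "bilinear_map M N P f" "a \<in> mcarrier M" "linear_map Q N g"
  shows "linear_map Q P (\<lambda>x. f a (g x))"
  using lin_comp[OF bilinear_map_lin2[OF assms(1,2)] assms(3)] .

lemma tp_bilinear:
  fixes M :: "('k::comm_ring_1, 'a) kmod" and N :: "('k, 'b) kmod"
  shows "bilinear_map M N (tensor M N) (tp M N)"
  by (intro bilinear_mapI linear_mapI) (simp_all add: tp_add1 tp_add2 tp_smult1 tp_smult2)

lemma lin_tp1:
  fixes M :: "('k::comm_ring_1, 'a) kmod" and N :: "('k, 'b) kmod"
  shows "linear_map Q M g \<Longrightarrow> b \<in> mcarrier N \<Longrightarrow> linear_map Q (tensor M N) (\<lambda>x. tp M N (g x) b)"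
  by (rule lin_bil1[OF tp_bilinear])

lemma lin_tp2:
  fixes M :: "('k::comm_ring_1, 'a) kmod" and N :: "('k, 'b) kmod"
  shows "a \<in> mcarrier M \<Longrightarrow> linear_map Q N g \<Longrightarrow> linear_map Q (tensor M N) (\<lambda>x. tp M N a (g x))"
  by (rule lin_bil2[OF tp_bilinear])

lemma lin_tlift:
  fixes M :: "('k::comm_ring_1, 'a) kmod" and N :: "('k, 'b) kmod"
  assumes "kmodule M" "kmodule N" "kmodule P" "bilinear_map M N P f" "linear_map Q (tensor M N) g"
  shows "linear_map Q P (\<lambda>x. tlift M N P f (g x))"
  by (rule lin_comp[OF tlift_linear[OF assms(1-4)] assms(5)])

lemma lin_tlift_fun:
  fixes M :: "('k::comm_ring_1, 'a) kmod" and N :: "('k, 'b) kmod"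
  assumes km: "kmodule M" and kn: "kmodule N" and kp: "kmodule P" and kq: "kmodule Q"
    and X: "X \<in> mcarrier (tensor M N)"
    and F: "\<And>a b. a \<in> mcarrier M \<Longrightarrow> b \<in> mcarrier N \<Longrightarrow> linear_map Q P (\<lambda>x. F x a b)"
  shows "linear_map Q P (\<lambda>x. tlift M N P (\<lambda>a b. F x a b) X)"
proof (rule linear_mapI)
  have Fd: "F x a b \<in> mcarrier P" if "x \<in> mcarrier Q" "a \<in> mcarrier M" "b \<in> mcarrier N" for x a b
    using linear_mapD(1)[OF F] that by blast
  show "tlift M N P (\<lambda>a b. F x a b) X \<in> mcarrier P" if "x \<in> mcarrier Q" for x
    using tlift_closed[OF km kn kp _ X, of "\<lambda>a b. F x a b"] Fd that by blast
  show "tlift M N P (\<lambda>a b. F (madd Q x y) a b) X =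
        madd P (tlift M N P (\<lambda>a b. F x a b) X) (tlift M N P (\<lambda>a b. F y a b) X)"
    if "x \<in> mcarrier Q" "y \<in> mcarrier Q" for x y
  proof -
    have "tlift M N P (\<lambda>a b. F (madd Q x y) a b) X = tlift M N P (\<lambda>a b. madd P (F x a b) (F y a b)) X"
      using that kq by (intro tlift_cong[OF km kn kp _ _ X]) (simp_all add: Fd linear_mapD(2)[OF F] km_add[OF kp])
    also have "\<dots> = madd P (tlift M N P (\<lambda>a b. F x a b) X) (tlift M N P (\<lambda>a b. F y a b) X)"
      using that by (intro tlift_add_fun[OF km kn kp _ _ X]) (simp_all add: Fd km_add[OF kp])
    finally show ?thesis .
  qed
  show "tlift M N P (\<lambda>a b. F (msmult Q r x) a b) X = msmult P r (tlift M N P (\<lambda>a b. F x a b) X)"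
    if "x \<in> mcarrier Q" for r x
  proof -
    have "tlift M N P (\<lambda>a b. F (msmult Q r x) a b) X = tlift M N P (\<lambda>a b. msmult P r (F x a b)) X"
      using that kq by (intro tlift_cong[OF km kn kp _ _ X]) (simp_all add: Fd linear_mapD(3)[OF F] km_smult[OF kp])
    also have "\<dots> = msmult P r (tlift M N P (\<lambda>a b. F x a b) X)"
      using that by (intro tlift_smult_fun[OF km kn kp _ X]) (simp_all add: Fd)
    finally show ?thesis .
  qed
qed

lemma kself_simps[simp]:
  "mcarrier kself = UNIV" "madd kself = (+)" "mzero kself = 0" "msmult kself = (*)"
  by (simp_all add: kself_def)

lemma kmodule_kself[simp]: "kmodule (kself :: ('k::comm_ring_1, 'k) kmod)"
  by (simp add: kmodule_def algebra_simps) (metis add.right_inverse)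

lemma lin_smult_r:
  assumes "kmodule P" "linear_map Q P g"
  shows "linear_map Q P (\<lambda>x. msmult P r (g x))"
  using assms by (intro linear_mapI) (auto simp: linear_mapD km_smult_add km_smult_comm)

lemma lin_smult_l:
  assumes "kmodule P" "linear_map Q kself \<phi>" "v \<in> mcarrier P"
  shows "linear_map Q P (\<lambda>x. msmult P (\<phi> x) v)"
  using assms by (intro linear_mapI) (auto simp: linear_mapD km_add_smult km_smult_smult)

lemma lin_kmul_r:
  assumes "linear_map Q kself \<phi>"
  shows "linear_map Q kself (\<lambda>x. c * \<phi> x)"
  using assms by (intro linear_mapI) (auto simp: linear_mapD algebra_simps)

lemma lin_kmul_l:
  assumes "linear_map Q kself \<phi>"
  shows "linear_map Q kself (\<lambda>x. \<phi> x * c)"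
  using assms by (intro linear_mapI) (auto simp: linear_mapD algebra_simps)

section \<open>Identity and extensionality\<close>

lemma sum_fdelta: "(\<Sum>p\<in>Poly_Mapping.keys F. fscale (Poly_Mapping.lookup F p) (fdelta (fst p) (snd p))) = F"
proof (rule poly_mapping_eqI)
  fix k
  have "Poly_Mapping.lookup (\<Sum>p\<in>Poly_Mapping.keys F. fscale (Poly_Mapping.lookup F p) (fdelta (fst p) (snd p))) k
      = (\<Sum>p\<in>Poly_Mapping.keys F. Poly_Mapping.lookup F p * (if p = k then 1 else 0))"
    by (simp add: lookup_sum fdelta_def lookup_single when_def)
  also have "\<dots> = Poly_Mapping.lookup F k"
    by (cases "k \<in> Poly_Mapping.keys F") (simp_all add: in_keys_iff if_distrib sum.delta cong: if_cong)
  finally show "Poly_Mapping.lookup (\<Sum>p\<in>Poly_Mapping.keys F. fscale (Poly_Mapping.lookup F p) (fdelta (fst p) (snd p))) k = Poly_Mapping.lookup F k" .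
qed

lemma keys_fscale_fdelta: "a \<in> A \<Longrightarrow> b \<in> B \<Longrightarrow> Poly_Mapping.keys (fscale r (fdelta a b :: _ \<Rightarrow>\<^sub>0 'k::comm_ring_1)) \<subseteq> A \<times> B"
  by (rule keys_fscale_sub, rule keys_fdelta_sub)

lemma msum_tclass:
  fixes M :: "('k::comm_ring_1, 'a) kmod" and N :: "('k, 'b) kmod"
  assumes km: "kmodule M" and kn: "kmodule N" and "finite A"
    and G: "\<And>i. i \<in> A \<Longrightarrow> Poly_Mapping.keys (G i) \<subseteq> mcarrier M \<times> mcarrier N"
  shows "msum (tensor M N) (\<lambda>i. tclass M N (G i)) A = tclass M N (\<Sum>i\<in>A. G i)"
  using assms(3,4)
proof (induction A rule: finite_induct)
  case empty then show ?case by (simp add: tensor_zero_tclass msum_empty[OF kmodule_tensor[OF km kn]])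
next
  case (insert x F)
  then show ?case
    by (subst msum_insert[OF kmodule_tensor[OF km kn]]) (auto simp: tclass_in_carrier tclass_add)
qed

lemma tlift_tp_id:
  fixes M :: "('k::comm_ring_1, 'a) kmod" and N :: "('k, 'b) kmod"
  assumes km: "kmodule M" and kn: "kmodule N" and X: "X \<in> mcarrier (tensor M N)"
  shows "tlift M N (tensor M N) (tp M N) X = X"
proof -
  let ?F = "trep X"
  have K: "Poly_Mapping.keys ?F \<subseteq> mcarrier M \<times> mcarrier N" using trep(2)[OF km kn X] .
  have Kp: "fst p \<in> mcarrier M" "snd p \<in> mcarrier N" if "p \<in> Poly_Mapping.keys ?F" for p
    using K that by auto
  have "tlift M N (tensor M N) (tp M N) X =
     msum (tensor M N) (\<lambda>p. tclass M N (fscale (Poly_Mapping.lookup ?F p) (fdelta (fst p) (snd p)))) (Poly_Mapping.keys ?F)"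
    unfolding tlift_trep flin_def using K
    by (intro msum_cong[OF kmodule_tensor[OF km kn]]) (auto simp: tp_def tclass_smult tclass_in_carrier keys_fscale_sub keys_fdelta_sub)
  also have "\<dots> = tclass M N ?F"
    by (subst msum_tclass[OF km kn]) (simp_all add: sum_fdelta keys_fscale_fdelta Kp)
  also have "\<dots> = X" using trep(3)[OF km kn X] .
  finally show ?thesis .
qed

lemma tensor_ext:
  fixes M :: "('k::comm_ring_1, 'a) kmod" and N :: "('k, 'b) kmod"
  assumes km: "kmodule M" and kn: "kmodule N" and kq: "kmodule Q"
    and L1: "linear_map (tensor M N) Q L1" and L2: "linear_map (tensor M N) Q L2"
    and eq: "\<And>a b. a \<in> mcarrier M \<Longrightarrow> b \<in> mcarrier N \<Longrightarrow> L1 (tp M N a b) = L2 (tp M N a b)"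
    and X: "X \<in> mcarrier (tensor M N)"
  shows "L1 X = L2 X"
proof -
  have kt: "kmodule (tensor M N)" using km kn by simp
  have "L1 X = L1 (tlift M N (tensor M N) (tp M N) X)" using tlift_tp_id[OF km kn X] by simp
  also have "\<dots> = tlift M N Q (\<lambda>a b. L1 (tp M N a b)) X"
    by (rule tlift_commute[OF km kn kt kq L1 _ X]) simp
  also have "\<dots> = tlift M N Q (\<lambda>a b. L2 (tp M N a b)) X"
    by (rule tlift_cong[OF km kn kq _ _ X]) (simp_all add: eq linear_mapD(1)[OF L1] linear_mapD(1)[OF L2])
  also have "\<dots> = L2 (tlift M N (tensor M N) (tp M N) X)"
    by (rule tlift_commute[OF km kn kt kq L2 _ X, symmetric]) simp
  also have "\<dots> = L2 X" using tlift_tp_id[OF km kn X] by simp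
  finally show ?thesis .
qed


lemma coalgebraD:
  assumes "coalgebra M D e"
  shows "kmodule M" "linear_map M (tensor M M) D" "linear_map M kself e"
    "\<And>m. m \<in> mcarrier M \<Longrightarrow>
        tassoc M M M (tlift M M (tensor (tensor M M) M) (\<lambda>x y. tp (tensor M M) M (D x) y) (D m))
        = tlift M M (tensor M (tensor M M)) (\<lambda>x y. tp M (tensor M M) x (D y)) (D m)"
    "\<And>m. m \<in> mcarrier M \<Longrightarrow> tlift M M M (\<lambda>x y. msmult M (e x) y) (D m) = m"
    "\<And>m. m \<in> mcarrier M \<Longrightarrow> tlift M M M (\<lambda>x y. msmult M (e y) x) (D m) = m"
  using assms unfolding coalgebra_def by blast+

lemmas lin_rules = lin_tlift_fun lin_tlift lin_tp1 lin_tp2 lin_id bilinear_mapI kmodule_tensor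
  tp_carrier tlift_closed

lemma tassoc_bil:
  fixes M :: "('k::comm_ring_1, 'a) kmod" and N :: "('k, 'b) kmod" and P :: "('k, 'c) kmod"
  assumes "kmodule M" "kmodule N" "kmodule P"
  shows "bilinear_map (tensor M N) P (tensor M (tensor N P))
     (\<lambda>u z. tlift M N (tensor M (tensor N P)) (\<lambda>x y. tp M (tensor N P) x (tp N P y z)) u)"
  using assms by (intro lin_rules; assumption?)


lemma tassoc_tp:
  fixes M :: "('k::comm_ring_1, 'a) kmod" and N :: "('k, 'b) kmod" and P :: "('k, 'c) kmod"
  assumes km: "kmodule M" and kn: "kmodule N" and kp: "kmodule P"
    and u: "u \<in> mcarrier (tensor M N)" and z: "z \<in> mcarrier P"
  shows "tassoc M N P (tp (tensor M N) P u z) = tlift M N (tensor M (tensor N P)) (\<lambda>x y. tp M (tensor N P) x (tp N P y z)) u"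
  unfolding tassoc_def
  by (rule tlift_tp[OF kmodule_tensor[OF km kn] kp _ tassoc_bil[OF km kn kp] u z]) (simp add: km kn kp)

lemma tassoc_lin:
  fixes M :: "('k::comm_ring_1, 'a) kmod" and N :: "('k, 'b) kmod" and P :: "('k, 'c) kmod"
  assumes km: "kmodule M" and kn: "kmodule N" and kp: "kmodule P"
  shows "linear_map (tensor (tensor M N) P) (tensor M (tensor N P)) (tassoc M N P)"
  unfolding tassoc_def
  by (rule tlift_linear[OF kmodule_tensor[OF km kn] kp _ tassoc_bil[OF km kn kp]]) (simp add: km kn kp)

lemma coassoc_sw:
  fixes M :: "('k::comm_ring_1, 'a) kmod" and P :: "('k, 'p) kmod"
  assumes co: "coalgebra M D e" and kp: "kmodule P" and m: "m \<in> mcarrier M"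
    and f1: "\<And>y z. y \<in> mcarrier M \<Longrightarrow> z \<in> mcarrier M \<Longrightarrow> linear_map M P (\<lambda>x. f x y z)"
    and f2: "\<And>x z. x \<in> mcarrier M \<Longrightarrow> z \<in> mcarrier M \<Longrightarrow> linear_map M P (\<lambda>y. f x y z)"
    and f3: "\<And>x y. x \<in> mcarrier M \<Longrightarrow> y \<in> mcarrier M \<Longrightarrow> linear_map M P (\<lambda>z. f x y z)"
  shows "tlift M M P (\<lambda>x y. tlift M M P (\<lambda>x1 x2. f x1 x2 y) (D x)) (D m)
       = tlift M M P (\<lambda>x y. tlift M M P (\<lambda>y1 y2. f x y1 y2) (D y)) (D m)"
proof -
  note cd = coalgebraD[OF co]
  note km = cd(1) and Dl = cd(2)
  have kmm: "kmodule (tensor M M)" using km by simp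
  have Dc: "D x \<in> mcarrier (tensor M M)" if "x \<in> mcarrier M" for x using linear_mapD(1)[OF Dl that] .
  have fc: "f x y z \<in> mcarrier P" if "x \<in> mcarrier M" "y \<in> mcarrier M" "z \<in> mcarrier M" for x y z
    using linear_mapD(1)[OF f1[OF that(2,3)] that(1)] .
  have fb: "bilinear_map M M P (\<lambda>y z. f x y z)" if "x \<in> mcarrier M" for x
    using that f2 f3 by (intro bilinear_mapI) auto
  define Lf where "Lf = tlift M (tensor M M) P (\<lambda>x Y. tlift M M P (\<lambda>y z. f x y z) Y)"
  have Lbil: "bilinear_map M (tensor M M) P (\<lambda>x Y. tlift M M P (\<lambda>y z. f x y z) Y)"
  proof (rule bilinear_mapI)
    show "linear_map (tensor M M) P (\<lambda>Y. tlift M M P (\<lambda>y z. f x y z) Y)" if "x \<in> mcarrier M" for x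
      using tlift_linear[OF km km kp fb[OF that]] by simp
    show "linear_map M P (\<lambda>x. tlift M M P (\<lambda>y z. f x y z) Y)" if "Y \<in> mcarrier (tensor M M)" for Y
      by (rule lin_tlift_fun[OF km km kp km that f1])
  qed
  have Ll: "linear_map (tensor M (tensor M M)) P Lf"
    unfolding Lf_def by (rule tlift_linear[OF km kmm kp Lbil])
  have Ltp: "Lf (tp M (tensor M M) x (tp M M y z)) = f x y z"
    if "x \<in> mcarrier M" "y \<in> mcarrier M" "z \<in> mcarrier M" for x y z
    unfolding Lf_def using that
    by (simp add: tlift_tp[OF km kmm kp Lbil] tlift_tp[OF km km kp fb])
  have k3: "kmodule (tensor M (tensor M M))" using km by simp
  have k3l: "kmodule (tensor (tensor M M) M)" using km by simp
  have RHS: "Lf (tlift M M (tensor M (tensor M M)) (\<lambda>x y. tp M (tensor M M) x (D y)) (D m))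
     = tlift M M P (\<lambda>x y. tlift M M P (\<lambda>y1 y2. f x y1 y2) (D y)) (D m)"
  proof -
    have "Lf (tlift M M (tensor M (tensor M M)) (\<lambda>x y. tp M (tensor M M) x (D y)) (D m))
      = tlift M M P (\<lambda>x y. Lf (tp M (tensor M M) x (D y))) (D m)"
      by (rule tlift_commute[OF km km k3 kp Ll _ Dc[OF m]]) (simp add: Dc)
    also have "\<dots> = tlift M M P (\<lambda>x y. tlift M M P (\<lambda>y1 y2. f x y1 y2) (D y)) (D m)"
      by (rule tlift_cong[OF km km kp _ _ Dc[OF m]])
         (simp_all add: Dc linear_mapD(1)[OF Ll] Lf_def tlift_tp[OF km kmm kp Lbil] tlift_closed[OF km km kp] fc)
    finally show ?thesis .
  qed
  have LHS: "Lf (tassoc M M M (tlift M M (tensor (tensor M M) M) (\<lambda>x y. tp (tensor M M) M (D x) y) (D m)))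
     = tlift M M P (\<lambda>x y. tlift M M P (\<lambda>x1 x2. f x1 x2 y) (D x)) (D m)"
  proof -
    have "tassoc M M M (tlift M M (tensor (tensor M M) M) (\<lambda>x y. tp (tensor M M) M (D x) y) (D m))
       = tlift M M (tensor M (tensor M M)) (\<lambda>x y. tassoc M M M (tp (tensor M M) M (D x) y)) (D m)"
      by (rule tlift_commute[OF km km k3l k3 tassoc_lin[OF km km km] _ Dc[OF m]]) (simp add: Dc)
    also have "\<dots> = tlift M M (tensor M (tensor M M)) (\<lambda>x y.
          tlift M M (tensor M (tensor M M)) (\<lambda>a b. tp M (tensor M M) a (tp M M b y)) (D x)) (D m)"
      by (rule tlift_cong[OF km km k3 _ _ Dc[OF m]])
         (simp_all add: km Dc tassoc_tp[OF km km km] linear_mapD(1)[OF tassoc_lin[OF km km km]])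
    finally have "Lf (tassoc M M M (tlift M M (tensor (tensor M M) M) (\<lambda>x y. tp (tensor M M) M (D x) y) (D m)))
       = Lf (tlift M M (tensor M (tensor M M)) (\<lambda>x y.
          tlift M M (tensor M (tensor M M)) (\<lambda>a b. tp M (tensor M M) a (tp M M b y)) (D x)) (D m))" by simp
    also have "\<dots> = tlift M M P (\<lambda>x y. Lf (
          tlift M M (tensor M (tensor M M)) (\<lambda>a b. tp M (tensor M M) a (tp M M b y)) (D x))) (D m)"
      by (rule tlift_commute[OF km km k3 kp Ll _ Dc[OF m]]) (simp add: Dc km)
    also have "\<dots> = tlift M M P (\<lambda>x y. tlift M M P (\<lambda>a b. Lf (tp M (tensor M M) a (tp M M b y))) (D x)) (D m)"
      by (rule tlift_cong[OF km km kp _ _ Dc[OF m]])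
         (simp_all add: Dc km kp linear_mapD(1)[OF Ll] tlift_commute[OF km km k3 kp Ll])
    also have "\<dots> = tlift M M P (\<lambda>x y. tlift M M P (\<lambda>x1 x2. f x1 x2 y) (D x)) (D m)"
      by (rule tlift_cong[OF km km kp _ _ Dc[OF m]])
         (auto simp: Dc km fc Ltp intro!: tlift_cong[OF km km kp] tlift_closed[OF km km kp])
    finally show ?thesis .
  qed
  show ?thesis using LHS RHS cd(4)[OF m] by simp
qed


lemma counit_sw_l:
  fixes M :: "('k::comm_ring_1, 'a) kmod" and P :: "('k, 'p) kmod"
  assumes co: "coalgebra M D e" and kp: "kmodule P" and F: "linear_map M P F" and m: "m \<in> mcarrier M"
  shows "tlift M M P (\<lambda>x y. msmult P (e x) (F y)) (D m) = F m"
proof -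
  note cd = coalgebraD[OF co]
  note km = cd(1) and Dl = cd(2) and el = cd(3)
  have Dc: "D m \<in> mcarrier (tensor M M)" using linear_mapD(1)[OF Dl m] .
  have "F m = F (tlift M M M (\<lambda>x y. msmult M (e x) y) (D m))" using cd(5)[OF m] by simp
  also have "\<dots> = tlift M M P (\<lambda>x y. F (msmult M (e x) y)) (D m)"
    by (rule tlift_commute[OF km km km kp F _ Dc]) (simp add: km)
  also have "\<dots> = tlift M M P (\<lambda>x y. msmult P (e x) (F y)) (D m)"
    by (rule tlift_cong[OF km km kp _ _ Dc]) (simp_all add: km kp linear_mapD[OF F])
  finally show ?thesis by simp
qed

lemma counit_sw_r:
  fixes M :: "('k::comm_ring_1, 'a) kmod" and P :: "('k, 'p) kmod"
  assumes co: "coalgebra M D e" and kp: "kmodule P" and F: "linear_map M P F" and m: "m \<in> mcarrier M"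
  shows "tlift M M P (\<lambda>x y. msmult P (e y) (F x)) (D m) = F m"
proof -
  note cd = coalgebraD[OF co]
  note km = cd(1) and Dl = cd(2) and el = cd(3)
  have Dc: "D m \<in> mcarrier (tensor M M)" using linear_mapD(1)[OF Dl m] .
  have "F m = F (tlift M M M (\<lambda>x y. msmult M (e y) x) (D m))" using cd(6)[OF m] by simp
  also have "\<dots> = tlift M M P (\<lambda>x y. F (msmult M (e y) x)) (D m)"
    by (rule tlift_commute[OF km km km kp F _ Dc]) (simp add: km)
  also have "\<dots> = tlift M M P (\<lambda>x y. msmult P (e y) (F x)) (D m)"
    by (rule tlift_cong[OF km km kp _ _ Dc]) (simp_all add: km kp linear_mapD[OF F])
  finally show ?thesis by simp
qed


locale hopf =
  fixes H :: "('k::comm_ring_1, 'h) kmod" and mult :: "'h \<Rightarrow> 'h \<Rightarrow> 'h" and one :: 'h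
    and D :: "'h \<Rightarrow> ('k, 'h, 'h) tens" and e :: "'h \<Rightarrow> 'k" and S :: "'h \<Rightarrow> 'h"
  assumes hopf: "hopf_algebra H mult one D e S"
begin

lemma bialg: "bialgebra H mult one D e" using hopf unfolding hopf_algebra_def by blast
lemma alg: "kalgebra H mult one" using bialg unfolding bialgebra_def by blast
lemma coH: "coalgebra H D e" using bialg unfolding bialgebra_def by blast

lemma kH[simp]: "kmodule H" using alg unfolding kalgebra_def by blast
lemma mult_bil: "bilinear_map H H H mult" using alg unfolding kalgebra_def by blast
lemma one_closed[simp]: "one \<in> mcarrier H" using alg unfolding kalgebra_def by blast
lemma mult_assoc: "x \<in> mcarrier H \<Longrightarrow> y \<in> mcarrier H \<Longrightarrow> z \<in> mcarrier H \<Longrightarrow>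
    mult (mult x y) z = mult x (mult y z)"
  using alg unfolding kalgebra_def by blast
lemma mult_one_l[simp]: "x \<in> mcarrier H \<Longrightarrow> mult one x = x"
  using alg unfolding kalgebra_def by blast
lemma mult_one_r[simp]: "x \<in> mcarrier H \<Longrightarrow> mult x one = x"
  using alg unfolding kalgebra_def by blast
lemma D_lin: "linear_map H (tensor H H) D" using coalgebraD(2)[OF coH] .
lemma e_lin: "linear_map H kself e" using coalgebraD(3)[OF coH] .
lemma D_mult: "x \<in> mcarrier H \<Longrightarrow> y \<in> mcarrier H \<Longrightarrow>
   D (mult x y) = tlift H H (tensor H H) (\<lambda>a b. tlift H H (tensor H H) (\<lambda>c d. tp H H (mult a c) (mult b d)) (D y)) (D x)"
  using bialg unfolding bialgebra_def tensor_mult_def by blast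
lemma D_one: "D one = tp H H one one" using bialg unfolding bialgebra_def by blast
lemma e_mult: "x \<in> mcarrier H \<Longrightarrow> y \<in> mcarrier H \<Longrightarrow> e (mult x y) = e x * e y"
  using bialg unfolding bialgebra_def by blast
lemma e_one[simp]: "e one = 1" using bialg unfolding bialgebra_def by blast
lemma S_lin: "linear_map H H S" using hopf unfolding hopf_algebra_def by blast
lemma antipode_l: "h \<in> mcarrier H \<Longrightarrow> tlift H H H (\<lambda>x y. mult (S x) y) (D h) = msmult H (e h) one"
  using hopf unfolding hopf_algebra_def by blast
lemma antipode_r: "h \<in> mcarrier H \<Longrightarrow> tlift H H H (\<lambda>x y. mult x (S y)) (D h) = msmult H (e h) one"
  using hopf unfolding hopf_algebra_def by blast

lemma mult_closed[simp]: "x \<in> mcarrier H \<Longrightarrow> y \<in> mcarrier H \<Longrightarrow> mult x y \<in> mcarrier H"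
  using bilinear_mapD(1)[OF mult_bil] .
lemma S_closed[simp]: "x \<in> mcarrier H \<Longrightarrow> S x \<in> mcarrier H"
  using linear_mapD(1)[OF S_lin] .
lemma D_closed[simp]: "x \<in> mcarrier H \<Longrightarrow> D x \<in> mcarrier (tensor H H)"
  using linear_mapD(1)[OF D_lin] .

lemma mult_add1: "x \<in> mcarrier H \<Longrightarrow> x' \<in> mcarrier H \<Longrightarrow> y \<in> mcarrier H \<Longrightarrow> mult (madd H x x') y = madd H (mult x y) (mult x' y)"
  using bilinear_mapD(2)[OF mult_bil] .
lemma mult_add2: "x \<in> mcarrier H \<Longrightarrow> y \<in> mcarrier H \<Longrightarrow> y' \<in> mcarrier H \<Longrightarrow> mult x (madd H y y') = madd H (mult x y) (mult x y')"
  using bilinear_mapD(3)[OF mult_bil] .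
lemma mult_smult1: "x \<in> mcarrier H \<Longrightarrow> y \<in> mcarrier H \<Longrightarrow> mult (msmult H r x) y = msmult H r (mult x y)"
  using bilinear_mapD(4)[OF mult_bil] .
lemma mult_smult2: "x \<in> mcarrier H \<Longrightarrow> y \<in> mcarrier H \<Longrightarrow> mult x (msmult H r y) = msmult H r (mult x y)"
  using bilinear_mapD(5)[OF mult_bil] .
lemma S_smult: "x \<in> mcarrier H \<Longrightarrow> S (msmult H r x) = msmult H r (S x)"
  using linear_mapD(3)[OF S_lin] .
lemma D_smult: "x \<in> mcarrier H \<Longrightarrow> D (msmult H r x) = msmult (tensor H H) r (D x)"
  using linear_mapD(3)[OF D_lin] .

lemma lin_mult1: "linear_map Q H g \<Longrightarrow> b \<in> mcarrier H \<Longrightarrow> linear_map Q H (\<lambda>x. mult (g x) b)"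
  by (rule lin_bil1[OF mult_bil])
lemma lin_mult2: "a \<in> mcarrier H \<Longrightarrow> linear_map Q H g \<Longrightarrow> linear_map Q H (\<lambda>x. mult a (g x))"
  by (rule lin_bil2[OF mult_bil])
lemma lin_S: "linear_map Q H g \<Longrightarrow> linear_map Q H (\<lambda>x. S (g x))"
  by (rule lin_comp[OF S_lin])
lemma lin_D: "linear_map Q H g \<Longrightarrow> linear_map Q (tensor H H) (\<lambda>x. D (g x))"
  by (rule lin_comp[OF D_lin])
lemma lin_e: "linear_map Q H g \<Longrightarrow> linear_map Q kself (\<lambda>x. e (g x))"
  by (rule lin_comp[OF e_lin])

lemma lin_multL: "a \<in> mcarrier H \<Longrightarrow> linear_map H H (mult a)"
  using bilinear_map_lin2[OF mult_bil] by simp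

lemmas hlin = lin_tlift_fun lin_tlift lin_tp1 lin_tp2 lin_mult1 lin_mult2 lin_multL S_lin D_lin e_lin lin_S lin_D lin_e
   lin_smult_r lin_smult_l lin_kmul_r lin_kmul_l lin_id bilinear_mapI kmodule_tensor kH kmodule_kself
   tp_carrier tlift_closed mult_closed S_closed D_closed one_closed km_smult

lemma sw_coassoc:
  assumes kp: "kmodule P" and m: "m \<in> mcarrier H"
    and f1: "\<And>y z. y \<in> mcarrier H \<Longrightarrow> z \<in> mcarrier H \<Longrightarrow> linear_map H P (\<lambda>x. f x y z)"
    and f2: "\<And>x z. x \<in> mcarrier H \<Longrightarrow> z \<in> mcarrier H \<Longrightarrow> linear_map H P (\<lambda>y. f x y z)"
    and f3: "\<And>x y. x \<in> mcarrier H \<Longrightarrow> y \<in> mcarrier H \<Longrightarrow> linear_map H P (\<lambda>z. f x y z)"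
  shows "tlift H H P (\<lambda>x y. tlift H H P (\<lambda>x1 x2. f x1 x2 y) (D x)) (D m)
       = tlift H H P (\<lambda>x y. tlift H H P (\<lambda>y1 y2. f x y1 y2) (D y)) (D m)"
  by (rule coassoc_sw[OF coH kp m f1 f2 f3])

lemma sw_counit_l:
  assumes "kmodule P" "linear_map H P F" "m \<in> mcarrier H"
  shows "tlift H H P (\<lambda>x y. msmult P (e x) (F y)) (D m) = F m"
  by (rule counit_sw_l[OF coH assms])

lemma sw_counit_r:
  assumes "kmodule P" "linear_map H P F" "m \<in> mcarrier H"
  shows "tlift H H P (\<lambda>x y. msmult P (e y) (F x)) (D m) = F m"
  by (rule counit_sw_r[OF coH assms])

lemma sw_antipode_l:
  assumes kp: "kmodule P" and F: "linear_map H P F" and m: "m \<in> mcarrier H"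
  shows "tlift H H P (\<lambda>x y. F (mult (S x) y)) (D m) = msmult P (e m) (F one)"
proof -
  have "tlift H H P (\<lambda>x y. F (mult (S x) y)) (D m) = F (tlift H H H (\<lambda>x y. mult (S x) y) (D m))"
    by (rule tlift_commute[OF kH kH kH kp F, symmetric]) (simp_all add: m)
  also have "\<dots> = msmult P (e m) (F one)" using m by (simp add: antipode_l linear_mapD(3)[OF F])
  finally show ?thesis .
qed

lemma sw_antipode_r:
  assumes kp: "kmodule P" and F: "linear_map H P F" and m: "m \<in> mcarrier H"
  shows "tlift H H P (\<lambda>x y. F (mult x (S y))) (D m) = msmult P (e m) (F one)"
proof -
  have "tlift H H P (\<lambda>x y. F (mult x (S y))) (D m) = F (tlift H H H (\<lambda>x y. mult x (S y)) (D m))"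
    by (rule tlift_commute[OF kH kH kH kp F, symmetric]) (simp_all add: m)
  also have "\<dots> = msmult P (e m) (F one)" using m by (simp add: antipode_r linear_mapD(3)[OF F])
  finally show ?thesis .
qed

lemma S_one[simp]: "S one = one"
proof -
  have "tlift H H H (\<lambda>x y. mult (S x) y) (D one) = S one"
    by (simp add: D_one tlift_tp[OF kH kH kH] mult_bil bilinear_mapI hlin)
  then show ?thesis using antipode_l[OF one_closed] by simp
qed

lemma e_S[simp]: "x \<in> mcarrier H \<Longrightarrow> e (S x) = e x"
proof -
  assume x: "x \<in> mcarrier H"
  have "e (S x) = tlift H H kself (\<lambda>u v. msmult kself (e v) (e (S u))) (D x)"
    by (rule sw_counit_r[symmetric]) (simp_all add: x lin_e[OF lin_S[OF lin_id]])
  also have "\<dots> = tlift H H kself (\<lambda>u v. e (mult (S u) v)) (D x)"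
    by (rule tlift_cong) (simp_all add: x e_mult)
  also have "\<dots> = e x"
    using sw_antipode_l[OF kmodule_kself e_lin x] by simp
  finally show ?thesis .
qed



lemma sw_mult:
  assumes kp: "kmodule P" and F: "bilinear_map H H P F" and x: "x \<in> mcarrier H" and y: "y \<in> mcarrier H"
  shows "tlift H H P F (D (mult x y)) =
    tlift H H P (\<lambda>a b. tlift H H P (\<lambda>c d. F (mult a c) (mult b d)) (D y)) (D x)"
proof -
  note L = tlift_linear[OF kH kH kp F]
  have Fc: "F a b \<in> mcarrier P" if "a \<in> mcarrier H" "b \<in> mcarrier H" for a b
    using bilinear_mapD(1)[OF F that] .
  have "tlift H H P F (D (mult x y)) =
     tlift H H P (\<lambda>a b. tlift H H P F (tlift H H (tensor H H) (\<lambda>c d. tp H H (mult a c) (mult b d)) (D y))) (D x)"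
    unfolding D_mult[OF x y]
    by (rule tlift_commute[OF kH kH _ kp L]) (simp_all add: x y)
  also have "\<dots> = tlift H H P (\<lambda>a b. tlift H H P (\<lambda>c d. tlift H H P F (tp H H (mult a c) (mult b d))) (D y)) (D x)"
    by (rule tlift_cong) (simp_all add: x y Fc kp linear_mapD(1)[OF L] tlift_commute[OF kH kH _ kp L] tlift_tp[OF kH kH kp F])
  also have "\<dots> = tlift H H P (\<lambda>a b. tlift H H P (\<lambda>c d. F (mult a c) (mult b d)) (D y)) (D x)"
    by (rule tlift_cong) (simp_all add: x y Fc kp linear_mapD(1)[OF L] tlift_tp[OF kH kH kp F],
        rule tlift_cong, simp_all add: y Fc kp linear_mapD(1)[OF L] tlift_tp[OF kH kH kp F])
  finally show ?thesis .
qed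

lemma S_antimult:
  assumes x: "x \<in> mcarrier H" and y: "y \<in> mcarrier H"
  shows "S (mult x y) = mult (S y) (S x)"
proof -
  let ?T = "tlift H H H"
  define G where "G = (\<lambda>x0 a b y0 c d. mult (mult (S y0) (S x0)) (mult (mult a c) (S (mult b d))))"
  have Gc: "G x0 a b y0 c d \<in> mcarrier H" if "x0 \<in> mcarrier H" "a \<in> mcarrier H" "b \<in> mcarrier H"
    "y0 \<in> mcarrier H" "c \<in> mcarrier H" "d \<in> mcarrier H" for x0 a b y0 c d
    using that by (simp add: G_def)
  have "mult (S y) (S x) = ?T (\<lambda>x0 X1. msmult H (e X1) (mult (S y) (S x0))) (D x)"
    by (rule sw_counit_r[symmetric]) (auto simp: x y intro!: hlin)
  also have "\<dots> = ?T (\<lambda>x0 X1. msmult H (e X1) (?T (\<lambda>y0 Y1. msmult H (e Y1) (mult (S y0) (S x0))) (D y))) (D x)"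
  proof (rule tlift_cong)
    fix x0 X1 assume h: "x0 \<in> mcarrier H" "X1 \<in> mcarrier H"
    have "linear_map H H (\<lambda>u. mult (S u) (S x0))" by (intro hlin; simp add: h)
    then show "msmult H (e X1) (mult (S y) (S x0)) = msmult H (e X1) (?T (\<lambda>y0 Y1. msmult H (e Y1) (mult (S y0) (S x0))) (D y))"
      using sw_counit_r[OF kH _ y, where F="\<lambda>u. mult (S u) (S x0)"] by simp
  qed (simp_all add: x y)
  also have "\<dots> = ?T (\<lambda>x0 X1. ?T (\<lambda>y0 Y1. msmult H (e (mult X1 Y1)) (mult (S y0) (S x0))) (D y)) (D x)"
  proof (rule tlift_cong)
    fix x0 X1 assume h: "x0 \<in> mcarrier H" "X1 \<in> mcarrier H"
    have "msmult H (e X1) (?T (\<lambda>y0 Y1. msmult H (e Y1) (mult (S y0) (S x0))) (D y))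
        = ?T (\<lambda>y0 Y1. msmult H (e X1) (msmult H (e Y1) (mult (S y0) (S x0)))) (D y)"
      by (rule tlift_smult_fun[symmetric]) (simp_all add: h y)
    also have "\<dots> = ?T (\<lambda>y0 Y1. msmult H (e (mult X1 Y1)) (mult (S y0) (S x0))) (D y)"
      by (rule tlift_cong) (simp_all add: h y e_mult km_smult_smult)
    finally show "msmult H (e X1) (?T (\<lambda>y0 Y1. msmult H (e Y1) (mult (S y0) (S x0))) (D y))
        = ?T (\<lambda>y0 Y1. msmult H (e (mult X1 Y1)) (mult (S y0) (S x0))) (D y)" .
  qed (simp_all add: x y)
  also have "\<dots> = ?T (\<lambda>x0 X1. ?T (\<lambda>y0 Y1. ?T (\<lambda>a b. ?T (\<lambda>c d. G x0 a b y0 c d) (D Y1)) (D X1)) (D y)) (D x)"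
  proof (rule tlift_cong)
    fix x0 X1 assume h: "x0 \<in> mcarrier H" "X1 \<in> mcarrier H"
    show "?T (\<lambda>y0 Y1. msmult H (e (mult X1 Y1)) (mult (S y0) (S x0))) (D y) =
          ?T (\<lambda>y0 Y1. ?T (\<lambda>a b. ?T (\<lambda>c d. G x0 a b y0 c d) (D Y1)) (D X1)) (D y)"
    proof (rule tlift_cong)
      fix y0 Y1 assume h2: "y0 \<in> mcarrier H" "Y1 \<in> mcarrier H"
      let ?w = "mult (S y0) (S x0)"
      have wc: "?w \<in> mcarrier H" using h h2 by simp
      have lw: "linear_map H H (mult ?w)" by (intro hlin; simp add: h h2)
      have "msmult H (e (mult X1 Y1)) ?w = msmult H (e (mult X1 Y1)) (mult ?w one)"
        using wc by simp
      also have "\<dots> = ?T (\<lambda>p q. mult ?w (mult p (S q))) (D (mult X1 Y1))"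
        using sw_antipode_r[OF kH lw, of "mult X1 Y1"] h h2 by simp
      also have "\<dots> = ?T (\<lambda>a b. ?T (\<lambda>c d. mult ?w (mult (mult a c) (S (mult b d)))) (D Y1)) (D X1)"
        by (rule sw_mult) (intro hlin | simp add: h h2 wc)+
      also have "\<dots> = ?T (\<lambda>a b. ?T (\<lambda>c d. G x0 a b y0 c d) (D Y1)) (D X1)"
        by (simp add: G_def)
      finally show "msmult H (e (mult X1 Y1)) ?w = ?T (\<lambda>a b. ?T (\<lambda>c d. G x0 a b y0 c d) (D Y1)) (D X1)" .
    qed (simp_all add: h y Gc)
  qed (simp_all add: x y Gc)
  also have "\<dots> = ?T (\<lambda>x0 X1. ?T (\<lambda>a b. ?T (\<lambda>y0 Y1. ?T (\<lambda>c d. G x0 a b y0 c d) (D Y1)) (D y)) (D X1)) (D x)"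
    by (rule tlift_cong) (simp_all add: x y Gc, rule tlift_swap[OF kH kH kH kH kH], simp_all add: Gc y)
  also have "\<dots> = ?T (\<lambda>X0 b. ?T (\<lambda>x0 a. ?T (\<lambda>y0 Y1. ?T (\<lambda>c d. G x0 a b y0 c d) (D Y1)) (D y)) (D X0)) (D x)"
    unfolding G_def by (rule sw_coassoc[symmetric]) (intro hlin | simp add: x y)+
  also have "\<dots> = ?T (\<lambda>X0 b. msmult H (e X0) (?T (\<lambda>y0 Y1. ?T (\<lambda>c d. mult (S y0) (mult c (S (mult b d)))) (D Y1)) (D y))) (D x)"
  proof (rule tlift_cong)
    fix X0 b assume h: "X0 \<in> mcarrier H" "b \<in> mcarrier H"
    let ?F = "\<lambda>w. ?T (\<lambda>y0 Y1. ?T (\<lambda>c d. mult (S y0) (mult w (mult c (S (mult b d))))) (D Y1)) (D y)"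
    have lF: "linear_map H H ?F" by (intro hlin | simp add: h y)+
    have "?T (\<lambda>x0 a. ?T (\<lambda>y0 Y1. ?T (\<lambda>c d. G x0 a b y0 c d) (D Y1)) (D y)) (D X0)
        = ?T (\<lambda>x0 a. ?F (mult (S x0) a)) (D X0)"
      by (intro tlift_cong) (simp_all add: h y G_def mult_assoc)
    also have "\<dots> = msmult H (e X0) (?F one)"
      by (rule sw_antipode_l[OF kH lF h(1)])
    also have "?F one = ?T (\<lambda>y0 Y1. ?T (\<lambda>c d. mult (S y0) (mult c (S (mult b d)))) (D Y1)) (D y)"
      by (intro tlift_cong) (simp_all add: h y)
    finally show "?T (\<lambda>x0 a. ?T (\<lambda>y0 Y1. ?T (\<lambda>c d. G x0 a b y0 c d) (D Y1)) (D y)) (D X0) =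
      msmult H (e X0) (?T (\<lambda>y0 Y1. ?T (\<lambda>c d. mult (S y0) (mult c (S (mult b d)))) (D Y1)) (D y))" .
  qed (simp_all add: x y Gc)
  also have "\<dots> = ?T (\<lambda>y0 Y1. ?T (\<lambda>c d. mult (S y0) (mult c (S (mult x d)))) (D Y1)) (D y)"
    by (rule sw_counit_l[where F="\<lambda>b. ?T (\<lambda>y0 Y1. ?T (\<lambda>c d. mult (S y0) (mult c (S (mult b d)))) (D Y1)) (D y)"])
       (intro hlin | simp add: x y)+
  also have "\<dots> = ?T (\<lambda>Y0 d. ?T (\<lambda>y0 c. mult (S y0) (mult c (S (mult x d)))) (D Y0)) (D y)"
    by (rule sw_coassoc[symmetric]) (intro hlin | simp add: x y)+
  also have "\<dots> = ?T (\<lambda>Y0 d. msmult H (e Y0) (S (mult x d))) (D y)"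
  proof (rule tlift_cong)
    fix Y0 d assume h: "Y0 \<in> mcarrier H" "d \<in> mcarrier H"
    have lF: "linear_map H H (\<lambda>w. mult w (S (mult x d)))" by (intro hlin | simp add: h x)+
    have "?T (\<lambda>y0 c. mult (S y0) (mult c (S (mult x d)))) (D Y0) = ?T (\<lambda>y0 c. mult (mult (S y0) c) (S (mult x d))) (D Y0)"
      by (intro tlift_cong) (simp_all add: h x mult_assoc)
    also have "\<dots> = msmult H (e Y0) (mult one (S (mult x d)))"
      by (rule sw_antipode_l[OF kH lF h(1)])
    finally show "?T (\<lambda>y0 c. mult (S y0) (mult c (S (mult x d)))) (D Y0) = msmult H (e Y0) (S (mult x d))"
      using h x by simp
  qed (simp_all add: x y)
  also have "\<dots> = S (mult x y)"
    by (rule sw_counit_l) (intro hlin | simp add: x y)+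
  finally show ?thesis by simp
qed


lemma unit_expand:
  assumes p: "p \<in> mcarrier H" and q: "q \<in> mcarrier H" and w: "w \<in> mcarrier H"
  shows "msmult (tensor H H) (e w) (tp H H p q) =
    tlift H H (tensor H H) (\<lambda>a b. tlift H H (tensor H H) (\<lambda>a0 a1. tlift H H (tensor H H)
      (\<lambda>c d. tp H H (mult p (mult a0 c)) (mult q (mult a1 d))) (D (S b))) (D a)) (D w)"
proof -
  let ?T2 = "tlift H H (tensor H H)"
  define L where "L = ?T2 (\<lambda>c d. tp H H (mult p c) (mult q d))"
  have Lb: "bilinear_map H H (tensor H H) (\<lambda>c d. tp H H (mult p c) (mult q d))"
    by (intro hlin | simp add: p q)+
  have Ll: "linear_map (tensor H H) (tensor H H) L" unfolding L_def
    by (rule tlift_linear[OF kH kH _ Lb]) simp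
  have Ltp: "L (tp H H c d) = tp H H (mult p c) (mult q d)" if "c \<in> mcarrier H" "d \<in> mcarrier H" for c d
    unfolding L_def by (rule tlift_tp[OF kH kH _ Lb that]) simp
  have kt: "kmodule (tensor H H)" by simp
  have "msmult (tensor H H) (e w) (tp H H p q) = msmult (tensor H H) (e w) (L (D one))"
    by (simp add: D_one Ltp p q)
  also have "\<dots> = L (D (msmult H (e w) one))"
    by (simp add: linear_mapD(3)[OF Ll] D_smult)
  also have "\<dots> = L (D (tlift H H H (\<lambda>a b. mult a (S b)) (D w)))"
    by (simp add: antipode_r w)
  also have "\<dots> = L (?T2 (\<lambda>a b. D (mult a (S b))) (D w))"
    by (subst tlift_commute[OF kH kH kH kt D_lin]) (simp_all add: w)
  also have "\<dots> = ?T2 (\<lambda>a b. L (D (mult a (S b)))) (D w)"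
    by (rule tlift_commute[OF kH kH kt kt Ll]) (simp_all add: w)
  also have "\<dots> = ?T2 (\<lambda>a b. ?T2 (\<lambda>a0 a1. ?T2 (\<lambda>c d. tp H H (mult p (mult a0 c)) (mult q (mult a1 d))) (D (S b))) (D a)) (D w)"
  proof (rule tlift_cong)
    fix a b assume h: "a \<in> mcarrier H" "b \<in> mcarrier H"
    have "L (D (mult a (S b))) = L (?T2 (\<lambda>a0 a1. ?T2 (\<lambda>c d. tp H H (mult a0 c) (mult a1 d)) (D (S b))) (D a))"
      by (simp add: D_mult h)
    also have "\<dots> = ?T2 (\<lambda>a0 a1. L (?T2 (\<lambda>c d. tp H H (mult a0 c) (mult a1 d)) (D (S b)))) (D a)"
      by (rule tlift_commute[OF kH kH kt kt Ll]) (simp_all add: h)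
    also have "\<dots> = ?T2 (\<lambda>a0 a1. ?T2 (\<lambda>c d. L (tp H H (mult a0 c) (mult a1 d))) (D (S b))) (D a)"
      by (rule tlift_cong) (simp_all add: h tlift_commute[OF kH kH kt kt Ll] linear_mapD(1)[OF Ll])
    also have "\<dots> = ?T2 (\<lambda>a0 a1. ?T2 (\<lambda>c d. tp H H (mult p (mult a0 c)) (mult q (mult a1 d))) (D (S b))) (D a)"
      by (intro tlift_cong) (simp_all add: h Ltp linear_mapD(1)[OF Ll] p q)
    finally show "L (D (mult a (S b))) = ?T2 (\<lambda>a0 a1. ?T2 (\<lambda>c d. tp H H (mult p (mult a0 c)) (mult q (mult a1 d))) (D (S b))) (D a)" .
  qed (simp_all add: w p q linear_mapD(1)[OF Ll])
  finally show ?thesis .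
qed


lemma S_anticomult:
  assumes z: "z \<in> mcarrier H"
  shows "D (S z) = tlift H H (tensor H H) (\<lambda>u v. tp H H (S v) (S u)) (D z)"
proof -
  let ?T2 = "tlift H H (tensor H H)"
  have kt: "kmodule (tensor H H)" by simp
  define K where "K = (\<lambda>u v0 a0 a1 b. ?T2 (\<lambda>c d. tp H H (mult (S v0) (mult a0 c)) (mult (S u) (mult a1 d))) (D (S b)))"
  have Kc: "K u v0 a0 a1 b \<in> mcarrier (tensor H H)" if "u \<in> mcarrier H" "v0 \<in> mcarrier H" "a0 \<in> mcarrier H"
     "a1 \<in> mcarrier H" "b \<in> mcarrier H" for u v0 a0 a1 b
    unfolding K_def using that by simp
  have "?T2 (\<lambda>u v. tp H H (S v) (S u)) (D z) = ?T2 (\<lambda>u v. ?T2 (\<lambda>v0 v1. msmult (tensor H H) (e v1) (tp H H (S v0) (S u))) (D v)) (D z)"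
  proof (rule tlift_cong)
    fix u v assume h: "u \<in> mcarrier H" "v \<in> mcarrier H"
    have "linear_map H (tensor H H) (\<lambda>w. tp H H (S w) (S u))" by (intro hlin | simp add: h)+
    then show "tp H H (S v) (S u) = ?T2 (\<lambda>v0 v1. msmult (tensor H H) (e v1) (tp H H (S v0) (S u))) (D v)"
      using sw_counit_r[OF kt _ h(2), where F="\<lambda>w. tp H H (S w) (S u)"] by simp
  qed (simp_all add: z)
  also have "\<dots> = ?T2 (\<lambda>u v. ?T2 (\<lambda>v0 v1. ?T2 (\<lambda>a b. ?T2 (\<lambda>a0 a1. K u v0 a0 a1 b) (D a)) (D v1)) (D v)) (D z)"
    unfolding K_def by (intro tlift_cong) (simp_all add: z unit_expand)
  also have "\<dots> = ?T2 (\<lambda>u v. ?T2 (\<lambda>v0 v1. ?T2 (\<lambda>a0 B. ?T2 (\<lambda>a1 b. K u v0 a0 a1 b) (D B)) (D v1)) (D v)) (D z)"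
  proof (rule tlift_cong)
    fix u v assume h: "u \<in> mcarrier H" "v \<in> mcarrier H"
    show "?T2 (\<lambda>v0 v1. ?T2 (\<lambda>a b. ?T2 (\<lambda>a0 a1. K u v0 a0 a1 b) (D a)) (D v1)) (D v) =
          ?T2 (\<lambda>v0 v1. ?T2 (\<lambda>a0 B. ?T2 (\<lambda>a1 b. K u v0 a0 a1 b) (D B)) (D v1)) (D v)"
    proof (rule tlift_cong)
      fix v0 v1 assume h2: "v0 \<in> mcarrier H" "v1 \<in> mcarrier H"
      show "?T2 (\<lambda>a b. ?T2 (\<lambda>a0 a1. K u v0 a0 a1 b) (D a)) (D v1) = ?T2 (\<lambda>a0 B. ?T2 (\<lambda>a1 b. K u v0 a0 a1 b) (D B)) (D v1)"
        unfolding K_def by (rule sw_coassoc) (intro hlin | simp add: h h2)+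
    qed (simp_all add: h Kc)
  qed (simp_all add: z Kc)
  also have "\<dots> = ?T2 (\<lambda>u v. ?T2 (\<lambda>a1 b. ?T2 (\<lambda>c d. tp H H c (mult (S u) (mult a1 d))) (D (S b))) (D v)) (D z)"
  proof (rule tlift_cong)
    fix u v assume h: "u \<in> mcarrier H" "v \<in> mcarrier H"
    let ?F = "\<lambda>B w. ?T2 (\<lambda>a1 b. ?T2 (\<lambda>c d. tp H H (mult w c) (mult (S u) (mult a1 d))) (D (S b))) (D B)"
    have "?T2 (\<lambda>v0 v1. ?T2 (\<lambda>a0 B. ?T2 (\<lambda>a1 b. K u v0 a0 a1 b) (D B)) (D v1)) (D v)
       = ?T2 (\<lambda>W B. ?T2 (\<lambda>v0 a0. ?T2 (\<lambda>a1 b. K u v0 a0 a1 b) (D B)) (D W)) (D v)"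
      unfolding K_def by (rule sw_coassoc[symmetric]) (intro hlin | simp add: h)+
    also have "\<dots> = ?T2 (\<lambda>W B. msmult (tensor H H) (e W) (?F B one)) (D v)"
    proof (rule tlift_cong)
      fix W B assume h2: "W \<in> mcarrier H" "B \<in> mcarrier H"
      have lF: "linear_map H (tensor H H) (?F B)" by (intro hlin | simp add: h h2)+
      have "?T2 (\<lambda>v0 a0. ?T2 (\<lambda>a1 b. K u v0 a0 a1 b) (D B)) (D W) = ?T2 (\<lambda>v0 a0. ?F B (mult (S v0) a0)) (D W)"
        unfolding K_def by (intro tlift_cong) (simp_all add: h h2 mult_assoc)
      also have "\<dots> = msmult (tensor H H) (e W) (?F B one)"
        by (rule sw_antipode_l[OF kt lF h2(1)])
      finally show "?T2 (\<lambda>v0 a0. ?T2 (\<lambda>a1 b. K u v0 a0 a1 b) (D B)) (D W) = msmult (tensor H H) (e W) (?F B one)" .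
    qed (simp_all add: h Kc)
    also have "\<dots> = ?F v one"
      by (rule sw_counit_l) (intro hlin | simp add: h)+
    also have "\<dots> = ?T2 (\<lambda>a1 b. ?T2 (\<lambda>c d. tp H H c (mult (S u) (mult a1 d))) (D (S b))) (D v)"
      by (intro tlift_cong) (simp_all add: h)
    finally show "?T2 (\<lambda>v0 v1. ?T2 (\<lambda>a0 B. ?T2 (\<lambda>a1 b. K u v0 a0 a1 b) (D B)) (D v1)) (D v) =
       ?T2 (\<lambda>a1 b. ?T2 (\<lambda>c d. tp H H c (mult (S u) (mult a1 d))) (D (S b))) (D v)" .
  qed (simp_all add: z Kc)
  also have "\<dots> = ?T2 (\<lambda>U b. ?T2 (\<lambda>u a1. ?T2 (\<lambda>c d. tp H H c (mult (S u) (mult a1 d))) (D (S b))) (D U)) (D z)"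
    by (rule sw_coassoc[symmetric]) (intro hlin | simp add: z)+
  also have "\<dots> = ?T2 (\<lambda>U b. msmult (tensor H H) (e U) (D (S b))) (D z)"
  proof (rule tlift_cong)
    fix U b assume h: "U \<in> mcarrier H" "b \<in> mcarrier H"
    let ?F = "\<lambda>w. ?T2 (\<lambda>c d. tp H H c (mult w d)) (D (S b))"
    have lF: "linear_map H (tensor H H) ?F" by (intro hlin | simp add: h)+
    have "?T2 (\<lambda>u a1. ?T2 (\<lambda>c d. tp H H c (mult (S u) (mult a1 d))) (D (S b))) (D U) = ?T2 (\<lambda>u a1. ?F (mult (S u) a1)) (D U)"
      by (intro tlift_cong) (simp_all add: h mult_assoc)
    also have "\<dots> = msmult (tensor H H) (e U) (?F one)"
      by (rule sw_antipode_l[OF kt lF h(1)])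
    also have "?F one = ?T2 (tp H H) (D (S b))"
      by (intro tlift_cong) (simp_all add: h)
    also have "\<dots> = D (S b)" by (rule tlift_tp_id) (simp_all add: h)
    finally show "?T2 (\<lambda>u a1. ?T2 (\<lambda>c d. tp H H c (mult (S u) (mult a1 d))) (D (S b))) (D U) =
      msmult (tensor H H) (e U) (D (S b))" .
  qed (simp_all add: z)
  also have "\<dots> = D (S z)"
    by (rule sw_counit_l) (intro hlin | simp add: z)+
  finally show ?thesis by simp
qed

end


locale hopf_bij = hopf +
  assumes bij: "bij_betw S (mcarrier H) (mcarrier H)"
begin

definition T where "T = inv_into (mcarrier H) S"

lemma T_closed[simp]: "z \<in> mcarrier H \<Longrightarrow> T z \<in> mcarrier H"
  unfolding T_def using bij by (metis bij_betw_def inv_into_into)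
lemma S_T[simp]: "z \<in> mcarrier H \<Longrightarrow> S (T z) = z"
  unfolding T_def using bij by (meson bij_betw_inv_into_right)
lemma T_S[simp]: "x \<in> mcarrier H \<Longrightarrow> T (S x) = x"
  unfolding T_def using bij by (meson bij_betw_inv_into_left)
lemma S_inj: "x \<in> mcarrier H \<Longrightarrow> y \<in> mcarrier H \<Longrightarrow> S x = S y \<Longrightarrow> x = y"
  by (metis T_S)

lemma T_lin: "linear_map H H T"
proof (rule linear_mapI)
  show "T x \<in> mcarrier H" if "x \<in> mcarrier H" for x using that by simp
  show "T (madd H x y) = madd H (T x) (T y)" if "x \<in> mcarrier H" "y \<in> mcarrier H" for x y
    by (rule S_inj) (simp_all add: that linear_mapD(2)[OF S_lin])
  show "T (msmult H r x) = msmult H r (T x)" if "x \<in> mcarrier H" for r x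
    by (rule S_inj) (simp_all add: that S_smult)
qed

lemma T_one[simp]: "T one = one"
  using T_S[OF one_closed] by simp

lemma T_antimult: "x \<in> mcarrier H \<Longrightarrow> y \<in> mcarrier H \<Longrightarrow> T (mult x y) = mult (T y) (T x)"
  by (rule S_inj) (simp_all add: S_antimult)

lemma e_T[simp]: "z \<in> mcarrier H \<Longrightarrow> e (T z) = e z"
  by (metis S_T T_closed e_S)

lemma lin_T: "linear_map Q H g \<Longrightarrow> linear_map Q H (\<lambda>x. T (g x))"
  by (rule lin_comp[OF T_lin])

lemmas hlinT = hlin lin_T T_lin T_closed

lemma D_T:
  assumes z: "z \<in> mcarrier H"
  shows "D (T z) = tlift H H (tensor H H) (\<lambda>u v. tp H H (T v) (T u)) (D z)"
proof -
  let ?T2 = "tlift H H (tensor H H)"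
  have kt: "kmodule (tensor H H)" by simp
  define L where "L = ?T2 (\<lambda>u v. tp H H (T v) (T u))"
  have Lb: "bilinear_map H H (tensor H H) (\<lambda>u v. tp H H (T v) (T u))"
    by (intro hlinT | simp)+
  have Ll: "linear_map (tensor H H) (tensor H H) L" unfolding L_def
    by (rule tlift_linear[OF kH kH kt Lb])
  have "L (D z) = L (D (S (T z)))" using z by simp
  also have "\<dots> = L (?T2 (\<lambda>u v. tp H H (S v) (S u)) (D (T z)))"
    using S_anticomult[of "T z"] z by simp
  also have "\<dots> = ?T2 (\<lambda>u v. L (tp H H (S v) (S u))) (D (T z))"
    by (rule tlift_commute[OF kH kH kt kt Ll]) (simp_all add: z)
  also have "\<dots> = ?T2 (tp H H) (D (T z))"
    unfolding L_def by (rule tlift_cong) (simp_all add: z tlift_tp[OF kH kH kt Lb])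
  also have "\<dots> = D (T z)" by (rule tlift_tp_id) (simp_all add: z)
  finally show ?thesis unfolding L_def by simp
qed

lemma sw_antipode_T:
  assumes kp: "kmodule P" and F: "linear_map H P F" and m: "m \<in> mcarrier H"
  shows "tlift H H P (\<lambda>u v. F (mult (T v) u)) (D m) = msmult P (e m) (F one)"
proof -
  have FT: "linear_map H P (\<lambda>x. F (T x))" by (rule lin_comp[OF F T_lin])
  have "tlift H H P (\<lambda>u v. F (mult (T v) u)) (D m) = tlift H H P (\<lambda>u v. F (T (mult (S u) v))) (D m)"
    by (rule tlift_cong) (simp_all add: m kp T_antimult linear_mapD(1)[OF F])
  also have "\<dots> = msmult P (e m) (F (T one))"
    by (rule sw_antipode_l[OF kp FT m])
  finally show ?thesis by simp
qed

end


context hopf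
begin

lemma tlift_congH:
  assumes "kmodule P" "m \<in> mcarrier H"
    "\<And>a b. a \<in> mcarrier H \<Longrightarrow> b \<in> mcarrier H \<Longrightarrow> f a b = g a b"
    "\<And>a b. a \<in> mcarrier H \<Longrightarrow> b \<in> mcarrier H \<Longrightarrow> f a b \<in> mcarrier P"
  shows "tlift H H P f (D m) = tlift H H P g (D m)"
  using assms by (intro tlift_cong) simp_all

lemma tlift_swapH:
  assumes "kmodule P" "m \<in> mcarrier H" "n \<in> mcarrier H"
    "\<And>a b c d. a \<in> mcarrier H \<Longrightarrow> b \<in> mcarrier H \<Longrightarrow> c \<in> mcarrier H \<Longrightarrow> d \<in> mcarrier H \<Longrightarrow> f a b c d \<in> mcarrier P"
  shows "tlift H H P (\<lambda>a b. tlift H H P (\<lambda>c d. f a b c d) (D n)) (D m)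
       = tlift H H P (\<lambda>c d. tlift H H P (\<lambda>a b. f a b c d) (D m)) (D n)"
  using assms by (intro tlift_swap) simp_all

end

context hopf_bij
begin

lemma bigH:
  assumes kp: "kmodule P" and g: "g \<in> mcarrier H"
    and L1: "\<And>x2 x3 x4 x5 x6 x7 x8. x2 \<in> mcarrier H \<Longrightarrow> x3 \<in> mcarrier H \<Longrightarrow> x4 \<in> mcarrier H \<Longrightarrow> x5 \<in> mcarrier H \<Longrightarrow> x6 \<in> mcarrier H \<Longrightarrow> x7 \<in> mcarrier H \<Longrightarrow> x8 \<in> mcarrier H \<Longrightarrow>
      linear_map H P (\<lambda>x1. \<Psi> x1 x2 x3 x4 x5 x6 x7 x8)"
    and L2: "\<And>x1 x3 x4 x5 x6 x7 x8. x1 \<in> mcarrier H \<Longrightarrow> x3 \<in> mcarrier H \<Longrightarrow> x4 \<in> mcarrier H \<Longrightarrow> x5 \<in> mcarrier H \<Longrightarrow> x6 \<in> mcarrier H \<Longrightarrow> x7 \<in> mcarrier H \<Longrightarrow> x8 \<in> mcarrier H \<Longrightarrow>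
      linear_map H P (\<lambda>x2. \<Psi> x1 x2 x3 x4 x5 x6 x7 x8)"
    and L3: "\<And>x1 x2 x4 x5 x6 x7 x8. x1 \<in> mcarrier H \<Longrightarrow> x2 \<in> mcarrier H \<Longrightarrow> x4 \<in> mcarrier H \<Longrightarrow> x5 \<in> mcarrier H \<Longrightarrow> x6 \<in> mcarrier H \<Longrightarrow> x7 \<in> mcarrier H \<Longrightarrow> x8 \<in> mcarrier H \<Longrightarrow>
      linear_map H P (\<lambda>x3. \<Psi> x1 x2 x3 x4 x5 x6 x7 x8)"
    and L4: "\<And>x1 x2 x3 x5 x6 x7 x8. x1 \<in> mcarrier H \<Longrightarrow> x2 \<in> mcarrier H \<Longrightarrow> x3 \<in> mcarrier H \<Longrightarrow> x5 \<in> mcarrier H \<Longrightarrow> x6 \<in> mcarrier H \<Longrightarrow> x7 \<in> mcarrier H \<Longrightarrow> x8 \<in> mcarrier H \<Longrightarrow>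
      linear_map H P (\<lambda>x4. \<Psi> x1 x2 x3 x4 x5 x6 x7 x8)"
    and L5: "\<And>x1 x2 x3 x4 x6 x7 x8. x1 \<in> mcarrier H \<Longrightarrow> x2 \<in> mcarrier H \<Longrightarrow> x3 \<in> mcarrier H \<Longrightarrow> x4 \<in> mcarrier H \<Longrightarrow> x6 \<in> mcarrier H \<Longrightarrow> x7 \<in> mcarrier H \<Longrightarrow> x8 \<in> mcarrier H \<Longrightarrow>
      linear_map H P (\<lambda>x5. \<Psi> x1 x2 x3 x4 x5 x6 x7 x8)"
    and L6: "\<And>x1 x2 x3 x4 x5 x7 x8. x1 \<in> mcarrier H \<Longrightarrow> x2 \<in> mcarrier H \<Longrightarrow> x3 \<in> mcarrier H \<Longrightarrow> x4 \<in> mcarrier H \<Longrightarrow> x5 \<in> mcarrier H \<Longrightarrow> x7 \<in> mcarrier H \<Longrightarrow> x8 \<in> mcarrier H \<Longrightarrow>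
      linear_map H P (\<lambda>x6. \<Psi> x1 x2 x3 x4 x5 x6 x7 x8)"
    and L7: "\<And>x1 x2 x3 x4 x5 x6 x8. x1 \<in> mcarrier H \<Longrightarrow> x2 \<in> mcarrier H \<Longrightarrow> x3 \<in> mcarrier H \<Longrightarrow> x4 \<in> mcarrier H \<Longrightarrow> x5 \<in> mcarrier H \<Longrightarrow> x6 \<in> mcarrier H \<Longrightarrow> x8 \<in> mcarrier H \<Longrightarrow>
      linear_map H P (\<lambda>x7. \<Psi> x1 x2 x3 x4 x5 x6 x7 x8)"
    and L8: "\<And>x1 x2 x3 x4 x5 x6 x7. x1 \<in> mcarrier H \<Longrightarrow> x2 \<in> mcarrier H \<Longrightarrow> x3 \<in> mcarrier H \<Longrightarrow> x4 \<in> mcarrier H \<Longrightarrow> x5 \<in> mcarrier H \<Longrightarrow> x6 \<in> mcarrier H \<Longrightarrow> x7 \<in> mcarrier H \<Longrightarrow>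
      linear_map H P (\<lambda>x8. \<Psi> x1 x2 x3 x4 x5 x6 x7 x8)"
  shows
   "tlift H H P (\<lambda>x y. tlift H H P (\<lambda>x1 x2. tlift H H P (\<lambda>y1 y2. tlift H H P (\<lambda>y10 y11. tlift H H P (\<lambda>s0 s1.
      tlift H H P (\<lambda>p q. tlift H H P (\<lambda>p1 p2. tlift H H P (\<lambda>q1 q2.
        \<Psi> s0 s1 x2 y10 p2 (mult (T p1) y11) q1 q2) (D q)) (D p)) (D y2)) (D x1)) (D y1)) (D y)) (D x)) (D g)
  = tlift H H P (\<lambda>x y. tlift H H P (\<lambda>x1 x2. tlift H H P (\<lambda>y1 y2. tlift H H P (\<lambda>u w.
      tlift H H P (\<lambda>u1 u2. tlift H H P (\<lambda>w1 w2. \<Psi> x1 u1 u2 w1 w2 one y1 y2) (D w)) (D u)) (D x2)) (D y)) (D x)) (D g)"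
proof -
  let ?T = "tlift H H P"
  have Pc: "\<Psi> x1 x2 x3 x4 x5 x6 x7 x8 \<in> mcarrier P" if "x1 \<in> mcarrier H" "x2 \<in> mcarrier H" "x3 \<in> mcarrier H"
    "x4 \<in> mcarrier H" "x5 \<in> mcarrier H" "x6 \<in> mcarrier H" "x7 \<in> mcarrier H" "x8 \<in> mcarrier H"
    for x1 x2 x3 x4 x5 x6 x7 x8 using linear_mapD(1)[OF L1[OF that(2-8)] that(1)] by simp
  have C1: "linear_map Q P (\<lambda>x. \<Psi> (\<phi> x) x2 x3 x4 x5 x6 x7 x8)" if "linear_map Q H \<phi>" "x2 \<in> mcarrier H" "x3 \<in> mcarrier H" "x4 \<in> mcarrier H" "x5 \<in> mcarrier H" "x6 \<in> mcarrier H" "x7 \<in> mcarrier H" "x8 \<in> mcarrier H" for Q \<phi> x2 x3 x4 x5 x6 x7 x8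
    by (rule lin_comp[OF L1 that(1)]) (use that in simp_all)
  have C2: "linear_map Q P (\<lambda>x. \<Psi> x1 (\<phi> x) x3 x4 x5 x6 x7 x8)" if "linear_map Q H \<phi>" "x1 \<in> mcarrier H" "x3 \<in> mcarrier H" "x4 \<in> mcarrier H" "x5 \<in> mcarrier H" "x6 \<in> mcarrier H" "x7 \<in> mcarrier H" "x8 \<in> mcarrier H" for Q \<phi> x1 x3 x4 x5 x6 x7 x8
    by (rule lin_comp[OF L2 that(1)]) (use that in simp_all)
  have C3: "linear_map Q P (\<lambda>x. \<Psi> x1 x2 (\<phi> x) x4 x5 x6 x7 x8)" if "linear_map Q H \<phi>" "x1 \<in> mcarrier H" "x2 \<in> mcarrier H" "x4 \<in> mcarrier H" "x5 \<in> mcarrier H" "x6 \<in> mcarrier H" "x7 \<in> mcarrier H" "x8 \<in> mcarrier H" for Q \<phi> x1 x2 x4 x5 x6 x7 x8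
    by (rule lin_comp[OF L3 that(1)]) (use that in simp_all)
  have C4: "linear_map Q P (\<lambda>x. \<Psi> x1 x2 x3 (\<phi> x) x5 x6 x7 x8)" if "linear_map Q H \<phi>" "x1 \<in> mcarrier H" "x2 \<in> mcarrier H" "x3 \<in> mcarrier H" "x5 \<in> mcarrier H" "x6 \<in> mcarrier H" "x7 \<in> mcarrier H" "x8 \<in> mcarrier H" for Q \<phi> x1 x2 x3 x5 x6 x7 x8
    by (rule lin_comp[OF L4 that(1)]) (use that in simp_all)
  have C5: "linear_map Q P (\<lambda>x. \<Psi> x1 x2 x3 x4 (\<phi> x) x6 x7 x8)" if "linear_map Q H \<phi>" "x1 \<in> mcarrier H" "x2 \<in> mcarrier H" "x3 \<in> mcarrier H" "x4 \<in> mcarrier H" "x6 \<in> mcarrier H" "x7 \<in> mcarrier H" "x8 \<in> mcarrier H" for Q \<phi> x1 x2 x3 x4 x6 x7 x8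
    by (rule lin_comp[OF L5 that(1)]) (use that in simp_all)
  have C6: "linear_map Q P (\<lambda>x. \<Psi> x1 x2 x3 x4 x5 (\<phi> x) x7 x8)" if "linear_map Q H \<phi>" "x1 \<in> mcarrier H" "x2 \<in> mcarrier H" "x3 \<in> mcarrier H" "x4 \<in> mcarrier H" "x5 \<in> mcarrier H" "x7 \<in> mcarrier H" "x8 \<in> mcarrier H" for Q \<phi> x1 x2 x3 x4 x5 x7 x8
    by (rule lin_comp[OF L6 that(1)]) (use that in simp_all)
  have C7: "linear_map Q P (\<lambda>x. \<Psi> x1 x2 x3 x4 x5 x6 (\<phi> x) x8)" if "linear_map Q H \<phi>" "x1 \<in> mcarrier H" "x2 \<in> mcarrier H" "x3 \<in> mcarrier H" "x4 \<in> mcarrier H" "x5 \<in> mcarrier H" "x6 \<in> mcarrier H" "x8 \<in> mcarrier H" for Q \<phi> x1 x2 x3 x4 x5 x6 x8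
    by (rule lin_comp[OF L7 that(1)]) (use that in simp_all)
  have C8: "linear_map Q P (\<lambda>x. \<Psi> x1 x2 x3 x4 x5 x6 x7 (\<phi> x))" if "linear_map Q H \<phi>" "x1 \<in> mcarrier H" "x2 \<in> mcarrier H" "x3 \<in> mcarrier H" "x4 \<in> mcarrier H" "x5 \<in> mcarrier H" "x6 \<in> mcarrier H" "x7 \<in> mcarrier H" for Q \<phi> x1 x2 x3 x4 x5 x6 x7
    by (rule lin_comp[OF L8 that(1)]) (use that in simp_all)
  note CC = C1 C2 C3 C4 C5 C6 C7 C8
  note ss = kp g Pc

  have contr: "?T (\<lambda>Z Q. ?T (\<lambda>y11 p1. ?T (\<lambda>p2 q. ?T (\<lambda>q1 q2. \<Psi> a b c d p2 (mult (T p1) y11) q1 q2) (D q)) (D Q)) (D Z)) (D Y)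
     = ?T (\<lambda>p2 q. ?T (\<lambda>q1 q2. \<Psi> a b c d p2 one q1 q2) (D q)) (D Y)"
    if h: "a \<in> mcarrier H" "b \<in> mcarrier H" "c \<in> mcarrier H" "d \<in> mcarrier H" "Y \<in> mcarrier H" for a b c d Y
  proof -
    let ?F = "\<lambda>Q k. ?T (\<lambda>p2 q. ?T (\<lambda>q1 q2. \<Psi> a b c d p2 k q1 q2) (D q)) (D Q)"
    have "?T (\<lambda>Z Q. ?T (\<lambda>y11 p1. ?F Q (mult (T p1) y11)) (D Z)) (D Y) = ?T (\<lambda>Z Q. msmult P (e Z) (?F Q one)) (D Y)"
    proof (rule tlift_congH)
      fix Z Q assume h2: "Z \<in> mcarrier H" "Q \<in> mcarrier H"
      have lF: "linear_map H P (?F Q)" by (intro hlinT CC | simp add: ss h h2)+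
      show "?T (\<lambda>y11 p1. ?F Q (mult (T p1) y11)) (D Z) = msmult P (e Z) (?F Q one)"
        by (rule sw_antipode_T[OF kp lF h2(1)])
    qed (simp_all add: ss h)
    also have "\<dots> = ?F Y one"
      by (rule sw_counit_l) (intro hlinT CC | simp add: ss h)+
    finally show ?thesis .
  qed

  have "?T (\<lambda>x y. ?T (\<lambda>x1 x2. ?T (\<lambda>y1 y2. ?T (\<lambda>y10 y11. ?T (\<lambda>s0 s1.
      ?T (\<lambda>p q. ?T (\<lambda>p1 p2. ?T (\<lambda>q1 q2.
        \<Psi> s0 s1 x2 y10 p2 (mult (T p1) y11) q1 q2) (D q)) (D p)) (D y2)) (D x1)) (D y1)) (D y)) (D x)) (D g)
   = ?T (\<lambda>x y. ?T (\<lambda>x1 x2. ?T (\<lambda>y1 y2. ?T (\<lambda>s0 s1. ?T (\<lambda>y10 y11.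
      ?T (\<lambda>p q. ?T (\<lambda>p1 p2. ?T (\<lambda>q1 q2.
        \<Psi> s0 s1 x2 y10 p2 (mult (T p1) y11) q1 q2) (D q)) (D p)) (D y2)) (D y1)) (D x1)) (D y)) (D x)) (D g)"
    by ((rule tlift_congH; (simp add: ss; fail)?), (rule tlift_congH; (simp add: ss; fail)?), (rule tlift_congH; (simp add: ss; fail)?), rule tlift_swapH) (intro hlinT CC | simp add: ss)+
  also have "\<dots> = ?T (\<lambda>x y. ?T (\<lambda>x1 x2. ?T (\<lambda>s0 s1. ?T (\<lambda>y1 y2. ?T (\<lambda>y10 y11.
      ?T (\<lambda>p q. ?T (\<lambda>p1 p2. ?T (\<lambda>q1 q2.
        \<Psi> s0 s1 x2 y10 p2 (mult (T p1) y11) q1 q2) (D q)) (D p)) (D y2)) (D y1)) (D y)) (D x1)) (D x)) (D g)"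
    by ((rule tlift_congH; (simp add: ss; fail)?), (rule tlift_congH; (simp add: ss; fail)?), rule tlift_swapH) (intro hlinT CC | simp add: ss)+

  also have "\<dots> = ?T (\<lambda>x y. ?T (\<lambda>s0 U. ?T (\<lambda>s1 x2. ?T (\<lambda>y1 y2. ?T (\<lambda>y10 y11.
      ?T (\<lambda>p q. ?T (\<lambda>p1 p2. ?T (\<lambda>q1 q2. \<Psi> s0 s1 x2 y10 p2 (mult (T p1) y11) q1 q2) (D q)) (D p)) (D y2)) (D y1)) (D y)) (D U)) (D x)) (D g)"
    by ((rule tlift_congH; (simp add: ss; fail)?), rule sw_coassoc) (intro hlinT CC | simp add: ss)+
  also have "\<dots> = ?T (\<lambda>x y. ?T (\<lambda>s0 U. ?T (\<lambda>s1 x2. ?T (\<lambda>y1 y2. ?T (\<lambda>y10 y11.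
      ?T (\<lambda>p1 Q. ?T (\<lambda>p2 q. ?T (\<lambda>q1 q2. \<Psi> s0 s1 x2 y10 p2 (mult (T p1) y11) q1 q2) (D q)) (D Q)) (D y2)) (D y1)) (D y)) (D U)) (D x)) (D g)"
    by ((rule tlift_congH; (simp add: ss; fail)?), (rule tlift_congH; (simp add: ss; fail)?), (rule tlift_congH; (simp add: ss; fail)?), (rule tlift_congH; (simp add: ss; fail)?), (rule tlift_congH; (simp add: ss; fail)?), rule sw_coassoc) (intro hlinT CC | simp add: ss)+
  also have "\<dots> = ?T (\<lambda>x y. ?T (\<lambda>s0 U. ?T (\<lambda>s1 x2. ?T (\<lambda>y10 Y. ?T (\<lambda>y11 y2.
      ?T (\<lambda>p1 Q. ?T (\<lambda>p2 q. ?T (\<lambda>q1 q2. \<Psi> s0 s1 x2 y10 p2 (mult (T p1) y11) q1 q2) (D q)) (D Q)) (D y2)) (D Y)) (D y)) (D U)) (D x)) (D g)"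
    by ((rule tlift_congH; (simp add: ss; fail)?), (rule tlift_congH; (simp add: ss; fail)?), (rule tlift_congH; (simp add: ss; fail)?), rule sw_coassoc) (intro hlinT CC | simp add: ss)+
  also have "\<dots> = ?T (\<lambda>x y. ?T (\<lambda>s0 U. ?T (\<lambda>s1 x2. ?T (\<lambda>y10 Y. ?T (\<lambda>Z Q.
      ?T (\<lambda>y11 p1. ?T (\<lambda>p2 q. ?T (\<lambda>q1 q2. \<Psi> s0 s1 x2 y10 p2 (mult (T p1) y11) q1 q2) (D q)) (D Q)) (D Z)) (D Y)) (D y)) (D U)) (D x)) (D g)"
    by ((rule tlift_congH; (simp add: ss; fail)?), (rule tlift_congH; (simp add: ss; fail)?), (rule tlift_congH; (simp add: ss; fail)?), (rule tlift_congH; (simp add: ss; fail)?), rule sw_coassoc[symmetric]) (intro hlinT CC | simp add: ss)+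
  also have "\<dots> = ?T (\<lambda>x y. ?T (\<lambda>s0 U. ?T (\<lambda>s1 x2. ?T (\<lambda>y10 Y.
      ?T (\<lambda>p2 q. ?T (\<lambda>q1 q2. \<Psi> s0 s1 x2 y10 p2 one q1 q2) (D q)) (D Y)) (D y)) (D U)) (D x)) (D g)"
    by ((rule tlift_congH; (simp add: ss; fail)?), (rule tlift_congH; (simp add: ss; fail)?), (rule tlift_congH; (simp add: ss; fail)?), (rule tlift_congH; (simp add: ss; fail)?), rule contr) (simp_all add: ss)
  also have "\<dots> = ?T (\<lambda>x y. ?T (\<lambda>s0 U. ?T (\<lambda>s1 x2. ?T (\<lambda>W q.
      ?T (\<lambda>y10 p2. ?T (\<lambda>q1 q2. \<Psi> s0 s1 x2 y10 p2 one q1 q2) (D q)) (D W)) (D y)) (D U)) (D x)) (D g)"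
    by ((rule tlift_congH; (simp add: ss; fail)?), (rule tlift_congH; (simp add: ss; fail)?), (rule tlift_congH; (simp add: ss; fail)?), rule sw_coassoc[symmetric]) (intro hlinT CC | simp add: ss)+
  also have "\<dots> = ?T (\<lambda>x y. ?T (\<lambda>s0 U. ?T (\<lambda>W q. ?T (\<lambda>s1 x2.
      ?T (\<lambda>y10 p2. ?T (\<lambda>q1 q2. \<Psi> s0 s1 x2 y10 p2 one q1 q2) (D q)) (D W)) (D U)) (D y)) (D x)) (D g)"
    by ((rule tlift_congH; (simp add: ss; fail)?), (rule tlift_congH; (simp add: ss; fail)?), rule tlift_swapH) (intro hlinT CC | simp add: ss)+
  also have "\<dots> = ?T (\<lambda>x y. ?T (\<lambda>W q. ?T (\<lambda>s0 U. ?T (\<lambda>s1 x2.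
      ?T (\<lambda>y10 p2. ?T (\<lambda>q1 q2. \<Psi> s0 s1 x2 y10 p2 one q1 q2) (D q)) (D W)) (D U)) (D x)) (D y)) (D g)"
    by ((rule tlift_congH; (simp add: ss; fail)?), rule tlift_swapH) (intro hlinT CC | simp add: ss)+
  also have "\<dots> = ?T (\<lambda>G1 q. ?T (\<lambda>x W. ?T (\<lambda>s0 U. ?T (\<lambda>s1 x2.
      ?T (\<lambda>y10 p2. ?T (\<lambda>q1 q2. \<Psi> s0 s1 x2 y10 p2 one q1 q2) (D q)) (D W)) (D U)) (D x)) (D G1)) (D g)"
    by (rule sw_coassoc[symmetric]) (intro hlinT CC | simp add: ss)+
  also have "\<dots> = ?T (\<lambda>G1 q. ?T (\<lambda>s0 V. ?T (\<lambda>U W. ?T (\<lambda>s1 x2.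
      ?T (\<lambda>y10 p2. ?T (\<lambda>q1 q2. \<Psi> s0 s1 x2 y10 p2 one q1 q2) (D q)) (D W)) (D U)) (D V)) (D G1)) (D g)"
    by ((rule tlift_congH; (simp add: ss; fail)?), rule sw_coassoc) (intro hlinT CC | simp add: ss)+
  also have "\<dots> = ?T (\<lambda>G1 q. ?T (\<lambda>s0 V. ?T (\<lambda>U W. ?T (\<lambda>s1 x2.
      ?T (\<lambda>q1 q2. ?T (\<lambda>y10 p2. \<Psi> s0 s1 x2 y10 p2 one q1 q2) (D W)) (D q)) (D U)) (D V)) (D G1)) (D g)"
    by ((rule tlift_congH; (simp add: ss; fail)?), (rule tlift_congH; (simp add: ss; fail)?), (rule tlift_congH; (simp add: ss; fail)?), (rule tlift_congH; (simp add: ss; fail)?), rule tlift_swapH) (intro hlinT CC | simp add: ss)+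
  also have "\<dots> = ?T (\<lambda>G1 q. ?T (\<lambda>s0 V. ?T (\<lambda>U W. ?T (\<lambda>q1 q2.
      ?T (\<lambda>s1 x2. ?T (\<lambda>y10 p2. \<Psi> s0 s1 x2 y10 p2 one q1 q2) (D W)) (D U)) (D q)) (D V)) (D G1)) (D g)"
    by ((rule tlift_congH; (simp add: ss; fail)?), (rule tlift_congH; (simp add: ss; fail)?), (rule tlift_congH; (simp add: ss; fail)?), rule tlift_swapH) (intro hlinT CC | simp add: ss)+
  also have "\<dots> = ?T (\<lambda>G1 q. ?T (\<lambda>s0 V. ?T (\<lambda>q1 q2. ?T (\<lambda>U W.
      ?T (\<lambda>s1 x2. ?T (\<lambda>y10 p2. \<Psi> s0 s1 x2 y10 p2 one q1 q2) (D W)) (D U)) (D V)) (D q)) (D G1)) (D g)"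
    by ((rule tlift_congH; (simp add: ss; fail)?), (rule tlift_congH; (simp add: ss; fail)?), rule tlift_swapH) (intro hlinT CC | simp add: ss)+
  finally show ?thesis .
qed

end


lemma tmap_lift:
  fixes M :: "('k::comm_ring_1, 'a) kmod" and N :: "('k, 'b) kmod"
  assumes km: "kmodule M" and kn: "kmodule N" and km': "kmodule M'" and kn': "kmodule N'" and kp: "kmodule P"
    and F: "bilinear_map M' N' P F" and f: "linear_map M M' f" and g: "linear_map N N' g"
    and X: "X \<in> mcarrier (tensor M N)"
  shows "tlift M' N' P F (tmap M N M' N' f g X) = tlift M N P (\<lambda>a b. F (f a) (g b)) X"
proof -
  have kt: "kmodule (tensor M' N')" using km' kn' by simp
  note L = tlift_linear[OF km' kn' kp F]
  have "tlift M' N' P F (tmap M N M' N' f g X) = tlift M N P (\<lambda>a b. tlift M' N' P F (tp M' N' (f a) (g b))) X"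
    unfolding tmap_def
    by (rule tlift_commute[OF km kn kt kp L _ X]) (simp add: linear_mapD(1)[OF f] linear_mapD(1)[OF g])
  also have "\<dots> = tlift M N P (\<lambda>a b. F (f a) (g b)) X"
    by (rule tlift_cong[OF km kn kp _ _ X])
       (simp_all add: linear_mapD(1)[OF f] linear_mapD(1)[OF g] tlift_tp[OF km' kn' kp F] bilinear_mapD(1)[OF F])
  finally show ?thesis .
qed

locale smash = hopf_bij H mult one D e S for H mult one D e S +
  fixes C and DC and eC and act
  assumes mc: "module_coalgebra H mult one D e C DC eC act"
begin

lemma coC: "coalgebra C DC eC" using mc unfolding module_coalgebra_def by blast
lemma kC[simp]: "kmodule C" using coalgebraD(1)[OF coC] .
lemma DC_lin: "linear_map C (tensor C C) DC" using coalgebraD(2)[OF coC] .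
lemma eC_lin: "linear_map C kself eC" using coalgebraD(3)[OF coC] .
lemma act_bil: "bilinear_map H C C act" using mc unfolding module_coalgebra_def by blast
lemma act_mult: "g \<in> mcarrier H \<Longrightarrow> h \<in> mcarrier H \<Longrightarrow> c \<in> mcarrier C \<Longrightarrow> act (mult g h) c = act g (act h c)"
  using mc unfolding module_coalgebra_def by blast
lemma act_one[simp]: "c \<in> mcarrier C \<Longrightarrow> act one c = c"
  using mc unfolding module_coalgebra_def by blast
lemma DC_act: "h \<in> mcarrier H \<Longrightarrow> c \<in> mcarrier C \<Longrightarrow>
    DC (act h c) = tlift H H (tensor C C) (\<lambda>h0 h1. tmap C C C C (act h0) (act h1) (DC c)) (D h)"
  using mc unfolding module_coalgebra_def by blast
lemma eC_act: "h \<in> mcarrier H \<Longrightarrow> c \<in> mcarrier C \<Longrightarrow> eC (act h c) = e h * eC c"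
  using mc unfolding module_coalgebra_def by blast

lemma act_closed[simp]: "h \<in> mcarrier H \<Longrightarrow> c \<in> mcarrier C \<Longrightarrow> act h c \<in> mcarrier C"
  using bilinear_mapD(1)[OF act_bil] .
lemma DC_closed[simp]: "c \<in> mcarrier C \<Longrightarrow> DC c \<in> mcarrier (tensor C C)"
  using linear_mapD(1)[OF DC_lin] .

lemma lin_act1: "linear_map Q H g \<Longrightarrow> c \<in> mcarrier C \<Longrightarrow> linear_map Q C (\<lambda>x. act (g x) c)"
  by (rule lin_bil1[OF act_bil])
lemma lin_act2: "h \<in> mcarrier H \<Longrightarrow> linear_map Q C g \<Longrightarrow> linear_map Q C (\<lambda>x. act h (g x))"
  by (rule lin_bil2[OF act_bil])
lemma lin_actL: "h \<in> mcarrier H \<Longrightarrow> linear_map C C (act h)"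
  using bilinear_map_lin2[OF act_bil] by simp
lemma lin_DC: "linear_map Q C g \<Longrightarrow> linear_map Q (tensor C C) (\<lambda>x. DC (g x))"
  by (rule lin_comp[OF DC_lin])
lemma lin_eC: "linear_map Q C g \<Longrightarrow> linear_map Q kself (\<lambda>x. eC (g x))"
  by (rule lin_comp[OF eC_lin])

lemmas slin = hlinT lin_act1 lin_act2 lin_actL DC_lin eC_lin lin_DC lin_eC act_closed DC_closed kC

lemma sw_DC_act:
  assumes kp: "kmodule P" and F: "bilinear_map C C P F" and h: "h \<in> mcarrier H" and c: "c \<in> mcarrier C"
  shows "tlift C C P F (DC (act h c)) = tlift H H P (\<lambda>h0 h1. tlift C C P (\<lambda>c0 c1. F (act h0 c0) (act h1 c1)) (DC c)) (D h)"
proof -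
  have kt: "kmodule (tensor C C)" by simp
  note L = tlift_linear[OF kC kC kp F]
  have "tlift C C P F (DC (act h c)) = tlift H H P (\<lambda>h0 h1. tlift C C P F (tmap C C C C (act h0) (act h1) (DC c))) (D h)"
    unfolding DC_act[OF h c]
    by (rule tlift_commute[OF kH kH kt kp L]) (simp_all add: h c tmap_def)
  also have "\<dots> = tlift H H P (\<lambda>h0 h1. tlift C C P (\<lambda>c0 c1. F (act h0 c0) (act h1 c1)) (DC c)) (D h)"
    by (rule tlift_cong) (simp_all add: h c kp tmap_lift[OF kC kC kC kC kp F] lin_actL bilinear_mapD(1)[OF F])
  finally show ?thesis .
qed

abbreviation "CH \<equiv> tensor C H"
abbreviation "P2 \<equiv> tensor CH CH"

lemma T_inv: "inv_into (mcarrier H) S = T" by (simp add: T_def)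

lemma ss_eq:
  assumes a: "a \<in> mcarrier C" and g: "g \<in> mcarrier H"
  shows "smash_comult_simple H mult D S C DC act a g =
    tlift C C P2 (\<lambda>a0 a1. tlift H H P2 (\<lambda>x y. tlift H H P2 (\<lambda>x1 x2. tlift H H P2 (\<lambda>y1 y2.
       tp CH CH (tp C H a0 x2) (tp C H (act (mult y1 (T x1)) a1) y2)) (D y)) (D x)) (D g)) (DC a)"
  unfolding smash_comult_simple_def Let_def T_inv
  by (intro tlift_cong) (simp_all add: a g T_antimult)


definition ss where
  "ss a g = tlift C C P2 (\<lambda>a0 a1. tlift H H P2 (\<lambda>x y. tlift H H P2 (\<lambda>x1 x2. tlift H H P2 (\<lambda>y1 y2.
       tp CH CH (tp C H a0 x2) (tp C H (act (mult y1 (T x1)) a1) y2)) (D y)) (D x)) (D g)) (DC a)"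

lemma kCH[simp]: "kmodule CH" by simp
lemma kP2[simp]: "kmodule P2" by simp

lemma ss_bil: "bilinear_map C H P2 ss"
  unfolding ss_def by (intro slin | simp)+

lemma ss_closed[simp]: "a \<in> mcarrier C \<Longrightarrow> g \<in> mcarrier H \<Longrightarrow> ss a g \<in> mcarrier P2"
  using bilinear_mapD(1)[OF ss_bil] .

abbreviation "Delta \<equiv> smash_comult H mult D S C DC act"
abbreviation "eps \<equiv> smash_counit H e C eC"

lemma Delta_eq: "X \<in> mcarrier CH \<Longrightarrow> Delta X = tlift C H P2 ss X"
  unfolding smash_comult_def by (rule tlift_cong) (simp_all add: ss_eq ss_def[symmetric])

lemma Delta_lin: "linear_map CH P2 Delta"
proof -
  have "linear_map CH P2 (tlift C H P2 ss)" by (rule tlift_linear[OF kC kH kP2 ss_bil])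
  then show ?thesis unfolding linear_map_def using Delta_eq by simp
qed

lemma Delta_closed[simp]: "X \<in> mcarrier CH \<Longrightarrow> Delta X \<in> mcarrier P2"
  using linear_mapD(1)[OF Delta_lin] .

lemma Delta_tp: "a \<in> mcarrier C \<Longrightarrow> g \<in> mcarrier H \<Longrightarrow> Delta (tp C H a g) = ss a g"
  by (simp add: Delta_eq tlift_tp[OF kC kH kP2 ss_bil])

lemma eps_bil: "bilinear_map C H kself (\<lambda>a g. eC a * e g)"
  by (intro slin | simp)+

lemma eps_lin: "linear_map CH kself eps"
  unfolding smash_counit_def by (rule tlift_linear[OF kC kH kmodule_kself eps_bil])

lemma eps_tp: "a \<in> mcarrier C \<Longrightarrow> g \<in> mcarrier H \<Longrightarrow> eps (tp C H a g) = eC a * e g"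
  unfolding smash_counit_def by (rule tlift_tp[OF kC kH kmodule_kself eps_bil])

lemma tlift_congC:
  assumes "kmodule P" "m \<in> mcarrier C"
    "\<And>a b. a \<in> mcarrier C \<Longrightarrow> b \<in> mcarrier C \<Longrightarrow> f a b = g a b"
    "\<And>a b. a \<in> mcarrier C \<Longrightarrow> b \<in> mcarrier C \<Longrightarrow> f a b \<in> mcarrier P"
  shows "tlift C C P f (DC m) = tlift C C P g (DC m)"
  using assms by (intro tlift_cong) simp_all

lemma ss_push:
  assumes kq: "kmodule Q" and L: "linear_map P2 Q L" and a: "a \<in> mcarrier C" and g: "g \<in> mcarrier H"
  shows "L (ss a g) = tlift C C Q (\<lambda>a0 a1. tlift H H Q (\<lambda>x y. tlift H H Q (\<lambda>x1 x2. tlift H H Q (\<lambda>y1 y2.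
       L (tp CH CH (tp C H a0 x2) (tp C H (act (mult y1 (T x1)) a1) y2))) (D y)) (D x)) (D g)) (DC a)"
  unfolding ss_def
  apply (subst tlift_commute[OF kC kC kP2 kq L], simp_all add: a g)
  apply (rule tlift_congC; (simp add: a g kq linear_mapD(1)[OF L]; fail)?)
  apply (subst tlift_commute[OF kH kH kP2 kq L], simp_all add: a g)
  apply (rule tlift_congH; (simp add: a g kq linear_mapD(1)[OF L]; fail)?)
  apply (subst tlift_commute[OF kH kH kP2 kq L], simp_all add: a g)
  apply (rule tlift_congH; (simp add: a g kq linear_mapD(1)[OF L]; fail)?)
  apply (subst tlift_commute[OF kH kH kP2 kq L], simp_all add: a g)
  done


lemma sw_antipode_T2:
  assumes kp: "kmodule P" and F: "linear_map H P F" and m: "m \<in> mcarrier H"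
  shows "tlift H H P (\<lambda>u v. F (mult v (T u))) (D m) = msmult P (e m) (F one)"
proof -
  have FT: "linear_map H P (\<lambda>x. F (T x))" by (rule lin_comp[OF F T_lin])
  have "tlift H H P (\<lambda>u v. F (mult v (T u))) (D m) = tlift H H P (\<lambda>u v. F (T (mult u (S v)))) (D m)"
    by (rule tlift_cong) (simp_all add: m kp T_antimult linear_mapD(1)[OF F])
  also have "\<dots> = msmult P (e m) (F (T one))"
    by (rule sw_antipode_r[OF kp FT m])
  finally show ?thesis by simp
qed

lemma counit_left:
  assumes m: "m \<in> mcarrier CH"
  shows "tlift CH CH CH (\<lambda>x y. msmult CH (eps x) y) (Delta m) = m"
proof -
  let ?F = "\<lambda>x y. msmult CH (eps x) y"
  have Fb: "bilinear_map CH CH CH ?F"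
    by (intro bilinear_mapI lin_smult_l lin_smult_r eps_lin lin_id kCH; simp)
  note LF = tlift_linear[OF kCH kCH kCH Fb]
  have l1: "linear_map CH CH (\<lambda>m. tlift CH CH CH ?F (Delta m))" by (rule lin_comp[OF LF Delta_lin])
  show ?thesis
  proof (rule tensor_ext[OF kC kH kCH l1 lin_id _ m])
    fix a g assume a: "a \<in> mcarrier C" and g: "g \<in> mcarrier H"
    let ?TH = "tlift H H CH"
    have "tlift CH CH CH ?F (Delta (tp C H a g)) = tlift CH CH CH ?F (ss a g)" by (simp add: Delta_tp a g)
    also have "\<dots> = tlift C C CH (\<lambda>a0 a1. ?TH (\<lambda>x y. ?TH (\<lambda>x1 x2. ?TH (\<lambda>y1 y2.
       tlift CH CH CH ?F (tp CH CH (tp C H a0 x2) (tp C H (act (mult y1 (T x1)) a1) y2))) (D y)) (D x)) (D g)) (DC a)"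
      by (rule ss_push[OF kCH LF a g])
    also have "\<dots> = tlift C C CH (\<lambda>a0 a1. ?TH (\<lambda>x y. ?TH (\<lambda>x1 x2. msmult CH (e x2) (?TH (\<lambda>y1 y2.
       msmult CH (eC a0) (tp C H (act (mult y1 (T x1)) a1) y2)) (D y))) (D x)) (D g)) (DC a)"
      apply (rule tlift_congC; (simp add: a g; fail)?)
      apply (rule tlift_congH; (simp add: a g; fail)?)
      apply (rule tlift_congH; (simp add: a g; fail)?)
      apply (subst tlift_smult_fun[symmetric], simp_all)
      apply (rule tlift_congH; (simp add: a g; fail)?)
      apply (simp add: tlift_tp[OF kCH kCH kCH Fb] eps_tp km_smult_smult[symmetric] mult.commute)
      done
    also have "\<dots> = tlift C C CH (\<lambda>a0 a1. ?TH (\<lambda>x y. ?TH (\<lambda>y1 y2.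
       msmult CH (eC a0) (tp C H (act (mult y1 (T x)) a1) y2)) (D y)) (D g)) (DC a)"
      apply (rule tlift_congC; (simp add: a g; fail)?)
      apply (rule tlift_congH; (simp add: a g; fail)?)
      apply (rule sw_counit_r)
      apply (intro slin | simp)+
      done
    also have "\<dots> = tlift C C CH (\<lambda>a0 a1. ?TH (\<lambda>X y2. ?TH (\<lambda>x y1.
       msmult CH (eC a0) (tp C H (act (mult y1 (T x)) a1) y2)) (D X)) (D g)) (DC a)"
      apply (rule tlift_congC; (simp add: a g; fail)?)
      apply (rule sw_coassoc[symmetric])
      apply (intro slin | simp add: g)+
      done
    also have "\<dots> = tlift C C CH (\<lambda>a0 a1. ?TH (\<lambda>X y2. msmult CH (e X) (msmult CH (eC a0) (tp C H a1 y2))) (D g)) (DC a)"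
      apply (rule tlift_congC; (simp add: a g; fail)?)
      apply (rule tlift_congH; (simp add: a g; fail)?)
      apply (subst sw_antipode_T2[where F="\<lambda>k. msmult CH (eC _) (tp C H (act k _) _)"])
      apply (intro slin | simp)+
      done
    also have "\<dots> = tlift C C CH (\<lambda>a0 a1. msmult CH (eC a0) (tp C H a1 g)) (DC a)"
      apply (rule tlift_congC; (simp add: a g; fail)?)
      apply (rule sw_counit_l)
      apply (intro slin | simp add: g)+
      done
    also have "\<dots> = tp C H a g"
      apply (rule counit_sw_l[OF coC kCH _ a])
      apply (intro slin | simp add: g)+
      done
    finally show "tlift CH CH CH ?F (Delta (tp C H a g)) = tp C H a g" .
  qed
qed


lemma counit_right:
  assumes m: "m \<in> mcarrier CH"
  shows "tlift CH CH CH (\<lambda>x y. msmult CH (eps y) x) (Delta m) = m"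
proof -
  let ?F = "\<lambda>x y. msmult CH (eps y) x"
  have Fb: "bilinear_map CH CH CH ?F"
    by (intro bilinear_mapI lin_smult_l lin_smult_r eps_lin lin_id kCH; simp)
  note LF = tlift_linear[OF kCH kCH kCH Fb]
  have l1: "linear_map CH CH (\<lambda>m. tlift CH CH CH ?F (Delta m))" by (rule lin_comp[OF LF Delta_lin])
  show ?thesis
  proof (rule tensor_ext[OF kC kH kCH l1 lin_id _ m])
    fix a g assume a: "a \<in> mcarrier C" and g: "g \<in> mcarrier H"
    let ?TH = "tlift H H CH"
    have "tlift CH CH CH ?F (Delta (tp C H a g)) = tlift CH CH CH ?F (ss a g)" by (simp add: Delta_tp a g)
    also have "\<dots> = tlift C C CH (\<lambda>a0 a1. ?TH (\<lambda>x y. ?TH (\<lambda>x1 x2. ?TH (\<lambda>y1 y2.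
       tlift CH CH CH ?F (tp CH CH (tp C H a0 x2) (tp C H (act (mult y1 (T x1)) a1) y2))) (D y)) (D x)) (D g)) (DC a)"
      by (rule ss_push[OF kCH LF a g])
    also have "\<dots> = tlift C C CH (\<lambda>a0 a1. ?TH (\<lambda>x y. ?TH (\<lambda>x1 x2. ?TH (\<lambda>y1 y2.
       msmult CH (e y1) (msmult CH (e y2) (msmult CH (e x1) (msmult CH (eC a1) (tp C H a0 x2))))) (D y)) (D x)) (D g)) (DC a)"
      apply (rule tlift_congC; (simp add: a g; fail)?)
      apply (rule tlift_congH; (simp add: a g; fail)?)
      apply (rule tlift_congH; (simp add: a g; fail)?)
      apply (rule tlift_congH; (simp add: a g; fail)?)
      apply (simp add: tlift_tp[OF kCH kCH kCH Fb] eps_tp eC_act e_mult km_smult_smult[symmetric] mult_ac)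
      done
    also have "\<dots> = tlift C C CH (\<lambda>a0 a1. ?TH (\<lambda>x y. ?TH (\<lambda>x1 x2.
       msmult CH (e y) (msmult CH (e x1) (msmult CH (eC a1) (tp C H a0 x2)))) (D x)) (D g)) (DC a)"
      apply (rule tlift_congC; (simp add: a g; fail)?)
      apply (rule tlift_congH; (simp add: a g; fail)?)
      apply (rule tlift_congH; (simp add: a g; fail)?)
      apply (rule sw_counit_l)
      apply (intro slin | simp)+
      done
    also have "\<dots> = tlift C C CH (\<lambda>a0 a1. ?TH (\<lambda>x y. ?TH (\<lambda>x1 x2.
       msmult CH (e x1) (msmult CH (e y) (msmult CH (eC a1) (tp C H a0 x2)))) (D x)) (D g)) (DC a)"
      apply (rule tlift_congC; (simp add: a g; fail)?)
      apply (rule tlift_congH; (simp add: a g; fail)?)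
      apply (rule tlift_congH; (simp add: a g; fail)?)
      apply (simp add: km_smult_comm)
      done
    also have "\<dots> = tlift C C CH (\<lambda>a0 a1. ?TH (\<lambda>x y. msmult CH (e y) (msmult CH (eC a1) (tp C H a0 x))) (D g)) (DC a)"
      apply (rule tlift_congC; (simp add: a g; fail)?)
      apply (rule tlift_congH; (simp add: a g; fail)?)
      apply (rule sw_counit_l)
      apply (intro slin | simp)+
      done
    also have "\<dots> = tlift C C CH (\<lambda>a0 a1. msmult CH (eC a1) (tp C H a0 g)) (DC a)"
      apply (rule tlift_congC; (simp add: a g; fail)?)
      apply (rule sw_counit_r)
      apply (intro slin | simp add: g)+
      done
    also have "\<dots> = tp C H a g"
      apply (rule counit_sw_r[OF coC kCH _ a])
      apply (intro slin | simp add: g)+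
      done
    finally show "tlift CH CH CH ?F (Delta (tp C H a g)) = tp C H a g" .
  qed
qed

end


context smash
begin

abbreviation "Q3 \<equiv> tensor CH P2"

lemma tlift_swapCH:
  assumes "kmodule P" "m \<in> mcarrier H" "n \<in> mcarrier C"
    "\<And>a b c d. a \<in> mcarrier H \<Longrightarrow> b \<in> mcarrier H \<Longrightarrow> c \<in> mcarrier C \<Longrightarrow> d \<in> mcarrier C \<Longrightarrow> f a b c d \<in> mcarrier P"
  shows "tlift H H P (\<lambda>a b. tlift C C P (\<lambda>c d. f a b c d) (DC n)) (D m)
       = tlift C C P (\<lambda>c d. tlift H H P (\<lambda>a b. f a b c d) (D m)) (DC n)"
  using assms by (intro tlift_swap) simp_all

definition LL where "LL = tlift CH CH (tensor P2 CH) (\<lambda>x y. tp P2 CH (Delta x) y)"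
definition RR where "RR = tlift CH CH Q3 (\<lambda>x y. tp CH P2 x (Delta y))"

lemma LL_bil: "bilinear_map CH CH (tensor P2 CH) (\<lambda>x y. tp P2 CH (Delta x) y)"
  by (intro bilinear_mapI lin_tp1 lin_tp2 Delta_lin lin_id; simp)
lemma RR_bil: "bilinear_map CH CH Q3 (\<lambda>x y. tp CH P2 x (Delta y))"
  by (intro bilinear_mapI lin_tp1 lin_tp2 Delta_lin lin_id; simp)
lemma LL_lin: "linear_map P2 (tensor P2 CH) LL"
  unfolding LL_def by (rule tlift_linear[OF kCH kCH _ LL_bil]) simp
lemma RR_lin: "linear_map P2 Q3 RR"
  unfolding RR_def by (rule tlift_linear[OF kCH kCH _ RR_bil]) simp
lemma TA_lin: "linear_map (tensor P2 CH) Q3 (tassoc CH CH CH)"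
  by (rule tassoc_lin) simp_all

lemma LL_closed[simp]: "z \<in> mcarrier P2 \<Longrightarrow> LL z \<in> mcarrier (tensor P2 CH)"
  using linear_mapD(1)[OF LL_lin] .
lemma RR_closed[simp]: "z \<in> mcarrier P2 \<Longrightarrow> RR z \<in> mcarrier Q3"
  using linear_mapD(1)[OF RR_lin] .
lemma TA_closed[simp]: "z \<in> mcarrier (tensor P2 CH) \<Longrightarrow> tassoc CH CH CH z \<in> mcarrier Q3"
  using linear_mapD(1)[OF TA_lin] .

lemma LL_tp: "u \<in> mcarrier CH \<Longrightarrow> v \<in> mcarrier CH \<Longrightarrow> LL (tp CH CH u v) = tp P2 CH (Delta u) v"
  unfolding LL_def by (rule tlift_tp[OF kCH kCH _ LL_bil]) simp_all
lemma RR_tp: "u \<in> mcarrier CH \<Longrightarrow> v \<in> mcarrier CH \<Longrightarrow> RR (tp CH CH u v) = tp CH P2 u (Delta v)"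
  unfolding RR_def by (rule tlift_tp[OF kCH kCH _ RR_bil]) simp_all

lemma lhs_leaf:
  assumes a0: "a0 \<in> mcarrier C" and x2: "x2 \<in> mcarrier H" and v: "v \<in> mcarrier CH"
  shows "tassoc CH CH CH (LL (tp CH CH (tp C H a0 x2) v)) =
    tlift C C Q3 (\<lambda>b0 b1. tlift H H Q3 (\<lambda>u w. tlift H H Q3 (\<lambda>u1 u2. tlift H H Q3 (\<lambda>w1 w2.
       tp CH P2 (tp C H b0 u2) (tp CH CH (tp C H (act (mult w1 (T u1)) b1) w2) v)) (D w)) (D u)) (D x2)) (DC a0)"
proof -
  have bl: "bilinear_map CH CH Q3 (\<lambda>x y. tp CH P2 x (tp CH CH y v))"
    by (intro bilinear_mapI lin_tp1 lin_tp2 lin_id; simp add: v)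
  have "tassoc CH CH CH (LL (tp CH CH (tp C H a0 x2) v)) = tassoc CH CH CH (tp P2 CH (ss a0 x2) v)"
    by (simp add: LL_tp a0 x2 v Delta_tp)
  also have "\<dots> = tlift CH CH Q3 (\<lambda>x y. tp CH P2 x (tp CH CH y v)) (ss a0 x2)"
    by (rule tassoc_tp) (simp_all add: a0 x2 v)
  also have "\<dots> = tlift C C Q3 (\<lambda>b0 b1. tlift H H Q3 (\<lambda>u w. tlift H H Q3 (\<lambda>u1 u2. tlift H H Q3 (\<lambda>w1 w2.
       tlift CH CH Q3 (\<lambda>x y. tp CH P2 x (tp CH CH y v)) (tp CH CH (tp C H b0 u2) (tp C H (act (mult w1 (T u1)) b1) w2))) (D w)) (D u)) (D x2)) (DC a0)"
    by (rule ss_push[OF _ tlift_linear[OF kCH kCH _ bl] a0 x2]) simp_all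
  also have "\<dots> = tlift C C Q3 (\<lambda>b0 b1. tlift H H Q3 (\<lambda>u w. tlift H H Q3 (\<lambda>u1 u2. tlift H H Q3 (\<lambda>w1 w2.
       tp CH P2 (tp C H b0 u2) (tp CH CH (tp C H (act (mult w1 (T u1)) b1) w2) v)) (D w)) (D u)) (D x2)) (DC a0)"
    apply (rule tlift_congC; (simp add: a0 x2 v; fail)?)
    apply (rule tlift_congH; (simp add: a0 x2 v; fail)?)
    apply (rule tlift_congH; (simp add: a0 x2 v; fail)?)
    apply (rule tlift_congH; (simp add: a0 x2 v; fail)?)
    apply (simp add: tlift_tp[OF kCH kCH _ bl] v)
    done
  finally show ?thesis .
qed


lemma sw_T:
  assumes kp: "kmodule P" and F: "bilinear_map H H P F" and z: "z \<in> mcarrier H"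
  shows "tlift H H P F (D (T z)) = tlift H H P (\<lambda>u v. F (T v) (T u)) (D z)"
proof -
  note L = tlift_linear[OF kH kH kp F]
  have "tlift H H P F (D (T z)) = tlift H H P (\<lambda>u v. tlift H H P F (tp H H (T v) (T u))) (D z)"
    unfolding D_T[OF z] by (rule tlift_commute[OF kH kH _ kp L]) (simp_all add: z)
  also have "\<dots> = tlift H H P (\<lambda>u v. F (T v) (T u)) (D z)"
    by (rule tlift_cong) (simp_all add: z kp tlift_tp[OF kH kH kp F] bilinear_mapD(1)[OF F])
  finally show ?thesis .
qed

lemma rhs_leaf:
  assumes a0: "a0 \<in> mcarrier C" and x2: "x2 \<in> mcarrier H" and a1: "a1 \<in> mcarrier C"
    and y1: "y1 \<in> mcarrier H" and x1: "x1 \<in> mcarrier H" and y2: "y2 \<in> mcarrier H"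
  shows "RR (tp CH CH (tp C H a0 x2) (tp C H (act (mult y1 (T x1)) a1) y2)) =
    tlift H H Q3 (\<lambda>y10 y11. tlift H H Q3 (\<lambda>s0 s1. tlift C C Q3 (\<lambda>b0 b1. tlift H H Q3 (\<lambda>p q.
      tlift H H Q3 (\<lambda>p1 p2. tlift H H Q3 (\<lambda>q1 q2.
        tp CH P2 (tp C H a0 x2) (tp CH CH (tp C H (act (mult y10 (T s1)) b0) p2)
           (tp C H (act (mult q1 (T p1)) (act (mult y11 (T s0)) b1)) q2))) (D q)) (D p)) (D y2)) (DC a1)) (D x1)) (D y1)"
proof -
  let ?u = "tp C H a0 x2"
  have uc: "?u \<in> mcarrier CH" using a0 x2 by simp
  have Lu: "linear_map P2 Q3 (tp CH P2 ?u)"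
    by (rule bilinear_map_lin2[OF tp_bilinear uc])
  let ?G = "\<lambda>c0 c1. tlift H H Q3 (\<lambda>p q. tlift H H Q3 (\<lambda>p1 p2. tlift H H Q3 (\<lambda>q1 q2.
        tp CH P2 ?u (tp CH CH (tp C H c0 p2) (tp C H (act (mult q1 (T p1)) c1) q2))) (D q)) (D p)) (D y2)"
  have Gb: "bilinear_map C C Q3 ?G" by (intro slin | simp add: a0 x2 y2)+
  let ?K = "\<lambda>h0 h1. tlift C C Q3 (\<lambda>b0 b1. ?G (act h0 b0) (act h1 b1)) (DC a1)"
  have Kb: "bilinear_map H H Q3 ?K" by (intro slin | simp add: a0 x2 y2 a1)+
  have hc: "mult y1 (T x1) \<in> mcarrier H" using y1 x1 by simp
  have "RR (tp CH CH ?u (tp C H (act (mult y1 (T x1)) a1) y2)) = tp CH P2 ?u (ss (act (mult y1 (T x1)) a1) y2)"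
    by (simp add: RR_tp uc a1 y1 x1 y2 Delta_tp)
  also have "\<dots> = tlift C C Q3 ?G (DC (act (mult y1 (T x1)) a1))"
    by (subst ss_push[OF _ Lu]) (simp_all add: a1 hc y2)
  also have "\<dots> = tlift H H Q3 ?K (D (mult y1 (T x1)))"
    by (rule sw_DC_act[OF _ Gb hc a1]) simp
  also have "\<dots> = tlift H H Q3 (\<lambda>y10 y11. tlift H H Q3 (\<lambda>t0 t1. ?K (mult y10 t0) (mult y11 t1)) (D (T x1))) (D y1)"
    by (rule sw_mult[OF _ Kb y1]) (simp_all add: x1)
  also have "\<dots> = tlift H H Q3 (\<lambda>y10 y11. tlift H H Q3 (\<lambda>s0 s1. ?K (mult y10 (T s1)) (mult y11 (T s0))) (D x1)) (D y1)"
    apply (rule tlift_congH; (simp add: a0 x2 a1 y1 x1 y2; fail)?)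
    apply (rule sw_T)
    apply (intro slin | simp add: a0 x2 a1 y1 x1 y2)+
    done
  finally show ?thesis .
qed


lemma coassoc_tp:
  assumes a: "a \<in> mcarrier C" and g: "g \<in> mcarrier H"
  shows "tassoc CH CH CH (LL (ss a g)) = RR (ss a g)"
proof -
  let ?TH = "tlift H H Q3" and ?TC = "tlift C C Q3"
  define \<Psi> where "\<Psi> = (\<lambda>c0 c1 c2 x1 u1 u2 w1 w2 k y1 y2. tp CH P2 (tp C H c0 u2)
     (tp CH CH (tp C H (act (mult w1 (T u1)) c1) w2) (tp C H (act (mult y1 (mult k (T x1))) c2) y2)))"
  have \<Psi>c: "\<Psi> c0 c1 c2 x1 u1 u2 w1 w2 k y1 y2 \<in> mcarrier Q3" if "c0 \<in> mcarrier C" "c1 \<in> mcarrier C" "c2 \<in> mcarrier C"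
    "x1 \<in> mcarrier H" "u1 \<in> mcarrier H" "u2 \<in> mcarrier H" "w1 \<in> mcarrier H" "w2 \<in> mcarrier H"
    "k \<in> mcarrier H" "y1 \<in> mcarrier H" "y2 \<in> mcarrier H" for c0 c1 c2 x1 u1 u2 w1 w2 k y1 y2
    unfolding \<Psi>_def using that by simp
  define HL where "HL = (\<lambda>c0 c1 c2. ?TH (\<lambda>x y. ?TH (\<lambda>x1 x2. ?TH (\<lambda>y1 y2. ?TH (\<lambda>u w. ?TH (\<lambda>u1 u2.
     ?TH (\<lambda>w1 w2. \<Psi> c0 c1 c2 x1 u1 u2 w1 w2 one y1 y2) (D w)) (D u)) (D x2)) (D y)) (D x)) (D g))"
  have HLc: "HL c0 c1 c2 \<in> mcarrier Q3" if "c0 \<in> mcarrier C" "c1 \<in> mcarrier C" "c2 \<in> mcarrier C" for c0 c1 c2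
    unfolding HL_def using that by (simp add: \<Psi>c g)
  note ss = a g \<Psi>c HLc
  have TL: "linear_map P2 Q3 (\<lambda>z. tassoc CH CH CH (LL z))" by (rule lin_comp[OF TA_lin LL_lin])
  have "tassoc CH CH CH (LL (ss a g)) = ?TC (\<lambda>a0 a1. ?TH (\<lambda>x y. ?TH (\<lambda>x1 x2. ?TH (\<lambda>y1 y2.
       tassoc CH CH CH (LL (tp CH CH (tp C H a0 x2) (tp C H (act (mult y1 (T x1)) a1) y2)))) (D y)) (D x)) (D g)) (DC a)"
    by (rule ss_push[OF _ TL a g]) simp
  also have "\<dots> = ?TC (\<lambda>a0 a1. ?TH (\<lambda>x y. ?TH (\<lambda>x1 x2. ?TH (\<lambda>y1 y2.
       ?TC (\<lambda>b0 b1. ?TH (\<lambda>u w. ?TH (\<lambda>u1 u2. ?TH (\<lambda>w1 w2.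
       tp CH P2 (tp C H b0 u2) (tp CH CH (tp C H (act (mult w1 (T u1)) b1) w2) (tp C H (act (mult y1 (T x1)) a1) y2))) (D w)) (D u)) (D x2)) (DC a0))
       (D y)) (D x)) (D g)) (DC a)"
      apply (rule tlift_congC; (simp add: ss; fail)?)
      apply (rule tlift_congH; (simp add: ss; fail)?)
      apply (rule tlift_congH; (simp add: ss; fail)?)
      apply (rule tlift_congH; (simp add: ss; fail)?)
      apply (rule lhs_leaf) apply (simp_all add: ss)
      done
  also have "\<dots> = ?TC (\<lambda>a0 a1. ?TH (\<lambda>x y. ?TH (\<lambda>x1 x2. ?TC (\<lambda>b0 b1. ?TH (\<lambda>y1 y2.
       ?TH (\<lambda>u w. ?TH (\<lambda>u1 u2. ?TH (\<lambda>w1 w2.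
       tp CH P2 (tp C H b0 u2) (tp CH CH (tp C H (act (mult w1 (T u1)) b1) w2) (tp C H (act (mult y1 (T x1)) a1) y2))) (D w)) (D u)) (D x2))
       (D y)) (DC a0)) (D x)) (D g)) (DC a)"
      apply (rule tlift_congC; (simp add: ss; fail)?)
      apply (rule tlift_congH; (simp add: ss; fail)?)
      apply (rule tlift_congH; (simp add: ss; fail)?)
      apply (rule tlift_swapCH) apply (simp_all add: ss)
      done
  also have "\<dots> = ?TC (\<lambda>a0 a1. ?TH (\<lambda>x y. ?TC (\<lambda>b0 b1. ?TH (\<lambda>x1 x2. ?TH (\<lambda>y1 y2.
       ?TH (\<lambda>u w. ?TH (\<lambda>u1 u2. ?TH (\<lambda>w1 w2.
       tp CH P2 (tp C H b0 u2) (tp CH CH (tp C H (act (mult w1 (T u1)) b1) w2) (tp C H (act (mult y1 (T x1)) a1) y2))) (D w)) (D u)) (D x2))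
       (D y)) (D x)) (DC a0)) (D g)) (DC a)"
      apply (rule tlift_congC; (simp add: ss; fail)?)
      apply (rule tlift_congH; (simp add: ss; fail)?)
      apply (rule tlift_swapCH) apply (simp_all add: ss)
      done
  also have "\<dots> = ?TC (\<lambda>a0 a1. ?TC (\<lambda>b0 b1. ?TH (\<lambda>x y. ?TH (\<lambda>x1 x2. ?TH (\<lambda>y1 y2.
       ?TH (\<lambda>u w. ?TH (\<lambda>u1 u2. ?TH (\<lambda>w1 w2.
       tp CH P2 (tp C H b0 u2) (tp CH CH (tp C H (act (mult w1 (T u1)) b1) w2) (tp C H (act (mult y1 (T x1)) a1) y2))) (D w)) (D u)) (D x2))
       (D y)) (D x)) (D g)) (DC a0)) (DC a)"
      apply (rule tlift_congC; (simp add: ss; fail)?)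
      apply (rule tlift_swapCH) apply (simp_all add: ss)
      done
  also have "\<dots> = ?TC (\<lambda>a0 a1. ?TC (\<lambda>b0 b1. HL b0 b1 a1) (DC a0)) (DC a)"
      unfolding HL_def \<Psi>_def
      by ((rule tlift_congC | rule tlift_congH); (simp add: ss; fail)?)+
  also have "\<dots> = ?TC (\<lambda>a0 a1. ?TC (\<lambda>b0 b1. HL a0 b0 b1) (DC a1)) (DC a)"
    apply (rule coassoc_sw[OF coC _ a])
    apply (unfold HL_def \<Psi>_def)
    apply (intro slin | simp add: g)+
    done
  finally have LHS: "tassoc CH CH CH (LL (ss a g)) = ?TC (\<lambda>a0 a1. ?TC (\<lambda>b0 b1. HL a0 b0 b1) (DC a1)) (DC a)" .
  have HRL: "?TH (\<lambda>x y. ?TH (\<lambda>x1 x2. ?TH (\<lambda>y1 y2. ?TH (\<lambda>y10 y11. ?TH (\<lambda>s0 s1.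
      ?TH (\<lambda>p q. ?TH (\<lambda>p1 p2. ?TH (\<lambda>q1 q2.
        \<Psi> c0 c1 c2 s0 s1 x2 y10 p2 (mult (T p1) y11) q1 q2) (D q)) (D p)) (D y2)) (D x1)) (D y1)) (D y)) (D x)) (D g)
     = HL c0 c1 c2" if c: "c0 \<in> mcarrier C" "c1 \<in> mcarrier C" "c2 \<in> mcarrier C" for c0 c1 c2
    unfolding HL_def
    apply (rule bigH[where \<Psi>="\<Psi> c0 c1 c2"])
    apply (simp_all only: \<Psi>_def)
    apply (intro slin | simp add: c g)+
    done
  have "RR (ss a g) = ?TC (\<lambda>a0 a1. ?TH (\<lambda>x y. ?TH (\<lambda>x1 x2. ?TH (\<lambda>y1 y2.
       RR (tp CH CH (tp C H a0 x2) (tp C H (act (mult y1 (T x1)) a1) y2))) (D y)) (D x)) (D g)) (DC a)"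
    by (rule ss_push[OF _ RR_lin a g]) simp
  also have "\<dots> = ?TC (\<lambda>a0 a1. ?TH (\<lambda>x y. ?TH (\<lambda>x1 x2. ?TH (\<lambda>y1 y2. ?TH (\<lambda>y10 y11. ?TH (\<lambda>s0 s1. ?TC (\<lambda>b0 b1.
      ?TH (\<lambda>p q. ?TH (\<lambda>p1 p2. ?TH (\<lambda>q1 q2. tp CH P2 (tp C H a0 x2) (tp CH CH (tp C H (act (mult y10 (T s1)) b0) p2) (tp C H (act (mult q1 (T p1)) (act (mult y11 (T s0)) b1)) q2))) (D q)) (D p)) (D y2)) (DC a1)) (D x1)) (D y1)) (D y)) (D x)) (D g)) (DC a)"
      apply (rule tlift_congC; (simp add: ss; fail)?)
      apply (rule tlift_congH; (simp add: ss; fail)?)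
      apply (rule tlift_congH; (simp add: ss; fail)?)
      apply (rule tlift_congH; (simp add: ss; fail)?)
      apply (rule rhs_leaf) apply (simp_all add: ss)
      done
  also have "\<dots> = ?TC (\<lambda>a0 a1. ?TH (\<lambda>x y. ?TH (\<lambda>x1 x2. ?TH (\<lambda>y1 y2. ?TH (\<lambda>y10 y11. ?TC (\<lambda>b0 b1. ?TH (\<lambda>s0 s1.
      ?TH (\<lambda>p q. ?TH (\<lambda>p1 p2. ?TH (\<lambda>q1 q2. tp CH P2 (tp C H a0 x2) (tp CH CH (tp C H (act (mult y10 (T s1)) b0) p2) (tp C H (act (mult q1 (T p1)) (act (mult y11 (T s0)) b1)) q2))) (D q)) (D p)) (D y2)) (D x1)) (DC a1)) (D y1)) (D y)) (D x)) (D g)) (DC a)"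
      apply (rule tlift_congC; (simp add: ss; fail)?)
      apply (rule tlift_congH; (simp add: ss; fail)?)
      apply (rule tlift_congH; (simp add: ss; fail)?)
      apply (rule tlift_congH; (simp add: ss; fail)?)
      apply (rule tlift_congH; (simp add: ss; fail)?)
      apply (rule tlift_swapCH) apply (simp_all add: ss)
      done
  also have "\<dots> = ?TC (\<lambda>a0 a1. ?TH (\<lambda>x y. ?TH (\<lambda>x1 x2. ?TH (\<lambda>y1 y2. ?TC (\<lambda>b0 b1. ?TH (\<lambda>y10 y11. ?TH (\<lambda>s0 s1.
      ?TH (\<lambda>p q. ?TH (\<lambda>p1 p2. ?TH (\<lambda>q1 q2. tp CH P2 (tp C H a0 x2) (tp CH CH (tp C H (act (mult y10 (T s1)) b0) p2) (tp C H (act (mult q1 (T p1)) (act (mult y11 (T s0)) b1)) q2))) (D q)) (D p)) (D y2)) (D x1)) (D y1)) (DC a1)) (D y)) (D x)) (D g)) (DC a)"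
      apply (rule tlift_congC; (simp add: ss; fail)?)
      apply (rule tlift_congH; (simp add: ss; fail)?)
      apply (rule tlift_congH; (simp add: ss; fail)?)
      apply (rule tlift_congH; (simp add: ss; fail)?)
      apply (rule tlift_swapCH) apply (simp_all add: ss)
      done
  also have "\<dots> = ?TC (\<lambda>a0 a1. ?TH (\<lambda>x y. ?TH (\<lambda>x1 x2. ?TC (\<lambda>b0 b1. ?TH (\<lambda>y1 y2. ?TH (\<lambda>y10 y11. ?TH (\<lambda>s0 s1.
      ?TH (\<lambda>p q. ?TH (\<lambda>p1 p2. ?TH (\<lambda>q1 q2. tp CH P2 (tp C H a0 x2) (tp CH CH (tp C H (act (mult y10 (T s1)) b0) p2) (tp C H (act (mult q1 (T p1)) (act (mult y11 (T s0)) b1)) q2))) (D q)) (D p)) (D y2)) (D x1)) (D y1)) (D y)) (DC a1)) (D x)) (D g)) (DC a)"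
      apply (rule tlift_congC; (simp add: ss; fail)?)
      apply (rule tlift_congH; (simp add: ss; fail)?)
      apply (rule tlift_congH; (simp add: ss; fail)?)
      apply (rule tlift_swapCH) apply (simp_all add: ss)
      done
  also have "\<dots> = ?TC (\<lambda>a0 a1. ?TH (\<lambda>x y. ?TC (\<lambda>b0 b1. ?TH (\<lambda>x1 x2. ?TH (\<lambda>y1 y2. ?TH (\<lambda>y10 y11. ?TH (\<lambda>s0 s1.
      ?TH (\<lambda>p q. ?TH (\<lambda>p1 p2. ?TH (\<lambda>q1 q2. tp CH P2 (tp C H a0 x2) (tp CH CH (tp C H (act (mult y10 (T s1)) b0) p2) (tp C H (act (mult q1 (T p1)) (act (mult y11 (T s0)) b1)) q2))) (D q)) (D p)) (D y2)) (D x1)) (D y1)) (D y)) (D x)) (DC a1)) (D g)) (DC a)"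
      apply (rule tlift_congC; (simp add: ss; fail)?)
      apply (rule tlift_congH; (simp add: ss; fail)?)
      apply (rule tlift_swapCH) apply (simp_all add: ss)
      done
  also have "\<dots> = ?TC (\<lambda>a0 a1. ?TC (\<lambda>b0 b1. ?TH (\<lambda>x y. ?TH (\<lambda>x1 x2. ?TH (\<lambda>y1 y2. ?TH (\<lambda>y10 y11. ?TH (\<lambda>s0 s1.
      ?TH (\<lambda>p q. ?TH (\<lambda>p1 p2. ?TH (\<lambda>q1 q2. tp CH P2 (tp C H a0 x2) (tp CH CH (tp C H (act (mult y10 (T s1)) b0) p2) (tp C H (act (mult q1 (T p1)) (act (mult y11 (T s0)) b1)) q2))) (D q)) (D p)) (D y2)) (D x1)) (D y1)) (D y)) (D x)) (D g)) (DC a1)) (DC a)"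
      apply (rule tlift_congC; (simp add: ss; fail)?)
      apply (rule tlift_swapCH) apply (simp_all add: ss)
      done
  also have "\<dots> = ?TC (\<lambda>a0 a1. ?TC (\<lambda>b0 b1. ?TH (\<lambda>x y. ?TH (\<lambda>x1 x2. ?TH (\<lambda>y1 y2. ?TH (\<lambda>y10 y11. ?TH (\<lambda>s0 s1.
      ?TH (\<lambda>p q. ?TH (\<lambda>p1 p2. ?TH (\<lambda>q1 q2. \<Psi> a0 b0 b1 s0 s1 x2 y10 p2 (mult (T p1) y11) q1 q2) (D q)) (D p)) (D y2)) (D x1)) (D y1)) (D y)) (D x)) (D g)) (DC a1)) (DC a)"
    by ((rule tlift_congC | rule tlift_congH); (simp add: ss \<Psi>_def act_mult; fail)?)+
  also have "\<dots> = ?TC (\<lambda>a0 a1. ?TC (\<lambda>b0 b1. HL a0 b0 b1) (DC a1)) (DC a)"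
      apply (rule tlift_congC; (simp add: ss; fail)?)
      apply (rule tlift_congC; (simp add: ss; fail)?)
      apply (rule HRL) apply (simp_all add: ss)
      done
  finally show ?thesis using LHS by simp
qed


lemma smash_coalgebra: "coalgebra CH Delta eps"
  unfolding coalgebra_def
proof (intro conjI ballI)
  show "kmodule CH" by simp
  show "linear_map CH P2 Delta" by (rule Delta_lin)
  show "linear_map CH kself eps" by (rule eps_lin)
  fix m assume m: "m \<in> mcarrier CH"
  show "tlift CH CH CH (\<lambda>x y. msmult CH (eps x) y) (Delta m) = m" by (rule counit_left[OF m])
  show "tlift CH CH CH (\<lambda>x y. msmult CH (eps y) x) (Delta m) = m" by (rule counit_right[OF m])
  have l1: "linear_map CH Q3 (\<lambda>m. tassoc CH CH CH (LL (Delta m)))"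
    by (rule lin_comp[OF TA_lin lin_comp[OF LL_lin Delta_lin]])
  have l2: "linear_map CH Q3 (\<lambda>m. RR (Delta m))"
    by (rule lin_comp[OF RR_lin Delta_lin])
  have "tassoc CH CH CH (LL (Delta m)) = RR (Delta m)"
    by (rule tensor_ext[OF kC kH _ l1 l2 _ m]) (simp_all add: Delta_tp coassoc_tp)
  then show "tassoc CH CH CH (tlift CH CH (tensor P2 CH) (\<lambda>x y. tp P2 CH (Delta x) y) (Delta m)) =
    tlift CH CH Q3 (\<lambda>x y. tp CH P2 x (Delta y)) (Delta m)"
    by (simp add: LL_def RR_def)
qed

end

theorem mainTheorem2:
  fixes H :: "('k::comm_ring_1, 'h) kmod"
    and mult :: "'h \<Rightarrow> 'h \<Rightarrow> 'h" and one :: 'h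
    and D :: "'h \<Rightarrow> ('k, 'h, 'h) tens" and e :: "'h \<Rightarrow> 'k" and S :: "'h \<Rightarrow> 'h"
    and C :: "('k, 'c) kmod" and DC :: "'c \<Rightarrow> ('k, 'c, 'c) tens" and eC :: "'c \<Rightarrow> 'k"
    and act :: "'h \<Rightarrow> 'c \<Rightarrow> 'c"
  assumes "hopf_algebra H mult one D e S"
    and "bij_betw S (mcarrier H) (mcarrier H)"
    and "module_coalgebra H mult one D e C DC eC act"
  shows "coalgebra (tensor C H) (smash_comult H mult D S C DC act) (smash_counit H e C eC)"
proof -
  interpret smash H mult one D e S C DC eC act
    using assms by (simp add: smash_def hopf_bij_def hopf_def hopf_bij_axioms_def smash_axioms_def)
  show ?thesis by (rule smash_coalgebra)
qed


end
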